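(* For any separable complex Hilbert space $\mathcal{H}$ and any $p\in(0,1]$ and $p'\in(0,\infty)$, $\mathbf{C}^{(3)}_p(\mathcal{H})\subseteq\mathbf{C}_{p'}(\mathcal{H})$.
   Context: Observables are self-adjoint operators on $\mathcal{H}$; $A^T$ is the operator on the dual $\mathcal{H}^*$ with $(A^T\eta)(\varphi)=\eta(A\varphi)$. For a finite collection $\mathcal{A}=\{A_1,\dots,A_K\}$ of observables and $0<p<\infty$, $C_{\mathcal{A},p}=\sum_{k=1}^K|A_k\otimes I^T-I\otimes A_k^T|^p$ on $\mathcal{H}\otimes\mathcal{H}^*$. $\mathbf{C}_p(\mathcal{H})=\{C_{\mathcal{A},p}:\ \mathcal{A}\text{ a finite collection of observables each with finite spectrum}\}$, and for $k\in\mathbb{N}$, $\mathbf{C}^{(k)}_p(\mathcal{H})=\{C_{\mathcal{A},p}:\ \mathcal{A}\text{ a finite collection of observables with }\#\mathrm{spec}(A)\le k\text{ for all }A\in\mathcal{A}\}$. *)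

theory Defs
  imports "HOL-Analysis.Analysis"
begin

text \<open>Concrete model of a separable complex Hilbert space: the space l2(I) of
square-summable complex families indexed by a set I of natural numbers
(extended by zero outside I). Every separable complex Hilbert space is unitarily
isomorphic to such a space, and all notions below are unitarily invariant.\<close>

definition sep_l2 :: "'i set \<Rightarrow> ('i \<Rightarrow> complex) set" where
  "sep_l2 I = {f. (\<forall>i. i \<notin> I \<longrightarrow> f i = 0) \<and> (\<lambda>i. (cmod (f i))^2) summable_on I}"

definition sep_inner :: "'i set \<Rightarrow> ('i \<Rightarrow> complex) \<Rightarrow> ('i \<Rightarrow> complex) \<Rightarrow> complex" where
  "sep_inner I f g = (\<Sum>\<^sub>\<infinity>i\<in>I. cnj (f i) * g i)"

definition sep_norm :: "'i set \<Rightarrow> ('i \<Rightarrow> complex) \<Rightarrow> real" where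
  "sep_norm I f = sqrt (\<Sum>\<^sub>\<infinity>i\<in>I. (cmod (f i))^2)"

definition sep_bounded_op :: "'i set \<Rightarrow> (('i \<Rightarrow> complex) \<Rightarrow> ('i \<Rightarrow> complex)) \<Rightarrow> bool" where
  "sep_bounded_op I T \<longleftrightarrow>
     (\<forall>x\<in>sep_l2 I. T x \<in> sep_l2 I) \<and>
     (\<forall>x\<in>sep_l2 I. \<forall>y\<in>sep_l2 I. \<forall>a b.
         T (\<lambda>i. a * x i + b * y i) = (\<lambda>i. a * T x i + b * T y i)) \<and>
     (\<exists>c. \<forall>x\<in>sep_l2 I. sep_norm I (T x) \<le> c * sep_norm I x) \<and>
     (\<forall>x. x \<notin> sep_l2 I \<longrightarrow> T x = (\<lambda>_. 0))"

text \<open>Observable = self-adjoint operator. (Observables with finite spectrum are bounded.)\<close>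
definition sep_observable :: "'i set \<Rightarrow> (('i \<Rightarrow> complex) \<Rightarrow> ('i \<Rightarrow> complex)) \<Rightarrow> bool" where
  "sep_observable I T \<longleftrightarrow> sep_bounded_op I T \<and>
     (\<forall>x\<in>sep_l2 I. \<forall>y\<in>sep_l2 I. sep_inner I (T x) y = sep_inner I x (T y))"

definition sep_spectrum :: "'i set \<Rightarrow> (('i \<Rightarrow> complex) \<Rightarrow> ('i \<Rightarrow> complex)) \<Rightarrow> complex set" where
  "sep_spectrum I T = {c. \<not> bij_betw (\<lambda>x i. T x i - c * x i) (sep_l2 I) (sep_l2 I)}"

definition sep_eigenspace :: "'i set \<Rightarrow> (('i \<Rightarrow> complex) \<Rightarrow> ('i \<Rightarrow> complex)) \<Rightarrow> complex \<Rightarrow> ('i \<Rightarrow> complex) set" where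
  "sep_eigenspace I T c = {x \<in> sep_l2 I. T x = (\<lambda>i. c * x i)}"

definition sep_proj :: "'i set \<Rightarrow> ('i \<Rightarrow> complex) set \<Rightarrow> ('i \<Rightarrow> complex) \<Rightarrow> ('i \<Rightarrow> complex)" where
  "sep_proj I M x = (if x \<in> sep_l2 I then
      (THE m. m \<in> M \<and> (\<forall>y\<in>M. sep_inner I y (\<lambda>i. x i - m i) = 0)) else (\<lambda>_. 0))"

text \<open>Functional calculus |T|^p for a self-adjoint operator T with finite spectrum:
  |T|^p = sum over the spectrum of |lambda|^p times the spectral projection onto ker(T - lambda).\<close>
definition sep_abs_powr :: "'i set \<Rightarrow> real \<Rightarrow> (('i \<Rightarrow> complex) \<Rightarrow> ('i \<Rightarrow> complex)) \<Rightarrow> ('i \<Rightarrow> complex) \<Rightarrow> ('i \<Rightarrow> complex)" where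
  "sep_abs_powr I p T x = (\<lambda>i. \<Sum>c\<in>sep_spectrum I T.
      complex_of_real (cmod c powr p) * sep_proj I (sep_eigenspace I T c) x i)"

text \<open>Elementary tensors in l2(I x I) = H (x) H*, the dual H* identified with l2(I)
  via eta <-> (eta(e_i))_i.\<close>
definition sep_tensor :: "(nat \<Rightarrow> complex) \<Rightarrow> (nat \<Rightarrow> complex) \<Rightarrow> (nat \<times> nat \<Rightarrow> complex)" where
  "sep_tensor x y = (\<lambda>(i, j). x i * y j)"

definition sep_unit :: "nat \<Rightarrow> nat \<Rightarrow> complex" where
  "sep_unit i = (\<lambda>k. if k = i then 1 else 0)"

text \<open>Transpose A^T on H*: (A^T eta)(phi) = eta(A phi); in coordinates
  (A^T eta)_i = eta(A e_i) = sum_j eta_j (A e_i)_j.\<close>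
definition sep_transp :: "nat set \<Rightarrow> ((nat \<Rightarrow> complex) \<Rightarrow> (nat \<Rightarrow> complex)) \<Rightarrow> (nat \<Rightarrow> complex) \<Rightarrow> (nat \<Rightarrow> complex)" where
  "sep_transp I A y = (\<lambda>i. if i \<in> I then (\<Sum>\<^sub>\<infinity>j\<in>I. y j * A (sep_unit i) j) else 0)"

text \<open>A (x) I^T - I (x) A^T on H (x) H*: the unique bounded operator acting on elementary tensors.\<close>
definition sep_comm_op :: "nat set \<Rightarrow> ((nat \<Rightarrow> complex) \<Rightarrow> (nat \<Rightarrow> complex)) \<Rightarrow> (nat \<times> nat \<Rightarrow> complex) \<Rightarrow> (nat \<times> nat \<Rightarrow> complex)" where
  "sep_comm_op I A = (THE T. sep_bounded_op (I \<times> I) T \<and>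
      (\<forall>x\<in>sep_l2 I. \<forall>y\<in>sep_l2 I.
         T (sep_tensor x y) = (\<lambda>ij. sep_tensor (A x) y ij - sep_tensor x (sep_transp I A y) ij)))"

definition sep_C :: "nat set \<Rightarrow> ((nat \<Rightarrow> complex) \<Rightarrow> (nat \<Rightarrow> complex)) list \<Rightarrow> real \<Rightarrow> (nat \<times> nat \<Rightarrow> complex) \<Rightarrow> (nat \<times> nat \<Rightarrow> complex)" where
  "sep_C I As p = (\<lambda>z ij. (\<Sum>A\<leftarrow>As. sep_abs_powr (I \<times> I) p (sep_comm_op I A) z ij))"

definition sep_Cclass :: "nat set \<Rightarrow> real \<Rightarrow> ((nat \<times> nat \<Rightarrow> complex) \<Rightarrow> (nat \<times> nat \<Rightarrow> complex)) set" where
  "sep_Cclass I p = {sep_C I As p | As.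
      \<forall>A\<in>set As. sep_observable I A \<and> finite (sep_spectrum I A)}"

definition sep_Cclass_k :: "nat set \<Rightarrow> nat \<Rightarrow> real \<Rightarrow> ((nat \<times> nat \<Rightarrow> complex) \<Rightarrow> (nat \<times> nat \<Rightarrow> complex)) set" where
  "sep_Cclass_k I k p = {sep_C I As p | As.
      \<forall>A\<in>set As. sep_observable I A \<and> finite (sep_spectrum I A) \<and> card (sep_spectrum I A) \<le> k}"

end

theory Submission
  imports Defs "HOL-Computational_Algebra.Fundamental_Theorem_Algebra"
begin


definition nsq :: "'j set \<Rightarrow> ('j \<Rightarrow> complex) \<Rightarrow> real" where
  "nsq J x = (\<Sum>\<^sub>\<infinity>i\<in>J. (cmod (x i))^2)"

lemma l2_out: "x \<in> sep_l2 J \<Longrightarrow> i \<notin> J \<Longrightarrow> x i = 0"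
  by (simp add: sep_l2_def)

lemma l2_summ: "x \<in> sep_l2 J \<Longrightarrow> (\<lambda>i. (cmod (x i))^2) summable_on J"
  by (simp add: sep_l2_def)

lemma l2_eqI: "x \<in> sep_l2 J \<Longrightarrow> y \<in> sep_l2 J \<Longrightarrow> (\<And>i. i \<in> J \<Longrightarrow> x i = y i) \<Longrightarrow> x = y"
  by (metis l2_out ext)

lemma l2_zero[simp]: "(\<lambda>_. 0) \<in> sep_l2 J"
  by (simp add: sep_l2_def)

lemma sq_sum_le: "(cmod (a + b))^2 \<le> 2 * (cmod a)^2 + 2 * (cmod b)^2"
proof -
  have "cmod (a+b) \<le> cmod a + cmod b" by (rule norm_triangle_ineq)
  hence "(cmod (a+b))^2 \<le> (cmod a + cmod b)^2" by (simp add: power_mono)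
  also have "\<dots> \<le> 2 * (cmod a)^2 + 2 * (cmod b)^2"
    using sum_squares_bound[of "cmod a" "cmod b"] by (simp add: power2_sum)
  finally show ?thesis .
qed

lemma l2_lin[intro]:
  assumes "x \<in> sep_l2 J" "y \<in> sep_l2 J"
  shows "(\<lambda>i. a * x i + b * y i) \<in> sep_l2 J"
proof -
  have s: "(\<lambda>i. 2 * (cmod a)^2 * (cmod (x i))^2 + 2 * (cmod b)^2 * (cmod (y i))^2) summable_on J"
    using assms by (intro summable_on_add summable_on_cmult_right l2_summ)
  have "(\<lambda>i. (cmod (a * x i + b * y i))^2) summable_on J"
  proof (rule summable_on_comparison_test[OF s])
    fix i show "(cmod (a * x i + b * y i))^2 \<le> 2 * (cmod a)^2 * (cmod (x i))^2 + 2 * (cmod b)^2 * (cmod (y i))^2"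
      using sq_sum_le[of "a * x i" "b * y i"] by (simp add: norm_mult power_mult_distrib)
  qed simp
  thus ?thesis using assms by (simp add: sep_l2_def)
qed

lemma l2_scale[intro]: "x \<in> sep_l2 J \<Longrightarrow> (\<lambda>i. a * x i) \<in> sep_l2 J"
  using l2_lin[of x J x a 0] by simp

lemma l2_add[intro]: "x \<in> sep_l2 J \<Longrightarrow> y \<in> sep_l2 J \<Longrightarrow> (\<lambda>i. x i + y i) \<in> sep_l2 J"
  using l2_lin[of x J y 1 1] by simp

lemma l2_diff[intro]: "x \<in> sep_l2 J \<Longrightarrow> y \<in> sep_l2 J \<Longrightarrow> (\<lambda>i. x i - y i) \<in> sep_l2 J"
  using l2_lin[of x J y 1 "-1"] by simp

lemma l2_sum[intro]: "finite S \<Longrightarrow> (\<And>s. s \<in> S \<Longrightarrow> f s \<in> sep_l2 J) \<Longrightarrow> (\<lambda>i. \<Sum>s\<in>S. f s i) \<in> sep_l2 J"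
  by (induction S rule: finite_induct) auto

lemma inner_summ:
  assumes "x \<in> sep_l2 J" "y \<in> sep_l2 J"
  shows "(\<lambda>i. cnj (x i) * y i) summable_on J"
proof -
  have s: "(\<lambda>i. (cmod (x i))^2 + (cmod (y i))^2) summable_on J"
    using assms by (intro summable_on_add l2_summ)
  have "(\<lambda>i. norm (cnj (x i) * y i)) summable_on J"
  proof (rule summable_on_comparison_test[OF s])
    fix i
    have "2 * (cmod (x i) * cmod (y i)) \<le> (cmod (x i))^2 + (cmod (y i))^2"
      using sum_squares_bound[of "cmod (x i)" "cmod (y i)"] by (simp only: mult.assoc)
    moreover have "0 \<le> cmod (x i) * cmod (y i)" by simp
    moreover have "norm (cnj (x i) * y i) = cmod (x i) * cmod (y i)" by (simp add: norm_mult)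
    ultimately show "norm (cnj (x i) * y i) \<le> (cmod (x i))^2 + (cmod (y i))^2"
      by linarith
  qed simp
  thus ?thesis by (simp only: summable_on_iff_abs_summable_on_complex)
qed

lemma nsq_nonneg: "0 \<le> nsq J x"
  unfolding nsq_def by (simp add: Infinite_Sum.infsum_nonneg)

lemma l2inner_self: "x \<in> sep_l2 J \<Longrightarrow> sep_inner J x x = complex_of_real (nsq J x)"
proof -
  assume x: "x \<in> sep_l2 J"
  have "sep_inner J x x = (\<Sum>\<^sub>\<infinity>i\<in>J. complex_of_real ((cmod (x i))^2))"
    unfolding sep_inner_def by (intro infsum_cong) (simp only: complex_norm_square mult.commute)
  also have "\<dots> = complex_of_real (nsq J x)"
    unfolding nsq_def using has_sum_of_real[OF has_sum_infsum[OF l2_summ[OF x]], where 'a=complex]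
    by (simp add: infsumI)
  finally show ?thesis .
qed

lemma sep_norm_nsq: "sep_norm J x = sqrt (nsq J x)"
  by (simp add: sep_norm_def nsq_def)

lemma nsq_norm: "nsq J x = (sep_norm J x)^2"
  using nsq_nonneg[of J x] by (simp add: sep_norm_nsq)

lemma sep_norm_nonneg: "0 \<le> sep_norm J x"
  using nsq_nonneg[of J x] by (simp add: sep_norm_nsq)

lemma nsq_zero: assumes x: "x \<in> sep_l2 J" and z: "nsq J x = 0" shows "x = (\<lambda>_. 0)"
proof (rule ext)
  fix i
  show "x i = 0"
  proof (cases "i \<in> J")
    case True
    have "(cmod (x i))^2 = 0"
      using nonneg_infsum_le_0D[of "\<lambda>i. (cmod (x i))^2" J i] z True l2_summ[OF x]
      by (simp add: nsq_def)
    thus ?thesis by simp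
  next
    case False
    then show ?thesis by (rule l2_out[OF x])
  qed
qed

lemma norm_zero_l2: "x \<in> sep_l2 J \<Longrightarrow> sep_norm J x = 0 \<Longrightarrow> x = (\<lambda>_. 0)"
  using nsq_zero[of x J] nsq_norm[of J x] by simp

lemma nsq_0[simp]: "nsq J (\<lambda>_. 0) = 0" by (simp add: nsq_def)
lemma sep_norm_0[simp]: "sep_norm J (\<lambda>_. 0) = 0" by (simp add: sep_norm_nsq)

lemma l2inner_lin_right:
  assumes "x \<in> sep_l2 J" "y \<in> sep_l2 J" "z \<in> sep_l2 J"
  shows "sep_inner J x (\<lambda>i. a * y i + b * z i) = a * sep_inner J x y + b * sep_inner J x z"
proof -
  have "sep_inner J x (\<lambda>i. a * y i + b * z i) = (\<Sum>\<^sub>\<infinity>i\<in>J. a * (cnj (x i) * y i) + b * (cnj (x i) * z i))"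
    unfolding sep_inner_def by (intro infsum_cong) (simp add: algebra_simps)
  also have "\<dots> = (\<Sum>\<^sub>\<infinity>i\<in>J. a * (cnj (x i) * y i)) + (\<Sum>\<^sub>\<infinity>i\<in>J. b * (cnj (x i) * z i))"
    using assms by (intro infsum_add summable_on_cmult_right inner_summ)
  also have "\<dots> = a * sep_inner J x y + b * sep_inner J x z"
    unfolding sep_inner_def using assms by (simp add: infsum_cmult_right inner_summ)
  finally show ?thesis .
qed

lemma l2inner_commute: "sep_inner J y x = cnj (sep_inner J x y)"
  unfolding sep_inner_def infsum_cnj[symmetric] by (simp add: mult.commute)

lemma l2inner_lin_left:
  assumes "x \<in> sep_l2 J" "y \<in> sep_l2 J" "z \<in> sep_l2 J"
  shows "sep_inner J (\<lambda>i. a * x i + b * y i) z = cnj a * sep_inner J x z + cnj b * sep_inner J y z"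
  using l2inner_lin_right[OF assms(3,1,2), of a b] l2inner_commute
  by (metis complex_cnj_add complex_cnj_mult)

lemma l2inner_zero_left[simp]: "sep_inner J (\<lambda>_. 0) y = 0" by (simp add: sep_inner_def)
lemma l2inner_zero_right[simp]: "sep_inner J y (\<lambda>_. 0) = 0" by (simp add: sep_inner_def)

lemma l2inner_diff_right:
  "x \<in> sep_l2 J \<Longrightarrow> y \<in> sep_l2 J \<Longrightarrow> z \<in> sep_l2 J \<Longrightarrow>
   sep_inner J x (\<lambda>i. y i - z i) = sep_inner J x y - sep_inner J x z"
  using l2inner_lin_right[of x J y z 1 "-1"] by simp

lemma l2inner_diff_left:
  "x \<in> sep_l2 J \<Longrightarrow> y \<in> sep_l2 J \<Longrightarrow> z \<in> sep_l2 J \<Longrightarrow>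
   sep_inner J (\<lambda>i. x i - y i) z = sep_inner J x z - sep_inner J y z"
  using l2inner_lin_left[of x J y z 1 "-1"] by simp

lemma l2inner_add_right:
  "x \<in> sep_l2 J \<Longrightarrow> y \<in> sep_l2 J \<Longrightarrow> z \<in> sep_l2 J \<Longrightarrow>
   sep_inner J x (\<lambda>i. y i + z i) = sep_inner J x y + sep_inner J x z"
  using l2inner_lin_right[of x J y z 1 1] by simp

lemma l2inner_add_left:
  "x \<in> sep_l2 J \<Longrightarrow> y \<in> sep_l2 J \<Longrightarrow> z \<in> sep_l2 J \<Longrightarrow>
   sep_inner J (\<lambda>i. x i + y i) z = sep_inner J x z + sep_inner J y z"
  using l2inner_lin_left[of x J y z 1 1] by simp

lemma l2inner_scale_right:
  "x \<in> sep_l2 J \<Longrightarrow> y \<in> sep_l2 J \<Longrightarrow> sep_inner J x (\<lambda>i. a * y i) = a * sep_inner J x y"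
  using l2inner_lin_right[of x J y y a 0] by simp

lemma l2inner_scale_left:
  "x \<in> sep_l2 J \<Longrightarrow> y \<in> sep_l2 J \<Longrightarrow> sep_inner J (\<lambda>i. a * x i) y = cnj a * sep_inner J x y"
  using l2inner_lin_left[of x J x y a 0] by simp

lemma l2inner_sum_right:
  "finite S \<Longrightarrow> x \<in> sep_l2 J \<Longrightarrow> (\<And>s. s \<in> S \<Longrightarrow> f s \<in> sep_l2 J) \<Longrightarrow>
   sep_inner J x (\<lambda>i. \<Sum>s\<in>S. f s i) = (\<Sum>s\<in>S. sep_inner J x (f s))"
proof (induction S rule: finite_induct)
  case (insert s S)
  have "sep_inner J x (\<lambda>i. \<Sum>s\<in>insert s S. f s i) = sep_inner J x (\<lambda>i. f s i + (\<Sum>s\<in>S. f s i))"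
    using insert by simp
  also have "\<dots> = sep_inner J x (f s) + sep_inner J x (\<lambda>i. (\<Sum>s\<in>S. f s i))"
    using insert by (intro l2inner_add_right) auto
  finally show ?case using insert by simp
qed simp

lemma l2inner_sum_left:
  "finite S \<Longrightarrow> x \<in> sep_l2 J \<Longrightarrow> (\<And>s. s \<in> S \<Longrightarrow> f s \<in> sep_l2 J) \<Longrightarrow>
   sep_inner J (\<lambda>i. \<Sum>s\<in>S. f s i) x = (\<Sum>s\<in>S. sep_inner J (f s) x)"
  using l2inner_sum_right[of S x J f] l2inner_commute by (metis (no_types, lifting) cnj_sum sum.cong)

lemma l2inner_self_real: "x \<in> sep_l2 J \<Longrightarrow> sep_inner J x x = complex_of_real ((sep_norm J x)^2)"
  by (simp add: l2inner_self nsq_norm)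

lemma l2_Cauchy_Schwarz:
  assumes x: "x \<in> sep_l2 J" and y: "y \<in> sep_l2 J"
  shows "cmod (sep_inner J x y) \<le> sep_norm J x * sep_norm J y"
proof (cases "nsq J y = 0")
  case True
  then have "y = (\<lambda>_. 0)" using nsq_zero y by blast
  thus ?thesis by (simp add: sep_norm_nonneg)
next
  case False
  define a where "a = nsq J y"
  have a: "a > 0" using False nsq_nonneg a_def by (metis order_le_less)
  define c where "c = sep_inner J y x"
  define z where "z = (\<lambda>i. 1 * x i + (- (c / a)) * y i)"
  have z: "z \<in> sep_l2 J" unfolding z_def using x y by blast
  have "sep_inner J z z = sep_inner J x z - (cnj (c/a)) * sep_inner J y z"
    unfolding z_def[of] using x y z[unfolded z_def]
    by (subst l2inner_lin_left) auto
  also have "sep_inner J x z = sep_inner J x x - (c/a) * sep_inner J x y"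
    unfolding z_def using x y by (subst l2inner_lin_right) auto
  also have "sep_inner J y z = sep_inner J y x - (c/a) * sep_inner J y y"
    unfolding z_def using x y by (subst l2inner_lin_right) auto
  finally have e: "sep_inner J z z = nsq J x - (c/a) * cnj c - cnj (c/a) * c + cnj (c/a) * (c/a) * a"
    using x y by (simp add: l2inner_self c_def l2inner_commute[of J x y] a_def algebra_simps)
  have "cnj (c/a) * (c/a) * a = c * cnj c / a" using a by (simp add: field_simps)
  hence "sep_inner J z z = nsq J x - c * cnj c / a" using e by (simp add: field_simps)
  moreover have "c * cnj c = complex_of_real ((cmod c)^2)" by (simp only: complex_norm_square)
  ultimately have "complex_of_real (nsq J z) = complex_of_real (nsq J x - (cmod c)^2 / a)"
    using l2inner_self[OF z] by simp
  hence "nsq J z = nsq J x - (cmod c)^2 / a" using of_real_eq_iff by blast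
  hence "(cmod c)^2 / a \<le> nsq J x" using nsq_nonneg[of J z] by linarith
  hence "(cmod c)^2 \<le> nsq J x * nsq J y" using a a_def by (simp add: field_simps)
  hence "(cmod c)^2 \<le> (sep_norm J x * sep_norm J y)^2" by (simp add: nsq_norm power_mult_distrib)
  hence "cmod c \<le> sep_norm J x * sep_norm J y"
    using sep_norm_nonneg by (meson mult_nonneg_nonneg power2_le_imp_le)
  thus ?thesis unfolding c_def using l2inner_commute[of J x y] by simp
qed

lemma nsq_add:
  assumes "x \<in> sep_l2 J" "y \<in> sep_l2 J"
  shows "nsq J (\<lambda>i. x i + y i) = nsq J x + nsq J y + 2 * Re (sep_inner J x y)"
proof -
  have "complex_of_real (nsq J (\<lambda>i. x i + y i)) = sep_inner J (\<lambda>i. x i + y i) (\<lambda>i. x i + y i)"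
    using assms by (simp add: l2inner_self l2_add)
  also have "\<dots> = sep_inner J x x + sep_inner J x y + (sep_inner J y x + sep_inner J y y)"
    using assms by (simp add: l2inner_add_left l2inner_add_right l2_add)
  also have "\<dots> = complex_of_real (nsq J x + nsq J y + 2 * Re (sep_inner J x y))"
    using assms by (simp add: l2inner_self l2inner_commute[of J y x] complex_eq_iff)
  finally show ?thesis using of_real_eq_iff by blast
qed

lemma l2norm_triangle:
  assumes "x \<in> sep_l2 J" "y \<in> sep_l2 J"
  shows "sep_norm J (\<lambda>i. x i + y i) \<le> sep_norm J x + sep_norm J y"
proof -
  have "Re (sep_inner J x y) \<le> sep_norm J x * sep_norm J y"
    using l2_Cauchy_Schwarz[OF assms] complex_Re_le_cmod order_trans by blast
  hence "(sep_norm J (\<lambda>i. x i + y i))^2 \<le> (sep_norm J x + sep_norm J y)^2"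
    using nsq_add[OF assms] by (simp add: nsq_norm power2_sum)
  thus ?thesis using sep_norm_nonneg by (meson add_nonneg_nonneg power2_le_imp_le)
qed

lemma nsq_scale: "nsq J (\<lambda>i. a * x i) = (cmod a)^2 * nsq J x"
  unfolding nsq_def by (simp add: norm_mult power_mult_distrib infsum_cmult_right')

lemma l2norm_scale: "sep_norm J (\<lambda>i. a * x i) = cmod a * sep_norm J x"
  by (simp add: sep_norm_nsq nsq_scale real_sqrt_mult)

lemma l2norm_minus_commute: "sep_norm J (\<lambda>i. x i - y i) = sep_norm J (\<lambda>i. y i - x i)"
  unfolding sep_norm_def by (simp add: norm_minus_commute)

lemma l2norm_triangle_diff:
  assumes "x \<in> sep_l2 J" "y \<in> sep_l2 J" "z \<in> sep_l2 J"
  shows "sep_norm J (\<lambda>i. x i - z i) \<le> sep_norm J (\<lambda>i. x i - y i) + sep_norm J (\<lambda>i. y i - z i)"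
  using l2norm_triangle[of "\<lambda>i. x i - y i" J "\<lambda>i. y i - z i"] assms by auto


lemma bop_l2: "sep_bounded_op J T \<Longrightarrow> x \<in> sep_l2 J \<Longrightarrow> T x \<in> sep_l2 J"
  by (simp add: sep_bounded_op_def)

lemma bop_lin: "sep_bounded_op J T \<Longrightarrow> x \<in> sep_l2 J \<Longrightarrow> y \<in> sep_l2 J \<Longrightarrow>
   T (\<lambda>i. a * x i + b * y i) = (\<lambda>i. a * T x i + b * T y i)"
  by (simp add: sep_bounded_op_def)

lemma bop_out: "sep_bounded_op J T \<Longrightarrow> x \<notin> sep_l2 J \<Longrightarrow> T x = (\<lambda>_. 0)"
  by (simp add: sep_bounded_op_def)

lemma bop_bound: assumes "sep_bounded_op J T"
  obtains c where "c \<ge> 0" "\<And>x. x \<in> sep_l2 J \<Longrightarrow> sep_norm J (T x) \<le> c * sep_norm J x"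
proof -
  from assms obtain c where c: "\<And>x. x \<in> sep_l2 J \<Longrightarrow> sep_norm J (T x) \<le> c * sep_norm J x"
    unfolding sep_bounded_op_def by blast
  have "sep_norm J (T x) \<le> max c 0 * sep_norm J x" if "x \<in> sep_l2 J" for x
  proof -
    have "c * sep_norm J x \<le> max c 0 * sep_norm J x"
      by (rule mult_right_mono) (auto simp: sep_norm_nonneg)
    thus ?thesis using c[OF that] by linarith
  qed
  thus ?thesis using that[of "max c 0"] by auto
qed

lemma bop_scale: "sep_bounded_op J T \<Longrightarrow> x \<in> sep_l2 J \<Longrightarrow> T (\<lambda>i. a * x i) = (\<lambda>i. a * T x i)"
  using bop_lin[of J T x x a 0] by simp

lemma bop_zero: "sep_bounded_op J T \<Longrightarrow> T (\<lambda>_. 0) = (\<lambda>_. 0)"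
  using bop_scale[of J T "\<lambda>_. 0" 0] by simp

lemma bop_add: "sep_bounded_op J T \<Longrightarrow> x \<in> sep_l2 J \<Longrightarrow> y \<in> sep_l2 J \<Longrightarrow> T (\<lambda>i. x i + y i) = (\<lambda>i. T x i + T y i)"
  using bop_lin[of J T x y 1 1] by simp

lemma bop_diff: "sep_bounded_op J T \<Longrightarrow> x \<in> sep_l2 J \<Longrightarrow> y \<in> sep_l2 J \<Longrightarrow> T (\<lambda>i. x i - y i) = (\<lambda>i. T x i - T y i)"
  using bop_lin[of J T x y 1 "-1"] by simp

lemma bop_sum: assumes T: "sep_bounded_op J T" and "finite S" "\<And>s. s \<in> S \<Longrightarrow> f s \<in> sep_l2 J"
  shows "T (\<lambda>i. \<Sum>s\<in>S. f s i) = (\<lambda>i. \<Sum>s\<in>S. T (f s) i)"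
  using assms(2,3)
proof (induction S rule: finite_induct)
  case empty thus ?case by (simp add: bop_zero[OF T])
next
  case (insert s S)
  have "T (\<lambda>i. \<Sum>s\<in>insert s S. f s i) = T (\<lambda>i. f s i + (\<Sum>s\<in>S. f s i))"
    using insert by simp
  also have "\<dots> = (\<lambda>i. T (f s) i + T (\<lambda>i. \<Sum>s\<in>S. f s i) i)"
    using insert by (intro bop_add[OF T]) auto
  finally show ?case using insert by simp
qed

lemma bopI:
  assumes "\<And>x. x \<in> sep_l2 J \<Longrightarrow> T x \<in> sep_l2 J"
    and "\<And>x y a b. x \<in> sep_l2 J \<Longrightarrow> y \<in> sep_l2 J \<Longrightarrow> T (\<lambda>i. a * x i + b * y i) = (\<lambda>i. a * T x i + b * T y i)"
    and "\<And>x. x \<in> sep_l2 J \<Longrightarrow> sep_norm J (T x) \<le> c * sep_norm J x"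
    and "\<And>x. x \<notin> sep_l2 J \<Longrightarrow> T x = (\<lambda>_. 0)"
  shows "sep_bounded_op J T"
  using assms unfolding sep_bounded_op_def by blast

definition idop :: "'j set \<Rightarrow> ('j \<Rightarrow> complex) \<Rightarrow> ('j \<Rightarrow> complex)" where
  "idop J x = (if x \<in> sep_l2 J then x else (\<lambda>_. 0))"

lemma bop_idop: "sep_bounded_op J (idop J)"
  by (rule bopI[where c=1]) (auto simp: idop_def)

lemma bop_comp:
  assumes T: "sep_bounded_op J T" and S: "sep_bounded_op J S"
  shows "sep_bounded_op J (\<lambda>x. T (S x))"
proof -
  obtain c where c: "c \<ge> 0" "\<And>x. x \<in> sep_l2 J \<Longrightarrow> sep_norm J (T x) \<le> c * sep_norm J x"
    using bop_bound[OF T] by blast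
  obtain d where d: "d \<ge> 0" "\<And>x. x \<in> sep_l2 J \<Longrightarrow> sep_norm J (S x) \<le> d * sep_norm J x"
    using bop_bound[OF S] by blast
  show ?thesis
  proof (rule bopI[where c="c*d"])
    fix x assume x: "x \<in> sep_l2 J"
    have "sep_norm J (T (S x)) \<le> c * sep_norm J (S x)" using c bop_l2[OF S x] by blast
    also have "\<dots> \<le> c * (d * sep_norm J x)" using d x c(1) by (simp add: mult_left_mono)
    finally show "sep_norm J (T (S x)) \<le> c * d * sep_norm J x" by simp
  qed (use T S in \<open>auto simp: bop_l2 bop_lin bop_out bop_zero\<close>)
qed

lemma bop_lincomb:
  assumes T: "sep_bounded_op J T" and S: "sep_bounded_op J S"
  shows "sep_bounded_op J (\<lambda>x i. a * T x i + b * S x i)"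
proof -
  obtain c where c: "c \<ge> 0" "\<And>x. x \<in> sep_l2 J \<Longrightarrow> sep_norm J (T x) \<le> c * sep_norm J x"
    using bop_bound[OF T] by blast
  obtain d where d: "d \<ge> 0" "\<And>x. x \<in> sep_l2 J \<Longrightarrow> sep_norm J (S x) \<le> d * sep_norm J x"
    using bop_bound[OF S] by blast
  show ?thesis
  proof (rule bopI[where c="cmod a * c + cmod b * d"])
    fix x assume x: "x \<in> sep_l2 J"
    have "sep_norm J (\<lambda>i. a * T x i + b * S x i) \<le> sep_norm J (\<lambda>i. a * T x i) + sep_norm J (\<lambda>i. b * S x i)"
      using x T S by (intro l2norm_triangle) (auto simp: bop_l2)
    also have "\<dots> = cmod a * sep_norm J (T x) + cmod b * sep_norm J (S x)" by (simp add: l2norm_scale)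
    also have "\<dots> \<le> cmod a * (c * sep_norm J x) + cmod b * (d * sep_norm J x)"
      using c(2)[OF x] d(2)[OF x] by (intro add_mono mult_left_mono) auto
    finally show "sep_norm J (\<lambda>i. a * T x i + b * S x i) \<le> (cmod a * c + cmod b * d) * sep_norm J x"
      by (simp add: algebra_simps)
  next
    fix x y :: "'a \<Rightarrow> complex" and a' b' assume x: "x \<in> sep_l2 J" and y: "y \<in> sep_l2 J"
    show "(\<lambda>i. a * T (\<lambda>i. a' * x i + b' * y i) i + b * S (\<lambda>i. a' * x i + b' * y i) i) =
          (\<lambda>i. a' * (a * T x i + b * S x i) + b' * (a * T y i + b * S y i))"
      using bop_lin[OF T x y] bop_lin[OF S x y] by (simp add: algebra_simps)
  qed (use T S in \<open>auto simp: bop_l2 bop_out intro!: l2_lin\<close>)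
qed

lemma bop_sum_ops:
  assumes "finite S" "\<And>s. s \<in> S \<Longrightarrow> sep_bounded_op J (T s)"
  shows "sep_bounded_op J (\<lambda>x i. \<Sum>s\<in>S. c s * T s x i)"
  using assms
proof (induction S rule: finite_induct)
  case empty
  have "sep_bounded_op J (\<lambda>x i. 0 * idop J x i + 0 * idop J x i)"
    by (intro bop_lincomb bop_idop)
  thus ?case by simp
next
  case (insert s S)
  have "sep_bounded_op J (\<lambda>x i. c s * T s x i + 1 * (\<Sum>s\<in>S. c s * T s x i))"
    using insert by (intro bop_lincomb) auto
  thus ?case using insert by simp
qed

definition sadj :: "'j set \<Rightarrow> (('j \<Rightarrow> complex) \<Rightarrow> ('j \<Rightarrow> complex)) \<Rightarrow> bool" where
  "sadj J T \<longleftrightarrow> (\<forall>x\<in>sep_l2 J. \<forall>y\<in>sep_l2 J. sep_inner J (T x) y = sep_inner J x (T y))"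

lemma observable_iff: "sep_observable J T \<longleftrightarrow> sep_bounded_op J T \<and> sadj J T"
  by (simp add: sep_observable_def sadj_def)

lemma sadjD: "sadj J T \<Longrightarrow> x \<in> sep_l2 J \<Longrightarrow> y \<in> sep_l2 J \<Longrightarrow> sep_inner J (T x) y = sep_inner J x (T y)"
  by (simp add: sadj_def)

lemma norm_le_eps_zero:
  assumes "x \<in> sep_l2 J" "\<And>e. e > 0 \<Longrightarrow> sep_norm J x \<le> e"
  shows "x = (\<lambda>_. 0)"
proof -
  have "sep_norm J x \<le> 0"
  proof (rule ccontr)
    assume "\<not> sep_norm J x \<le> 0"
    hence "sep_norm J x > 0" by simp
    with assms(2)[of "sep_norm J x / 2"] show False by simp
  qed
  hence "sep_norm J x = 0" using sep_norm_nonneg[of J x] by linarith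
  thus ?thesis using norm_zero_l2 assms(1) by blast
qed

definition restr :: "'j set \<Rightarrow> ('j \<Rightarrow> complex) \<Rightarrow> ('j \<Rightarrow> complex)" where
  "restr F z = (\<lambda>i. if i \<in> F then z i else 0)"

definition uvec :: "'j \<Rightarrow> ('j \<Rightarrow> complex)" where
  "uvec j = (\<lambda>i. if i = j then 1 else 0)"

lemma uvec_l2: "j \<in> J \<Longrightarrow> uvec j \<in> sep_l2 J"
proof -
  assume j: "j \<in> J"
  have "(\<lambda>i. (cmod (uvec j i))^2) summable_on J"
    by (rule finite_nonzero_values_imp_summable_on) (auto simp: uvec_def)
  thus ?thesis using j by (auto simp: sep_l2_def uvec_def)
qed

lemma restr_sum: "finite F \<Longrightarrow> restr F z = (\<lambda>i. \<Sum>j\<in>F. z j * uvec j i)"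
  by (auto simp: restr_def uvec_def if_distrib cong: if_cong)

lemma bop_restr:
  assumes U: "sep_bounded_op J U" and F: "finite F" "F \<subseteq> J"
  shows "U (restr F z) = (\<lambda>i. \<Sum>j\<in>F. z j * U (uvec j) i)"
proof -
  have "U (restr F z) = (\<lambda>i. \<Sum>j\<in>F. U (\<lambda>i. z j * uvec j i) i)"
    unfolding restr_sum[OF F(1)] by (rule bop_sum[OF U F(1)]) (use F in \<open>auto intro!: l2_scale uvec_l2\<close>)
  also have "\<dots> = (\<lambda>i. \<Sum>j\<in>F. z j * U (uvec j) i)"
    using F by (intro ext sum.cong refl) (auto simp: bop_scale[OF U] uvec_l2)
  finally show ?thesis .
qed

lemma tail_small:
  assumes z: "z \<in> sep_l2 J" and e: "e > 0"
  shows "\<exists>F. finite F \<and> F \<subseteq> J \<and> nsq J (\<lambda>i. z i - restr F z i) \<le> e"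
proof -
  let ?f = "\<lambda>i. (cmod (z i))^2"
  obtain F where F: "finite F" "F \<subseteq> J" "dist (sum ?f F) (infsum ?f J) \<le> e"
    using infsum_finite_approximation[OF l2_summ[OF z] e] by blast
  have s1: "(\<lambda>i. if i \<in> F then ?f i else 0) summable_on J"
    by (rule finite_nonzero_values_imp_summable_on) (use F in auto)
  have eq: "?f = (\<lambda>i. (if i \<in> F then ?f i else 0) + (cmod (z i - restr F z i))^2)"
    by (auto simp: restr_def)
  have s2: "(\<lambda>i. (cmod (z i - restr F z i))^2) summable_on J"
    by (rule summable_on_comparison_test[OF l2_summ[OF z]]) (auto simp: restr_def)
  have "infsum ?f J = infsum (\<lambda>i. if i \<in> F then ?f i else 0) J + nsq J (\<lambda>i. z i - restr F z i)"
    unfolding nsq_def by (subst eq) (intro infsum_add s1 s2)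
  also have "infsum (\<lambda>i. if i \<in> F then ?f i else 0) J = sum ?f F"
  proof -
    have "infsum (\<lambda>i. if i \<in> F then ?f i else 0) J = infsum (\<lambda>i. if i \<in> F then ?f i else 0) F"
      by (rule infsum_cong_neutral) (use F in auto)
    also have "\<dots> = sum ?f F" using F by simp
    finally show ?thesis .
  qed
  finally show ?thesis using F by (auto simp: dist_real_def)
qed

lemma bop_unique:
  assumes T: "sep_bounded_op J T" and S: "sep_bounded_op J S"
    and eq: "\<And>j. j \<in> J \<Longrightarrow> T (uvec j) = S (uvec j)"
  shows "T = S"
proof (rule ext)
  fix z
  show "T z = S z"
  proof (cases "z \<in> sep_l2 J")
    case False thus ?thesis using T S by (simp add: bop_out)
  next
    case z: True
    obtain c where c: "c \<ge> 0" "\<And>x. x \<in> sep_l2 J \<Longrightarrow> sep_norm J (T x) \<le> c * sep_norm J x"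
      using bop_bound[OF T] by blast
    obtain d where d: "d \<ge> 0" "\<And>x. x \<in> sep_l2 J \<Longrightarrow> sep_norm J (S x) \<le> d * sep_norm J x"
      using bop_bound[OF S] by blast
    have "(\<lambda>i. T z i - S z i) = (\<lambda>_. 0)"
    proof (rule norm_le_eps_zero)
      show "(\<lambda>i. T z i - S z i) \<in> sep_l2 J" using T S z by (auto simp: bop_l2)
      fix e :: real assume e: "e > 0"
      define e' where "e' = (e / (c + d + 1))^2"
      have e': "e' > 0" using e c d by (simp add: e'_def)
      obtain F where F: "finite F" "F \<subseteq> J" "nsq J (\<lambda>i. z i - restr F z i) \<le> e'"
        using tail_small[OF z e'] by blast
      have rl2: "restr F z \<in> sep_l2 J"
        unfolding restr_sum[OF F(1)] using F by (intro l2_sum l2_scale uvec_l2) auto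
      have TS: "T (restr F z) = S (restr F z)"
        unfolding bop_restr[OF T F(1,2)] bop_restr[OF S F(1,2)]
        by (intro ext sum.cong refl) (use F eq in auto)
      define w where "w = (\<lambda>i. z i - restr F z i)"
      have w: "w \<in> sep_l2 J" unfolding w_def using z rl2 by auto
      have "sep_norm J w \<le> sqrt e'" using F(3) by (simp add: sep_norm_nsq w_def)
      moreover have "sqrt e' = e / (c + d + 1)" using e c d by (simp add: e'_def)
      ultimately have nw: "sep_norm J w \<le> e / (c + d + 1)" by simp
      have "(\<lambda>i. T z i - S z i) = (\<lambda>i. T w i - S w i)"
        unfolding w_def using z rl2 TS by (simp add: bop_diff[OF T] bop_diff[OF S])
      hence "sep_norm J (\<lambda>i. T z i - S z i) = sep_norm J (\<lambda>i. T w i + (-1) * S w i)" by simp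
      also have "\<dots> \<le> sep_norm J (T w) + sep_norm J (\<lambda>i. (-1) * S w i)"
        using w T S l2_scale[OF bop_l2[OF S w], of "-1"] by (intro l2norm_triangle) (auto simp: bop_l2)
      also have "\<dots> \<le> c * sep_norm J w + d * sep_norm J w"
        using c(2)[OF w] d(2)[OF w] l2norm_scale[of J "-1" "S w"] by simp
      also have "\<dots> \<le> (c + d + 1) * sep_norm J w"
        using sep_norm_nonneg[of J w] by (simp add: algebra_simps)
      also have "\<dots> \<le> (c + d + 1) * (e / (c + d + 1))"
        using nw c d by (intro mult_left_mono) auto
      also have "\<dots> = e" using c d by simp
      finally show "sep_norm J (\<lambda>i. T z i - S z i) \<le> e" .
    qed
    thus ?thesis by (auto simp: fun_eq_iff)
  qed
qed


definition l2d :: "'j set \<Rightarrow> ('j \<Rightarrow> complex) \<Rightarrow> ('j \<Rightarrow> complex) \<Rightarrow> real" where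
  "l2d J x y = sep_norm J (\<lambda>i. x i - y i)"

lemma l2_metric: "Metric_space (sep_l2 J) (l2d J)"
proof
  fix x y z :: "'a \<Rightarrow> complex"
  show "0 \<le> l2d J x y" by (simp add: l2d_def sep_norm_nonneg)
  show "l2d J x y = l2d J y x" using l2norm_minus_commute[of J x y] by (simp add: l2d_def)
  assume x: "x \<in> sep_l2 J" and y: "y \<in> sep_l2 J"
  show "(l2d J x y = 0) = (x = y)"
  proof
    assume "l2d J x y = 0"
    hence "(\<lambda>i. x i - y i) = (\<lambda>_. 0)" using norm_zero_l2 x y by (auto simp: l2d_def)
    thus "x = y" by (auto simp: fun_eq_iff)
  qed (simp add: l2d_def)
  assume z: "z \<in> sep_l2 J"
  show "l2d J x z \<le> l2d J x y + l2d J y z"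
    unfolding l2d_def using l2norm_triangle_diff[OF x y z] .
qed

lemma coord_le_norm: "x \<in> sep_l2 J \<Longrightarrow> cmod (x i) \<le> sep_norm J x"
proof (cases "i \<in> J")
  case True
  assume x: "x \<in> sep_l2 J"
  have "sum (\<lambda>i. (cmod (x i))^2) {i} \<le> nsq J x"
    unfolding nsq_def using True by (intro finite_sum_le_infsum l2_summ[OF x]) auto
  hence "(cmod (x i))^2 \<le> (sep_norm J x)^2" by (simp add: nsq_norm)
  thus ?thesis using sep_norm_nonneg by (meson power2_le_imp_le)
next
  case False
  assume x: "x \<in> sep_l2 J"
  thus ?thesis using False l2_out[OF x False] by (simp add: sep_norm_nonneg)
qed

lemma l2_complete: "Metric_space.mcomplete (sep_l2 J) (l2d J)"
proof -
  interpret L: Metric_space "sep_l2 J" "l2d J" by (rule l2_metric)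
  show ?thesis unfolding L.mcomplete_def
  proof (intro allI impI)
    fix \<sigma> :: "nat \<Rightarrow> 'a \<Rightarrow> complex"
    assume C: "L.MCauchy \<sigma>"
    have s: "\<sigma> n \<in> sep_l2 J" for n using C by (auto simp: L.MCauchy_def)
    have cau: "\<exists>N. \<forall>n n'. N \<le> n \<longrightarrow> N \<le> n' \<longrightarrow> l2d J (\<sigma> n) (\<sigma> n') < e" if "e > 0" for e
      using C that by (auto simp: L.MCauchy_def)
    have "Cauchy (\<lambda>n. \<sigma> n i)" for i
    proof (rule metric_CauchyI)
      fix e :: real assume "e > 0"
      then obtain N where N: "\<And>n n'. N \<le> n \<Longrightarrow> N \<le> n' \<Longrightarrow> l2d J (\<sigma> n) (\<sigma> n') < e"
        using cau by blast
      have "dist (\<sigma> m i) (\<sigma> n i) < e" if "m \<ge> N" "n \<ge> N" for m n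
      proof -
        have "cmod (\<sigma> m i - \<sigma> n i) \<le> l2d J (\<sigma> m) (\<sigma> n)"
          unfolding l2d_def using coord_le_norm[of "\<lambda>i. \<sigma> m i - \<sigma> n i" J i] s by auto
        thus ?thesis using N[OF that] by (simp add: dist_norm)
      qed
      thus "\<exists>M. \<forall>m\<ge>M. \<forall>n\<ge>M. dist (\<sigma> m i) (\<sigma> n i) < e" by blast
    qed
    hence conv: "(\<lambda>n. \<sigma> n i) \<longlonglongrightarrow> lim (\<lambda>n. \<sigma> n i)" for i
      using Cauchy_convergent_iff convergent_LIMSEQ_iff by blast
    define f where "f i = lim (\<lambda>n. \<sigma> n i)" for i
    have conv': "(\<lambda>n. \<sigma> n i) \<longlonglongrightarrow> f i" for i using conv by (simp add: f_def)
    have key: "\<exists>N. \<forall>n\<ge>N. (\<lambda>i. \<sigma> n i - f i) \<in> sep_l2 J \<and> sep_norm J (\<lambda>i. \<sigma> n i - f i) \<le> e"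
      if e: "e > 0" for e
    proof -
      obtain N where N: "\<And>n n'. N \<le> n \<Longrightarrow> N \<le> n' \<Longrightarrow> l2d J (\<sigma> n) (\<sigma> n') < e"
        using cau e by blast
      have "(\<lambda>i. \<sigma> n i - f i) \<in> sep_l2 J \<and> sep_norm J (\<lambda>i. \<sigma> n i - f i) \<le> e" if n: "n \<ge> N" for n
      proof -
        let ?g = "\<lambda>i. (cmod (\<sigma> n i - f i))^2"
        have fin: "sum ?g F \<le> e^2" if F: "finite F" "F \<subseteq> J" for F
        proof -
          have lim: "(\<lambda>m. sum (\<lambda>i. (cmod (\<sigma> n i - \<sigma> m i))^2) F) \<longlonglongrightarrow> sum ?g F"
            by (intro tendsto_intros conv')
          have "sum (\<lambda>i. (cmod (\<sigma> n i - \<sigma> m i))^2) F \<le> e^2" if m: "m \<ge> N" for m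
          proof -
            have "sum (\<lambda>i. (cmod (\<sigma> n i - \<sigma> m i))^2) F \<le> nsq J (\<lambda>i. \<sigma> n i - \<sigma> m i)"
              unfolding nsq_def using F s by (intro finite_sum_le_infsum l2_summ) auto
            also have "\<dots> = (l2d J (\<sigma> n) (\<sigma> m))^2" by (simp add: l2d_def nsq_norm)
            also have "\<dots> \<le> e^2" using N[OF n m] by (simp add: l2d_def power_mono sep_norm_nonneg)
            finally show ?thesis .
          qed
          thus ?thesis using LIMSEQ_le_const2[OF lim] by blast
        qed
        have summ: "?g summable_on J"
          by (rule nonneg_bdd_above_summable_on) (use fin in \<open>auto intro!: bdd_aboveI\<close>)
        have out: "\<sigma> n i - f i = 0" if "i \<notin> J" for i
        proof -
          have "(\<lambda>m. \<sigma> m i) = (\<lambda>_. 0)" by (rule ext) (rule l2_out[OF s that])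
          hence "(\<lambda>_. 0::complex) \<longlonglongrightarrow> f i" using conv'[of i] by simp
          hence "0 = f i" using LIMSEQ_unique[OF tendsto_const] by blast
          hence "f i = 0" by simp
          thus ?thesis using l2_out[OF s that] by simp
        qed
        have inl2: "(\<lambda>i. \<sigma> n i - f i) \<in> sep_l2 J" using summ out by (simp add: sep_l2_def)
        have "nsq J (\<lambda>i. \<sigma> n i - f i) \<le> e^2"
          unfolding nsq_def by (rule infsum_le_finite_sums[OF summ fin])
        hence "(sep_norm J (\<lambda>i. \<sigma> n i - f i))^2 \<le> e^2" by (simp add: nsq_norm)
        hence "sep_norm J (\<lambda>i. \<sigma> n i - f i) \<le> e" using e by (meson less_imp_le power2_le_imp_le)
        with inl2 show ?thesis by blast
      qed
      thus ?thesis by blast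
    qed
    obtain N0 where N0: "(\<lambda>i. \<sigma> N0 i - f i) \<in> sep_l2 J"
      using key[of 1] by auto
    have fl2: "f \<in> sep_l2 J"
    proof -
      have "(\<lambda>i. \<sigma> N0 i - (\<sigma> N0 i - f i)) \<in> sep_l2 J" using l2_diff[OF s N0] .
      thus ?thesis by simp
    qed
    have "limitin L.mtopology \<sigma> f sequentially"
      unfolding L.limit_metric_sequentially
    proof (intro conjI fl2 allI impI)
      fix e :: real assume e: "e > 0"
      obtain N where N: "\<forall>n\<ge>N. (\<lambda>i. \<sigma> n i - f i) \<in> sep_l2 J \<and> sep_norm J (\<lambda>i. \<sigma> n i - f i) \<le> e/2"
        using key[of "e/2"] e by auto
      have "\<sigma> n \<in> sep_l2 J \<and> l2d J (\<sigma> n) f < e" if "n \<ge> N" for n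
        using N that s[of n] e unfolding l2d_def by fastforce
      thus "\<exists>N. \<forall>n\<ge>N. \<sigma> n \<in> sep_l2 J \<and> l2d J (\<sigma> n) f < e" by blast
    qed
    thus "\<exists>x. limitin L.mtopology \<sigma> x sequentially" by blast
  qed
qed


lemma sym_bij_bounded_below:
  fixes S :: "('j \<Rightarrow> complex) \<Rightarrow> ('j \<Rightarrow> complex)"
  assumes l2: "\<And>x. x \<in> sep_l2 J \<Longrightarrow> S x \<in> sep_l2 J"
    and lin: "\<And>x y a b. x \<in> sep_l2 J \<Longrightarrow> y \<in> sep_l2 J \<Longrightarrow> S (\<lambda>i. a * x i + b * y i) = (\<lambda>i. a * S x i + b * S y i)"
    and sym: "\<And>x y. x \<in> sep_l2 J \<Longrightarrow> y \<in> sep_l2 J \<Longrightarrow> sep_inner J (S x) y = sep_inner J x (S y)"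
    and bij: "bij_betw S (sep_l2 J) (sep_l2 J)"
  shows "\<exists>\<delta>>0. \<forall>x\<in>sep_l2 J. \<delta> * sep_norm J x \<le> sep_norm J (S x)"
proof -
  interpret L: Metric_space "sep_l2 J" "l2d J" by (rule l2_metric)
  define R where "R = inv_into (sep_l2 J) S"
  have R: "R y \<in> sep_l2 J" "S (R y) = y" if "y \<in> sep_l2 J" for y
    using bij that unfolding R_def
    by (auto simp: bij_betw_def inv_into_into f_inv_into_f)
  define U where "U = {x \<in> sep_l2 J. sep_norm J (S x) \<le> 1}"
  define F where "F k = {y \<in> sep_l2 J. \<forall>x\<in>U. cmod (sep_inner J y x) \<le> real k}" for k :: nat
  have cover: "\<exists>k. y \<in> F k" if y: "y \<in> sep_l2 J" for y
  proof -
    define k where "k = nat \<lceil>sep_norm J (R y)\<rceil>"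
    have "cmod (sep_inner J y x) \<le> real k" if x: "x \<in> U" for x
    proof -
      have xl: "x \<in> sep_l2 J" and xs: "sep_norm J (S x) \<le> 1" using x by (auto simp: U_def)
      have "sep_inner J y x = sep_inner J (R y) (S x)"
        using sym[OF R(1)[OF y] xl] R(2)[OF y] by simp
      hence "cmod (sep_inner J y x) \<le> sep_norm J (R y) * sep_norm J (S x)"
        using l2_Cauchy_Schwarz[OF R(1)[OF y] l2[OF xl]] by simp
      also have "\<dots> \<le> sep_norm J (R y) * 1"
        using xs by (intro mult_left_mono) (auto simp: sep_norm_nonneg)
      also have "\<dots> \<le> real k" unfolding k_def by linarith
      finally show ?thesis .
    qed
    thus ?thesis using y by (auto simp: F_def)
  qed
  have Fsub: "F k \<subseteq> sep_l2 J" for k by (auto simp: F_def)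
  have closed: "closedin L.mtopology (F k)" for k
    unfolding L.closedin_metric
  proof (intro conjI Fsub allI impI)
    fix y assume y: "y \<in> sep_l2 J - F k"
    then obtain x where x: "x \<in> U" and big: "cmod (sep_inner J y x) > real k"
      by (auto simp: F_def not_le)
    have xl: "x \<in> sep_l2 J" using x by (auto simp: U_def)
    define r where "r = (cmod (sep_inner J y x) - real k) / (sep_norm J x + 1)"
    have r: "r > 0" unfolding r_def using big sep_norm_nonneg[of J x]
      by (intro divide_pos_pos) auto
    have "w \<notin> F k" if w: "w \<in> L.mball y r" for w
    proof
      assume wF: "w \<in> F k"
      have wl: "w \<in> sep_l2 J" and d: "l2d J y w < r" using w by auto
      have "sep_inner J y x - sep_inner J w x = sep_inner J (\<lambda>i. y i - w i) x"
        using y wl xl by (simp add: l2inner_diff_left)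
      hence "cmod (sep_inner J y x - sep_inner J w x) \<le> l2d J y w * sep_norm J x"
        using l2_Cauchy_Schwarz[of "\<lambda>i. y i - w i" J x] y wl xl by (auto simp: l2d_def)
      also have "\<dots> \<le> r * sep_norm J x"
        using d by (intro mult_right_mono) (auto simp: sep_norm_nonneg)
      also have "\<dots> < cmod (sep_inner J y x) - real k"
      proof -
        have "r * sep_norm J x < r * (sep_norm J x + 1)" using r by simp
        also have "\<dots> = cmod (sep_inner J y x) - real k"
          unfolding r_def using sep_norm_nonneg[of J x]
          by (simp add: field_simps add_nonneg_pos)
        finally show ?thesis .
      qed
      finally have "cmod (sep_inner J w x) > real k"
        using norm_triangle_ineq2[of "sep_inner J y x" "sep_inner J w x"] by linarith
      moreover have "cmod (sep_inner J w x) \<le> real k" using wF x by (simp add: F_def)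
      ultimately show False by linarith
    qed
    thus "\<exists>r>0. disjnt (F k) (L.mball y r)" using r by (auto simp: disjnt_def)
  qed
  have "\<exists>k. L.mtopology interior_of (F k) \<noteq> {}"
  proof (rule ccontr)
    assume "\<not> ?thesis"
    hence "L.mtopology interior_of \<Union>(range F) = {}"
      by (intro L.metric_Baire_category_alt l2_complete) (auto simp: closed)
    moreover have "\<Union>(range F) = sep_l2 J" using cover Fsub by blast
    moreover have "L.mtopology interior_of (sep_l2 J) = sep_l2 J"
      using interior_of_topspace[of L.mtopology] by simp
    ultimately have "sep_l2 J = {}" by simp
    thus False using l2_zero by blast
  qed
  then obtain k y0 where y0: "y0 \<in> L.mtopology interior_of (F k)" by blast
  have "openin L.mtopology (L.mtopology interior_of (F k))" by simp
  then obtain r where r: "r > 0" "L.mball y0 r \<subseteq> L.mtopology interior_of (F k)"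
    using y0 unfolding L.openin_mtopology by blast
  have int_sub: "L.mtopology interior_of (F k) \<subseteq> F k" by (rule interior_of_subset)
  have ball: "L.mball y0 r \<subseteq> F k" using r(2) int_sub by (rule order_trans)
  have y0F: "y0 \<in> F k" using y0 int_sub by blast
  have y0l: "y0 \<in> sep_l2 J" using y0F Fsub by blast
  define K where "K = 4 * real k / r"
  have K: "K \<ge> 0" using r by (simp add: K_def)
  have Ubound: "sep_norm J x \<le> K" if x: "x \<in> U" for x
  proof (cases "sep_norm J x = 0")
    case True thus ?thesis using K by simp
  next
    case False
    define n where "n = sep_norm J x"
    have n: "n > 0" using False sep_norm_nonneg[of J x] by (simp add: n_def)
    have xl: "x \<in> sep_l2 J" using x by (auto simp: U_def)
    define z where "z = (\<lambda>i. 1 * y0 i + complex_of_real (r / (2 * n)) * x i)"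
    have zl: "z \<in> sep_l2 J" unfolding z_def using y0l xl by blast
    have "l2d J y0 z = sep_norm J (\<lambda>i. complex_of_real (- (r / (2 * n))) * x i)"
      unfolding l2d_def z_def by simp
    also have "\<dots> = cmod (complex_of_real (- (r / (2 * n)))) * n" unfolding n_def by (rule l2norm_scale)
    also have "\<dots> = r / 2" using n r by (subst norm_of_real) (simp add: field_simps)
    finally have "z \<in> L.mball y0 r" using zl y0l r by simp
    hence "z \<in> F k" using ball by blast
    hence c1: "cmod (sep_inner J z x) \<le> real k" using x by (auto simp: F_def)
    have c2: "cmod (sep_inner J y0 x) \<le> real k" using y0F x by (auto simp: F_def)
    have "sep_inner J z x = sep_inner J y0 x + complex_of_real (r / (2 * n)) * sep_inner J x x"
      unfolding z_def using l2inner_lin_left[OF y0l xl xl, of 1 "complex_of_real (r / (2 * n))"] by simp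
    also have "sep_inner J x x = complex_of_real (n^2)" using xl by (simp add: l2inner_self_real n_def)
    finally have "sep_inner J z x - sep_inner J y0 x = complex_of_real (r / 2 * n)"
      using n by (simp add: power2_eq_square)
    hence "cmod (sep_inner J z x - sep_inner J y0 x) = cmod (complex_of_real (r / 2 * n))" by (rule arg_cong)
    also have "\<dots> = r / 2 * n" using n r by (subst norm_of_real) simp
    finally have "r / 2 * n = cmod (sep_inner J z x - sep_inner J y0 x)" by simp
    also have "\<dots> \<le> 2 * real k" using c1 c2 norm_triangle_ineq4[of "sep_inner J z x" "sep_inner J y0 x"]
      by linarith
    finally have "r * n \<le> 4 * real k" by simp
    thus ?thesis using r unfolding K_def n_def by (simp add: field_simps)
  qed
  have S0: "S (\<lambda>_. 0) = (\<lambda>_. 0)" using lin[of "\<lambda>_. 0" "\<lambda>_. 0" 0 0] by simp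
  have "sep_norm J x \<le> (K + 1) * sep_norm J (S x)" if x: "x \<in> sep_l2 J" for x
  proof (cases "S x = (\<lambda>_. 0)")
    case True
    have inj: "inj_on S (sep_l2 J)" using bij by (simp add: bij_betw_def)
    have "S x = S (\<lambda>_. 0)" using True S0 by simp
    hence "x = (\<lambda>_. 0)" using inj_onD[OF inj _ x l2_zero] by blast
    thus ?thesis using S0 by simp
  next
    case False
    define m where "m = sep_norm J (S x)"
    have m: "m > 0" using False norm_zero_l2[OF l2[OF x]] sep_norm_nonneg[of J "S x"]
      by (auto simp: m_def order_le_less)
    define x' where "x' = (\<lambda>i. complex_of_real (1/m) * x i)"
    have x'l: "x' \<in> sep_l2 J" unfolding x'_def using x by blast
    have "S x' = (\<lambda>i. complex_of_real (1/m) * S x i)"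
      unfolding x'_def using lin[OF x x, of "complex_of_real (1/m)" 0] by simp
    hence "sep_norm J (S x') = cmod (complex_of_real (1/m)) * sep_norm J (S x)"
      by (simp only: l2norm_scale)
    hence "sep_norm J (S x') = 1" using m by (simp add: m_def norm_divide)
    hence "x' \<in> U" using x'l by (simp add: U_def)
    hence "sep_norm J x' \<le> K" by (rule Ubound)
    moreover have "sep_norm J x' = cmod (complex_of_real (1/m)) * sep_norm J x"
      unfolding x'_def by (rule l2norm_scale)
    ultimately have "sep_norm J x / m \<le> K" using m by (simp add: norm_divide)
    hence "sep_norm J x \<le> K * m" using m by (simp add: field_simps)
    also have "\<dots> \<le> (K + 1) * m" using m by simp
    finally show ?thesis by (simp add: m_def)
  qed
  hence "\<forall>x\<in>sep_l2 J. (1 / (K + 1)) * sep_norm J x \<le> sep_norm J (S x)"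
    using K by (simp add: field_simps)
  thus ?thesis using K by (intro exI[of _ "1 / (K + 1)"]) auto
qed


locale projfam =
  fixes J :: "'j set" and S :: "'s set" and E :: "'s \<Rightarrow> ('j \<Rightarrow> complex) \<Rightarrow> ('j \<Rightarrow> complex)"
  assumes finS: "finite S"
    and bopE: "\<And>s. s \<in> S \<Longrightarrow> sep_bounded_op J (E s)"
    and sadjE: "\<And>s. s \<in> S \<Longrightarrow> sadj J (E s)"
    and orth: "\<And>s t x. s \<in> S \<Longrightarrow> t \<in> S \<Longrightarrow> x \<in> sep_l2 J \<Longrightarrow> E s (E t x) = (if s = t then E t x else (\<lambda>_. 0))"
    and sum1: "\<And>x. x \<in> sep_l2 J \<Longrightarrow> (\<lambda>i. \<Sum>s\<in>S. E s x i) = x"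
begin

lemma El2: "s \<in> S \<Longrightarrow> x \<in> sep_l2 J \<Longrightarrow> E s x \<in> sep_l2 J"
  using bopE bop_l2 by blast

lemma comb_l2: "x \<in> sep_l2 J \<Longrightarrow> (\<lambda>i. \<Sum>s\<in>S'. a s * E s x i) \<in> sep_l2 J" if "S' \<subseteq> S" for S'
proof -
  assume x: "x \<in> sep_l2 J"
  have fin: "finite S'" using finS that finite_subset by blast
  show ?thesis using fin that x by (intro l2_sum l2_scale) (auto intro: El2)
qed

lemma E_comb:
  assumes t: "t \<in> S" and x: "x \<in> sep_l2 J" and S': "S' \<subseteq> S"
  shows "E t (\<lambda>i. \<Sum>s\<in>S'. a s * E s x i) = (\<lambda>i. if t \<in> S' then a t * E t x i else 0)"
proof -
  have fin: "finite S'" using finS S' finite_subset by blast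
  have "E t (\<lambda>i. \<Sum>s\<in>S'. a s * E s x i) = (\<lambda>i. \<Sum>s\<in>S'. E t (\<lambda>i. a s * E s x i) i)"
    by (rule bop_sum[OF bopE[OF t] fin]) (use S' x in \<open>auto intro!: l2_scale El2\<close>)
  also have "\<dots> = (\<lambda>i. \<Sum>s\<in>S'. a s * (if t = s then E s x i else 0))"
    using S' x by (intro ext sum.cong refl) (auto simp: bop_scale[OF bopE[OF t]] El2 orth[OF t])
  also have "\<dots> = (\<lambda>i. if t \<in> S' then a t * E t x i else 0)"
    using fin by (auto simp: if_distrib cong: if_cong)
  finally show ?thesis .
qed

lemma E_idem: "t \<in> S \<Longrightarrow> x \<in> sep_l2 J \<Longrightarrow> E t (E t x) = E t x"
  using orth by simp

lemma E_out: "s \<in> S \<Longrightarrow> x \<notin> sep_l2 J \<Longrightarrow> E s x = (\<lambda>_. 0)"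
  using bopE bop_out by blast

definition nz :: "'s set" where "nz = {s \<in> S. \<exists>x\<in>sep_l2 J. E s x \<noteq> (\<lambda>_. 0)}"

lemma nz_sub: "nz \<subseteq> S" by (auto simp: nz_def)

lemma zero_E: "s \<in> S \<Longrightarrow> s \<notin> nz \<Longrightarrow> x \<in> sep_l2 J \<Longrightarrow> E s x = (\<lambda>_. 0)"
  by (auto simp: nz_def)

lemma sum_nz: "x \<in> sep_l2 J \<Longrightarrow> (\<lambda>i. \<Sum>s\<in>S'. f s * E s x i) = (\<lambda>i. \<Sum>s\<in>S' \<inter> nz. f s * E s x i)"
  if "S' \<subseteq> S" for S'
proof -
  assume x: "x \<in> sep_l2 J"
  have fin: "finite S'" using finS that finite_subset by blast
  show ?thesis
  proof (rule ext, rule sum.mono_neutral_right)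
    fix i show "\<forall>s\<in>S' - S' \<inter> nz. f s * E s x i = 0"
    proof
      fix s assume s: "s \<in> S' - S' \<inter> nz"
      hence "E s x = (\<lambda>_. 0)" using that x by (intro zero_E) auto
      thus "f s * E s x i = 0" by simp
    qed
  qed (use fin in auto)
qed

context
  fixes T :: "('j \<Rightarrow> complex) \<Rightarrow> ('j \<Rightarrow> complex)" and c :: "'s \<Rightarrow> complex"
  assumes Tdef: "\<And>x. x \<in> sep_l2 J \<Longrightarrow> T x = (\<lambda>i. \<Sum>s\<in>S. c s * E s x i)"
begin

lemma T_l2: "x \<in> sep_l2 J \<Longrightarrow> T x \<in> sep_l2 J"
  unfolding Tdef by (rule comb_l2) auto

lemma T_diff:
  assumes x: "x \<in> sep_l2 J" and y: "y \<in> sep_l2 J"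
  shows "T (\<lambda>i. x i - y i) = (\<lambda>i. T x i - T y i)"
proof -
  have d: "(\<lambda>i. x i - y i) \<in> sep_l2 J" using x y by blast
  have "T (\<lambda>i. x i - y i) = (\<lambda>i. \<Sum>s\<in>S. c s * E s (\<lambda>i. x i - y i) i)" by (rule Tdef[OF d])
  also have "\<dots> = (\<lambda>i. \<Sum>s\<in>S. c s * E s x i - c s * E s y i)"
  proof (intro ext sum.cong refl)
    fix i s assume s: "s \<in> S"
    show "c s * E s (\<lambda>i. x i - y i) i = c s * E s x i - c s * E s y i"
      using bop_diff[OF bopE[OF s] x y] by (simp add: algebra_simps)
  qed
  also have "\<dots> = (\<lambda>i. T x i - T y i)" using Tdef[OF x] Tdef[OF y] by (simp add: sum_subtractf)
  finally show ?thesis .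
qed

lemma T_shift: "x \<in> sep_l2 J \<Longrightarrow> (\<lambda>i. T x i - a * x i) = (\<lambda>i. \<Sum>s\<in>S. (c s - a) * E s x i)"
proof -
  assume x: "x \<in> sep_l2 J"
  have "(\<lambda>i. T x i - a * x i) = (\<lambda>i. (\<Sum>s\<in>S. c s * E s x i) - a * (\<Sum>s\<in>S. E s x i))"
    using sum1[OF x] Tdef[OF x] by (simp add: fun_eq_iff)
  thus ?thesis by (simp add: sum_distrib_left left_diff_distrib sum_subtractf)
qed

lemma spectrum_eq: "sep_spectrum J T = c ` nz"
proof (intro set_eqI iffI)
  fix a assume a: "a \<in> sep_spectrum J T"
  show "a \<in> c ` nz"
  proof (rule ccontr)
    assume na: "a \<notin> c ` nz"
    define f where "f = (\<lambda>x i. T x i - a * x i)"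
    have f: "f x = (\<lambda>i. \<Sum>s\<in>nz. (c s - a) * E s x i)" if "x \<in> sep_l2 J" for x
      using T_shift[OF that] sum_nz[OF subset_refl that] nz_sub by (simp add: f_def Int_absorb1)
    have Ef: "E t (f x) = (\<lambda>i. if t \<in> nz then (c t - a) * E t x i else 0)" if "t \<in> S" "x \<in> sep_l2 J" for t x
      unfolding f[OF that(2)] by (rule E_comb[OF that nz_sub])
    have fl2: "f x \<in> sep_l2 J" if "x \<in> sep_l2 J" for x
      unfolding f[OF that] by (rule comb_l2[OF nz_sub that])
    have inj: "inj_on f (sep_l2 J)"
    proof (rule inj_onI)
      fix x y assume x: "x \<in> sep_l2 J" and y: "y \<in> sep_l2 J" and eq: "f x = f y"
      have d: "(\<lambda>i. x i - y i) \<in> sep_l2 J" using x y by blast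
      have fd: "f (\<lambda>i. x i - y i) = (\<lambda>i. f x i - f y i)"
        unfolding f_def T_diff[OF x y] by (simp add: algebra_simps)
      have "E t (\<lambda>i. x i - y i) = (\<lambda>_. 0)" if t: "t \<in> S" for t
      proof (cases "t \<in> nz")
        case True
        have "(\<lambda>i. (c t - a) * E t (\<lambda>i. x i - y i) i) = E t (f (\<lambda>i. x i - y i))"
          using Ef[OF t d] True by simp
        also have "\<dots> = (\<lambda>_. 0)" using fd eq bop_zero[OF bopE[OF t]] by simp
        finally have "(\<lambda>i. (c t - a) * E t (\<lambda>i. x i - y i) i) = (\<lambda>_. 0)" .
        moreover have "c t - a \<noteq> 0" using True na by auto
        ultimately show ?thesis by (simp add: fun_eq_iff)
      qed (use zero_E t d in auto)
      hence "(\<lambda>i. x i - y i) = (\<lambda>_. 0)" using sum1[OF d] by (simp add: fun_eq_iff)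
      thus "x = y" by (simp add: fun_eq_iff)
    qed
    have surj: "f ` sep_l2 J = sep_l2 J"
    proof (intro set_eqI iffI)
      fix y assume "y \<in> f ` sep_l2 J" thus "y \<in> sep_l2 J" using fl2 by auto
    next
      fix y assume y: "y \<in> sep_l2 J"
      define x where "x = (\<lambda>i. \<Sum>s\<in>nz. (1 / (c s - a)) * E s y i)"
      have x: "x \<in> sep_l2 J" unfolding x_def by (rule comb_l2[OF nz_sub y])
      have Ex: "E s x = (\<lambda>i. (1 / (c s - a)) * E s y i)" if s: "s \<in> nz" for s
        unfolding x_def using E_comb[OF _ y nz_sub, of s "\<lambda>s. 1 / (c s - a)"] s nz_sub by auto
      have "f x = (\<lambda>i. \<Sum>s\<in>nz. (c s - a) * E s x i)" by (rule f[OF x])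
      also have "\<dots> = (\<lambda>i. \<Sum>s\<in>nz. (c s - a) * ((1 / (c s - a)) * E s y i))"
        by (intro ext sum.cong refl) (simp add: Ex)
      also have "\<dots> = (\<lambda>i. \<Sum>s\<in>nz. 1 * E s y i)"
      proof (intro ext sum.cong refl)
        fix i s assume "s \<in> nz"
        hence "c s - a \<noteq> 0" using na by auto
        thus "(c s - a) * ((1 / (c s - a)) * E s y i) = 1 * E s y i" by simp
      qed
      also have "\<dots> = (\<lambda>i. \<Sum>s\<in>S. 1 * E s y i)"
        using sum_nz[OF subset_refl y, of "\<lambda>_. 1"] nz_sub by (simp add: Int_absorb1)
      also have "\<dots> = y" using sum1[OF y] by simp
      finally show "y \<in> f ` sep_l2 J" using x by (metis image_eqI)
    qed
    have "bij_betw f (sep_l2 J) (sep_l2 J)" using inj surj by (simp add: bij_betw_def)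
    thus False using a by (simp add: sep_spectrum_def f_def)
  qed
next
  fix a assume "a \<in> c ` nz"
  then obtain s x where s: "s \<in> S" "a = c s" and x: "x \<in> sep_l2 J" and nzx: "E s x \<noteq> (\<lambda>_. 0)"
    by (auto simp: nz_def)
  define u where "u = E s x"
  have u: "u \<in> sep_l2 J" using El2 s x by (simp add: u_def)
  have "(\<lambda>i. T u i - a * u i) = (\<lambda>i. \<Sum>t\<in>S. (c t - a) * E t u i)" by (rule T_shift[OF u])
  also have "\<dots> = (\<lambda>i. \<Sum>t\<in>S. (c t - a) * (if t = s then u i else 0))"
    unfolding u_def using s x by (intro ext sum.cong refl) (auto simp: orth)
  also have "\<dots> = (\<lambda>_. 0)" using s finS by (simp add: if_distrib cong: if_cong)
  finally have Tu: "(\<lambda>i. T u i - a * u i) = (\<lambda>_. 0)" .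
  have T0: "(\<lambda>i. T (\<lambda>_. 0) i - a * 0) = (\<lambda>_. 0)" using Tdef[OF l2_zero] bop_zero[OF bopE] by simp
  show "a \<in> sep_spectrum J T"
  proof (rule ccontr)
    assume "a \<notin> sep_spectrum J T"
    hence "bij_betw (\<lambda>x i. T x i - a * x i) (sep_l2 J) (sep_l2 J)" by (simp add: sep_spectrum_def)
    hence inj: "inj_on (\<lambda>x i. T x i - a * x i) (sep_l2 J)" by (simp add: bij_betw_def)
    have "(\<lambda>x i. T x i - a * x i) u = (\<lambda>x i. T x i - a * x i) (\<lambda>_. 0)" using Tu T0 by simp
    hence "u = (\<lambda>_. 0)" using inj_onD[OF inj _ u l2_zero] by blast
    thus False using nzx by (simp add: u_def)
  qed
qed

definition Q :: "complex \<Rightarrow> ('j \<Rightarrow> complex) \<Rightarrow> ('j \<Rightarrow> complex)" where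
  "Q a x = (\<lambda>i. \<Sum>s\<in>{s\<in>S. c s = a}. E s x i)"

lemma Q_alt: "Q a x = (\<lambda>i. \<Sum>s\<in>{s\<in>S. c s = a}. 1 * E s x i)"
  by (simp add: Q_def)

lemma Ql2: "x \<in> sep_l2 J \<Longrightarrow> Q a x \<in> sep_l2 J"
  unfolding Q_alt by (rule comb_l2) auto

lemma E_Q: "t \<in> S \<Longrightarrow> x \<in> sep_l2 J \<Longrightarrow> E t (Q a x) = (if c t = a then E t x else (\<lambda>_. 0))"
  unfolding Q_alt by (subst E_comb) auto

lemma Q_diff:
  assumes x: "x \<in> sep_l2 J" and y: "y \<in> sep_l2 J"
  shows "Q a (\<lambda>i. x i - y i) = (\<lambda>i. Q a x i - Q a y i)"
proof -
  have "Q a (\<lambda>i. x i - y i) = (\<lambda>i. \<Sum>s\<in>{s\<in>S. c s = a}. E s x i - E s y i)"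
    unfolding Q_def
  proof (intro ext sum.cong refl)
    fix i s assume s: "s \<in> {s\<in>S. c s = a}"
    show "E s (\<lambda>i. x i - y i) i = E s x i - E s y i"
      using bop_diff[OF bopE x y] s by simp
  qed
  thus ?thesis by (simp add: Q_def sum_subtractf)
qed

lemma T_Q: "x \<in> sep_l2 J \<Longrightarrow> T (Q a x) = (\<lambda>i. a * Q a x i)"
proof -
  assume x: "x \<in> sep_l2 J"
  have "T (Q a x) = (\<lambda>i. \<Sum>s\<in>S. c s * E s (Q a x) i)" by (rule Tdef[OF Ql2[OF x]])
  also have "\<dots> = (\<lambda>i. \<Sum>s\<in>S. if c s = a then a * E s x i else 0)"
    using x by (intro ext sum.cong refl) (auto simp: E_Q)
  also have "\<dots> = (\<lambda>i. \<Sum>s\<in>{s\<in>S. c s = a}. a * E s x i)"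
    using finS by (intro ext) (rule sum.inter_filter[symmetric])
  also have "\<dots> = (\<lambda>i. a * Q a x i)"
    unfolding Q_def by (simp add: sum_distrib_left)
  finally show ?thesis .
qed

lemma eig_Q: "y \<in> sep_eigenspace J T a \<Longrightarrow> Q a y = y"
proof -
  assume "y \<in> sep_eigenspace J T a"
  hence y: "y \<in> sep_l2 J" and Ty: "T y = (\<lambda>i. a * y i)" by (auto simp: sep_eigenspace_def)
  have "E t y = (\<lambda>_. 0)" if t: "t \<in> S" "c t \<noteq> a" for t
  proof -
    have "E t (T y) = (\<lambda>i. c t * E t y i)"
      unfolding Tdef[OF y] by (subst E_comb[OF t(1) y subset_refl]) (use t in simp)
    moreover have "E t (T y) = (\<lambda>i. a * E t y i)" unfolding Ty by (rule bop_scale[OF bopE[OF t(1)] y])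
    ultimately have eq: "(\<lambda>i. c t * E t y i) = (\<lambda>i. a * E t y i)" by simp
    have "E t y i = 0" for i
    proof -
      have "c t * E t y i = a * E t y i" using fun_cong[OF eq, of i] by simp
      hence "(c t - a) * E t y i = 0" by (simp add: algebra_simps)
      thus ?thesis using t(2) by simp
    qed
    thus ?thesis by (simp add: fun_eq_iff)
  qed
  hence "(\<lambda>i. \<Sum>s\<in>S. E s y i) = (\<lambda>i. \<Sum>s\<in>{s\<in>S. c s = a}. E s y i)"
    by (intro ext sum.mono_neutral_right finS) auto
  thus ?thesis using sum1[OF y] by (simp add: Q_def)
qed

lemma Q_sadj: "x \<in> sep_l2 J \<Longrightarrow> y \<in> sep_l2 J \<Longrightarrow> sep_inner J (Q a x) y = sep_inner J x (Q a y)"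
proof -
  assume x: "x \<in> sep_l2 J" and y: "y \<in> sep_l2 J"
  have fin: "finite {s\<in>S. c s = a}" using finS by simp
  have "sep_inner J (Q a x) y = (\<Sum>s\<in>{s\<in>S. c s = a}. sep_inner J (E s x) y)"
    unfolding Q_def using x y fin by (subst l2inner_sum_left) (auto simp: El2)
  also have "\<dots> = (\<Sum>s\<in>{s\<in>S. c s = a}. sep_inner J x (E s y))"
    using x y sadjE by (intro sum.cong refl) (auto simp: sadj_def)
  also have "\<dots> = sep_inner J x (Q a y)"
    unfolding Q_def using x y fin by (subst l2inner_sum_right) (auto simp: El2)
  finally show ?thesis .
qed

lemma proj_eq: "x \<in> sep_l2 J \<Longrightarrow> sep_proj J (sep_eigenspace J T a) x = Q a x"
proof -
  assume x: "x \<in> sep_l2 J"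
  let ?M = "sep_eigenspace J T a"
  have QM: "Q a x \<in> ?M" using Ql2[OF x] T_Q[OF x] by (simp add: sep_eigenspace_def)
  have QQ: "Q a (Q a x) = Q a x" using eig_Q[OF QM] .
  have orthQ: "sep_inner J y (\<lambda>i. x i - Q a x i) = 0" if y: "y \<in> ?M" for y
  proof -
    have yl: "y \<in> sep_l2 J" using y by (simp add: sep_eigenspace_def)
    have "sep_inner J y (\<lambda>i. x i - Q a x i) = sep_inner J (Q a y) (\<lambda>i. x i - Q a x i)"
      using eig_Q[OF y] by simp
    also have "\<dots> = sep_inner J y (Q a (\<lambda>i. x i - Q a x i))"
      using yl x Ql2 by (intro Q_sadj) auto
    also have "Q a (\<lambda>i. x i - Q a x i) = (\<lambda>i. Q a x i - Q a (Q a x) i)"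
      by (rule Q_diff[OF x Ql2[OF x]])
    finally show ?thesis using QQ by simp
  qed
  have "(THE m. m \<in> ?M \<and> (\<forall>y\<in>?M. sep_inner J y (\<lambda>i. x i - m i) = 0)) = Q a x"
  proof (rule the_equality)
    show "Q a x \<in> ?M \<and> (\<forall>y\<in>?M. sep_inner J y (\<lambda>i. x i - Q a x i) = 0)" using QM orthQ by blast
  next
    fix m assume m: "m \<in> ?M \<and> (\<forall>y\<in>?M. sep_inner J y (\<lambda>i. x i - m i) = 0)"
    have ml: "m \<in> sep_l2 J" using m by (simp add: sep_eigenspace_def)
    have Ql: "Q a x \<in> sep_l2 J" using Ql2[OF x] .
    define d where "d = (\<lambda>i. m i - Q a x i)"
    have dl: "d \<in> sep_l2 J" using ml Ql by (simp add: d_def l2_diff)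
    have dM: "d \<in> ?M"
    proof -
      have "T d = (\<lambda>i. T m i - T (Q a x) i)"
        unfolding d_def by (rule T_diff[OF ml Ql])
      also have "\<dots> = (\<lambda>i. a * d i)" using m T_Q[OF x] by (simp add: sep_eigenspace_def d_def algebra_simps)
      finally show ?thesis using dl by (simp add: sep_eigenspace_def)
    qed
    have e1: "sep_inner J d (\<lambda>i. x i - m i) = 0" using m dM by blast
    have e2: "sep_inner J d (\<lambda>i. x i - Q a x i) = 0" using orthQ dM by blast
    have "sep_inner J d d = sep_inner J d (\<lambda>i. (x i - Q a x i) - (x i - m i))"
      by (simp add: d_def)
    also have "\<dots> = 0" using e1 e2 dl x ml Ql by (simp add: l2inner_diff_right l2_diff)
    finally have "nsq J d = 0" using l2inner_self[OF dl] by simp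
    hence "d = (\<lambda>_. 0)" using nsq_zero dl by blast
    thus "m = Q a x" by (simp add: d_def fun_eq_iff)
  qed
  thus ?thesis using x by (simp add: sep_proj_def)
qed

lemma abs_powr_eq:
  "sep_abs_powr J p T x = (\<lambda>i. \<Sum>s\<in>S. complex_of_real (cmod (c s) powr p) * E s x i)"
proof (cases "x \<in> sep_l2 J")
  case False
  thus ?thesis by (simp add: sep_abs_powr_def sep_proj_def E_out)
next
  case x: True
  have "sep_abs_powr J p T x = (\<lambda>i. \<Sum>a\<in>c ` nz. complex_of_real (cmod a powr p) * Q a x i)"
    unfolding sep_abs_powr_def spectrum_eq using x by (simp add: proj_eq)
  also have "\<dots> = (\<lambda>i. \<Sum>a\<in>c ` nz. \<Sum>s\<in>{s\<in>nz. c s = a}. complex_of_real (cmod (c s) powr p) * E s x i)"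
  proof (intro ext sum.cong refl)
    fix i a assume a: "a \<in> c ` nz"
    have "Q a x i = (\<Sum>s\<in>{s\<in>S. c s = a}. E s x i)" by (simp add: Q_def)
    also have "\<dots> = (\<Sum>s\<in>{s\<in>nz. c s = a}. E s x i)"
    proof (rule sum.mono_neutral_right)
      show "finite {s\<in>S. c s = a}" using finS by simp
      show "{s\<in>nz. c s = a} \<subseteq> {s\<in>S. c s = a}" using nz_sub by auto
      show "\<forall>s\<in>{s\<in>S. c s = a} - {s\<in>nz. c s = a}. E s x i = 0"
      proof
        fix s assume "s \<in> {s\<in>S. c s = a} - {s\<in>nz. c s = a}"
        hence "E s x = (\<lambda>_. 0)" using x by (intro zero_E) auto
        thus "E s x i = 0" by simp
      qed
    qed
    finally show "complex_of_real (cmod a powr p) * Q a x i =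
      (\<Sum>s\<in>{s\<in>nz. c s = a}. complex_of_real (cmod (c s) powr p) * E s x i)"
      by (simp add: sum_distrib_left)
  qed
  also have "\<dots> = (\<lambda>i. \<Sum>s\<in>nz. complex_of_real (cmod (c s) powr p) * E s x i)"
    using finite_subset[OF nz_sub finS] by (intro ext sum.image_gen[symmetric])
  also have "\<dots> = (\<lambda>i. \<Sum>s\<in>S. complex_of_real (cmod (c s) powr p) * E s x i)"
    using sum_nz[OF subset_refl x, of "\<lambda>s. complex_of_real (cmod (c s) powr p)"] nz_sub
    by (simp add: Int_absorb1)
  finally show ?thesis .
qed

end
end


lemma pow_l2: "sep_bounded_op J A \<Longrightarrow> x \<in> sep_l2 J \<Longrightarrow> (A ^^ k) x \<in> sep_l2 J"
  by (induction k) (auto simp: bop_l2)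

definition opeval :: "'j set \<Rightarrow> complex poly \<Rightarrow> (('j \<Rightarrow> complex) \<Rightarrow> ('j \<Rightarrow> complex)) \<Rightarrow> ('j \<Rightarrow> complex) \<Rightarrow> ('j \<Rightarrow> complex)" where
  "opeval J p A x = (if x \<in> sep_l2 J then (\<lambda>i. \<Sum>k\<le>degree p. coeff p k * (A ^^ k) x i) else (\<lambda>_. 0))"

context
  fixes J :: "'j set" and A :: "('j \<Rightarrow> complex) \<Rightarrow> ('j \<Rightarrow> complex)"
  assumes A: "sep_bounded_op J A"
begin

lemma opeval_upto:
  assumes x: "x \<in> sep_l2 J" and n: "degree p \<le> n"
  shows "opeval J p A x = (\<lambda>i. \<Sum>k\<le>n. coeff p k * (A ^^ k) x i)"
proof -
  have "(\<Sum>k\<le>degree p. coeff p k * (A ^^ k) x i) = (\<Sum>k\<le>n. coeff p k * (A ^^ k) x i)" for i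
    by (rule sum.mono_neutral_left) (use n in \<open>auto simp: coeff_eq_0\<close>)
  thus ?thesis using x by (simp add: opeval_def)
qed

lemma opeval_l2: "x \<in> sep_l2 J \<Longrightarrow> opeval J p A x \<in> sep_l2 J"
  unfolding opeval_def by (auto intro!: l2_sum l2_scale pow_l2[OF A])

lemma opeval_out: "x \<notin> sep_l2 J \<Longrightarrow> opeval J p A x = (\<lambda>_. 0)"
  by (simp add: opeval_def)

lemma opeval_pCons:
  assumes x: "x \<in> sep_l2 J"
  shows "opeval J (pCons a p) A x = (\<lambda>i. a * x i + A (opeval J p A x) i)"
proof -
  have "opeval J (pCons a p) A x = (\<lambda>i. \<Sum>k\<le>Suc (degree p). coeff (pCons a p) k * (A ^^ k) x i)"
    by (rule opeval_upto[OF x degree_pCons_le])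
  also have "\<dots> = (\<lambda>i. a * x i + (\<Sum>k\<le>degree p. coeff p k * (A ((A ^^ k) x)) i))"
    by (subst sum.atMost_Suc_shift) simp
  also have "(\<lambda>i. \<Sum>k\<le>degree p. coeff p k * (A ((A ^^ k) x)) i) = A (opeval J p A x)"
  proof -
    have "A (opeval J p A x) = (\<lambda>i. \<Sum>k\<le>degree p. A (\<lambda>i. coeff p k * (A ^^ k) x i) i)"
      unfolding opeval_def using x by (simp add: bop_sum[OF A] l2_scale pow_l2[OF A])
    also have "\<dots> = (\<lambda>i. \<Sum>k\<le>degree p. coeff p k * (A ((A ^^ k) x)) i)"
      using x by (simp add: bop_scale[OF A] pow_l2[OF A])
    finally show ?thesis by simp
  qed
  finally show ?thesis .
qed

lemma opeval_zero[simp]: "opeval J 0 A x = (\<lambda>_. 0)"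
  by (simp add: opeval_def)

lemma opeval_const: "x \<in> sep_l2 J \<Longrightarrow> opeval J [:c:] A x = (\<lambda>i. c * x i)"
  using opeval_pCons[of x c 0] by (simp add: bop_zero[OF A])

lemma opeval_one: "x \<in> sep_l2 J \<Longrightarrow> opeval J 1 A x = x"
  using opeval_const[of x 1] by (simp add: one_pCons)

lemma opeval_X: "x \<in> sep_l2 J \<Longrightarrow> opeval J [:0, 1:] A x = A x"
  using opeval_pCons[of x 0 "[:1:]"] opeval_const[of x 1] by simp

lemma opeval_lin1: "x \<in> sep_l2 J \<Longrightarrow> y \<in> sep_l2 J \<Longrightarrow>
  opeval J p A (\<lambda>i. a * x i + b * y i) = (\<lambda>i. a * opeval J p A x i + b * opeval J p A y i)"
proof (induction p)
  case 0 thus ?case by simp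
next
  case (pCons c p)
  have xy: "(\<lambda>i. a * x i + b * y i) \<in> sep_l2 J" using pCons by blast
  show ?case using pCons
    by (simp add: opeval_pCons xy bop_lin[OF A] opeval_l2 algebra_simps)
qed

lemma opeval_lin:
  "x \<in> sep_l2 J \<Longrightarrow> y \<in> sep_l2 J \<Longrightarrow>
   opeval J p A (\<lambda>i. a * x i + b * y i) = (\<lambda>i. a * opeval J p A x i + b * opeval J p A y i)"
  by (rule opeval_lin1)

lemma opeval_add: "x \<in> sep_l2 J \<Longrightarrow> opeval J (p + q) A x = (\<lambda>i. opeval J p A x i + opeval J q A x i)"
proof -
  assume x: "x \<in> sep_l2 J"
  let ?n = "max (degree p) (degree q)"
  have "opeval J (p + q) A x = (\<lambda>i. \<Sum>k\<le>?n. coeff (p + q) k * (A ^^ k) x i)"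
    by (rule opeval_upto[OF x]) (simp add: degree_add_le)
  also have "\<dots> = (\<lambda>i. (\<Sum>k\<le>?n. coeff p k * (A ^^ k) x i) + (\<Sum>k\<le>?n. coeff q k * (A ^^ k) x i))"
    by (simp add: distrib_right sum.distrib)
  also have "\<dots> = (\<lambda>i. opeval J p A x i + opeval J q A x i)"
    using opeval_upto[OF x, of p ?n] opeval_upto[OF x, of q ?n] by simp
  finally show ?thesis .
qed

lemma opeval_smult: "x \<in> sep_l2 J \<Longrightarrow> opeval J (smult c p) A x = (\<lambda>i. c * opeval J p A x i)"
proof -
  assume x: "x \<in> sep_l2 J"
  have "opeval J (smult c p) A x = (\<lambda>i. \<Sum>k\<le>degree p. coeff (smult c p) k * (A ^^ k) x i)"
    by (rule opeval_upto[OF x]) (simp add: degree_smult_le)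
  thus ?thesis using x by (simp add: opeval_def sum_distrib_left mult.assoc)
qed

lemma opeval_mult: "x \<in> sep_l2 J \<Longrightarrow> opeval J (p * q) A x = opeval J p A (opeval J q A x)"
proof (induction p)
  case 0 thus ?case by simp
next
  case (pCons a p)
  have ql: "opeval J q A x \<in> sep_l2 J" using opeval_l2 pCons by blast
  have "opeval J (pCons a p * q) A x = opeval J (smult a q + pCons 0 (p * q)) A x" by simp
  also have "\<dots> = (\<lambda>i. a * opeval J q A x i + A (opeval J (p * q) A x) i)"
    using pCons by (simp add: opeval_add opeval_smult opeval_pCons)
  also have "\<dots> = opeval J (pCons a p) A (opeval J q A x)"
    using pCons ql by (simp add: opeval_pCons)
  finally show ?case .
qed

lemma opeval_comm: "x \<in> sep_l2 J \<Longrightarrow> opeval J p A (opeval J q A x) = opeval J q A (opeval J p A x)"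
  using opeval_mult[of x p q] opeval_mult[of x q p] by (simp add: mult.commute)

lemma opeval_A_comm: "x \<in> sep_l2 J \<Longrightarrow> A (opeval J p A x) = opeval J p A (A x)"
  using opeval_comm[of x "[:0,1:]" p] opeval_X opeval_l2 bop_l2[OF A] by simp

lemma opeval_bound: "\<exists>C. \<forall>x\<in>sep_l2 J. sep_norm J (opeval J p A x) \<le> C * sep_norm J x"
proof (induction p)
  case 0 thus ?case by (auto intro!: exI[of _ 0])
next
  case (pCons a p)
  then obtain C where C: "\<And>x. x \<in> sep_l2 J \<Longrightarrow> sep_norm J (opeval J p A x) \<le> C * sep_norm J x" by blast
  obtain c where c: "c \<ge> 0" "\<And>x. x \<in> sep_l2 J \<Longrightarrow> sep_norm J (A x) \<le> c * sep_norm J x"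
    using bop_bound[OF A] by blast
  have "sep_norm J (opeval J (pCons a p) A x) \<le> (cmod a + c * C) * sep_norm J x" if x: "x \<in> sep_l2 J" for x
  proof -
    have pl: "opeval J p A x \<in> sep_l2 J" using opeval_l2 x by blast
    have "sep_norm J (opeval J (pCons a p) A x) = sep_norm J (\<lambda>i. a * x i + A (opeval J p A x) i)"
      using opeval_pCons[OF x] by simp
    also have "\<dots> \<le> sep_norm J (\<lambda>i. a * x i) + sep_norm J (A (opeval J p A x))"
      using x pl by (intro l2norm_triangle) (auto intro: bop_l2[OF A])
    also have "\<dots> \<le> cmod a * sep_norm J x + c * (C * sep_norm J x)"
      using c(2)[OF pl] C[OF x] c(1) by (simp add: l2norm_scale) (meson mult_left_mono order_trans)
    finally show ?thesis by (simp add: algebra_simps)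
  qed
  thus ?case by blast
qed

lemma opeval_bop: "sep_bounded_op J (opeval J p A)"
proof -
  obtain C where C: "\<And>x. x \<in> sep_l2 J \<Longrightarrow> sep_norm J (opeval J p A x) \<le> C * sep_norm J x"
    using opeval_bound by blast
  show ?thesis
    by (rule bopI[where c=C]) (auto simp: opeval_l2 opeval_lin opeval_out C)
qed

lemma opeval_adj:
  assumes sa: "sadj J A"
  shows "x \<in> sep_l2 J \<Longrightarrow> y \<in> sep_l2 J \<Longrightarrow> sep_inner J (opeval J p A x) y = sep_inner J x (opeval J (map_poly cnj p) A y)"
proof (induction p arbitrary: x y)
  case 0 thus ?case by simp
next
  case (pCons a p)
  have pl: "opeval J p A x \<in> sep_l2 J" using opeval_l2 pCons by blast
  have ptl: "opeval J (map_poly cnj p) A y \<in> sep_l2 J" using opeval_l2 pCons by blast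
  have Ay: "A y \<in> sep_l2 J" using bop_l2[OF A] pCons by blast
  have "sep_inner J (opeval J (pCons a p) A x) y = sep_inner J (\<lambda>i. a * x i + 1 * A (opeval J p A x) i) y"
    using pCons by (simp add: opeval_pCons)
  also have "\<dots> = cnj a * sep_inner J x y + sep_inner J (A (opeval J p A x)) y"
    using pCons pl by (subst l2inner_lin_left) (auto intro: bop_l2[OF A])
  also have "sep_inner J (A (opeval J p A x)) y = sep_inner J (opeval J p A x) (A y)"
    using sadjD[OF sa pl] pCons by simp
  also have "\<dots> = sep_inner J x (opeval J (map_poly cnj p) A (A y))"
    using pCons.IH[OF pCons.prems(1) Ay] .
  also have "opeval J (map_poly cnj p) A (A y) = A (opeval J (map_poly cnj p) A y)"
    using opeval_A_comm pCons by simp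
  also have "cnj a * sep_inner J x y + sep_inner J x (A (opeval J (map_poly cnj p) A y)) =
      sep_inner J x (\<lambda>i. cnj a * y i + 1 * A (opeval J (map_poly cnj p) A y) i)"
    using pCons ptl by (subst l2inner_lin_right) (auto intro: bop_l2[OF A])
  also have "\<dots> = sep_inner J x (opeval J (map_poly cnj (pCons a p)) A y)"
    using pCons by (simp add: map_poly_pCons opeval_pCons)
  finally show ?case .
qed

end


context
  fixes J :: "'j set" and A :: "('j \<Rightarrow> complex) \<Rightarrow> ('j \<Rightarrow> complex)"
  assumes A: "sep_bounded_op J A"
begin

abbreviation "bijl2 p \<equiv> bij_betw (opeval J p A) (sep_l2 J) (sep_l2 J)"

lemma bij_mult: "bijl2 p \<Longrightarrow> bijl2 q \<Longrightarrow> bijl2 (p * q)"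
proof -
  assume p: "bijl2 p" and q: "bijl2 q"
  have b: "bij_betw (opeval J p A \<circ> opeval J q A) (sep_l2 J) (sep_l2 J)"
    by (rule bij_betw_trans[OF q p])
  have "bij_betw (opeval J p A \<circ> opeval J q A) (sep_l2 J) (sep_l2 J) = bijl2 (p * q)"
    by (rule bij_betw_cong) (simp add: opeval_mult[OF A])
  thus ?thesis using b by simp
qed

lemma bij_one: "bijl2 1"
proof -
  have "bij_betw id (sep_l2 J) (sep_l2 J) = bijl2 1"
    by (rule bij_betw_cong) (simp add: opeval_one[OF A])
  thus ?thesis by simp
qed

lemma bij_power: "bijl2 p \<Longrightarrow> bijl2 (p ^ n)"
  by (induction n) (auto simp: bij_one bij_mult)

lemma bij_prod: "finite Z \<Longrightarrow> (\<And>z. z \<in> Z \<Longrightarrow> bijl2 (g z)) \<Longrightarrow> bijl2 (\<Prod>z\<in>Z. g z)"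
  by (induction Z rule: finite_induct) (auto simp: bij_one bij_mult)

lemma bij_const: "c \<noteq> 0 \<Longrightarrow> bijl2 [:c:]"
proof -
  assume c: "c \<noteq> 0"
  have b: "bij_betw (\<lambda>x i. c * x i) (sep_l2 J) (sep_l2 J)"
  proof (rule bij_betwI[where g="\<lambda>x i. (1/c) * x i"])
    show "(\<lambda>x i. c * x i) \<in> sep_l2 J \<rightarrow> sep_l2 J" by auto
    show "(\<lambda>x i. 1 / c * x i) \<in> sep_l2 J \<rightarrow> sep_l2 J" by (intro Pi_I l2_scale)
  qed (use c in auto)
  have "bij_betw (\<lambda>x i. c * x i) (sep_l2 J) (sep_l2 J) = bijl2 [:c:]"
    by (rule bij_betw_cong) (simp add: opeval_const[OF A])
  thus ?thesis using b by simp
qed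

lemma opeval_linfac: "x \<in> sep_l2 J \<Longrightarrow> opeval J [:-z, 1:] A x = (\<lambda>i. A x i - z * x i)"
  using opeval_pCons[OF A, of x "-z" "[:1:]"] opeval_const[OF A, of x 1] by simp

lemma bij_linfac: "z \<notin> sep_spectrum J A \<Longrightarrow> bijl2 [:-z, 1:]"
proof -
  assume "z \<notin> sep_spectrum J A"
  hence b: "bij_betw (\<lambda>x i. A x i - z * x i) (sep_l2 J) (sep_l2 J)" by (simp add: sep_spectrum_def)
  have "bij_betw (\<lambda>x i. A x i - z * x i) (sep_l2 J) (sep_l2 J) = bijl2 [:-z, 1:]"
    by (rule bij_betw_cong) (simp add: opeval_linfac)
  thus ?thesis using b by simp
qed

lemma bij_poly:
  assumes f: "f \<noteq> 0" and roots: "\<And>z. poly f z = 0 \<Longrightarrow> z \<notin> sep_spectrum J A"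
  shows "bijl2 f"
proof -
  have fin: "finite {z. poly f z = 0}" by (rule poly_roots_finite[OF f])
  have lc: "lead_coeff f \<noteq> 0" using f by simp
  have "bijl2 ([:lead_coeff f:] * (\<Prod>z|poly f z = 0. [:-z, 1:] ^ order z f))"
    by (intro bij_mult bij_const[OF lc] bij_prod[OF fin] bij_power bij_linfac roots) simp
  moreover have "[:lead_coeff f:] * (\<Prod>z|poly f z = 0. [:-z, 1:] ^ order z f) = f"
    using complex_poly_decompose[of f] by simp
  ultimately show ?thesis by simp
qed

end


lemma map_poly_cnj_cnj: "map_poly cnj (map_poly cnj (p :: complex poly)) = p"
  by (intro poly_eqI) (simp add: coeff_map_poly)

lemma qzero:
  fixes J :: "'j set" and A :: "('j \<Rightarrow> complex) \<Rightarrow> ('j \<Rightarrow> complex)"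
  assumes A: "sep_bounded_op J A" and sa: "sadj J A" and S: "finite S" "S \<noteq> {}"
    and sub: "sep_spectrum J A \<subseteq> S"
  shows "\<forall>x\<in>sep_l2 J. opeval J (\<Prod>l\<in>S. [:-l, 1:]) A x = (\<lambda>_. 0)"
proof (rule ccontr)
  define q where "q = (\<Prod>l\<in>S. [:-l, 1:])"
  define qt where "qt = map_poly cnj q"
  define D where "D = opeval J q A"
  define Dt where "Dt = opeval J qt A"
  assume "\<not> (\<forall>x\<in>sep_l2 J. opeval J (\<Prod>l\<in>S. [:-l, 1:]) A x = (\<lambda>_. 0))"
  then obtain x0 where x0: "x0 \<in> sep_l2 J" "D x0 \<noteq> (\<lambda>_. 0)" by (auto simp: D_def q_def)
  have Dl2: "w \<in> sep_l2 J \<Longrightarrow> D w \<in> sep_l2 J" for w unfolding D_def by (rule opeval_l2[OF A])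
  have Dtl2: "w \<in> sep_l2 J \<Longrightarrow> Dt w \<in> sep_l2 J" for w unfolding Dt_def by (rule opeval_l2[OF A])
  have Dbop: "sep_bounded_op J D" unfolding D_def by (rule opeval_bop[OF A])
  have qtt: "map_poly cnj qt = q" by (simp add: qt_def map_poly_cnj_cnj)
  have adjD: "sep_inner J (D u) v = sep_inner J u (Dt v)" if "u \<in> sep_l2 J" "v \<in> sep_l2 J" for u v
    unfolding D_def Dt_def qt_def by (rule opeval_adj[OF A sa that])
  have adjDt: "sep_inner J (Dt u) v = sep_inner J u (D v)" if "u \<in> sep_l2 J" "v \<in> sep_l2 J" for u v
    unfolding D_def Dt_def using opeval_adj[OF A sa that, of qt] qtt by simp
  have comm: "D (Dt w) = Dt (D w)" if "w \<in> sep_l2 J" for w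
    unfolding D_def Dt_def by (rule opeval_comm[OF A that])
  have nsqDt: "nsq J (Dt w) = nsq J (D w)" if w: "w \<in> sep_l2 J" for w
  proof -
    have "complex_of_real (nsq J (Dt w)) = sep_inner J (Dt w) (Dt w)" using l2inner_self[OF Dtl2[OF w]] by simp
    also have "\<dots> = sep_inner J w (D (Dt w))" using adjDt[OF w Dtl2[OF w]] .
    also have "\<dots> = sep_inner J w (Dt (D w))" using comm[OF w] by simp
    also have "\<dots> = cnj (sep_inner J (Dt (D w)) w)" using l2inner_commute by metis
    also have "sep_inner J (Dt (D w)) w = sep_inner J (D w) (D w)" using adjDt[OF Dl2[OF w] w] .
    also have "\<dots> = complex_of_real (nsq J (D w))" using l2inner_self[OF Dl2[OF w]] by simp
    finally show ?thesis by simp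
  qed
  have polyq: "poly q l = 0" if "l \<in> S" for l
    unfolding q_def poly_prod using S that by (auto intro!: prod_zero)
  define N where "N = {(sep_norm J (D x))^2 | x. x \<in> sep_l2 J \<and> sep_norm J x = 1}"
  obtain cD where cD: "cD \<ge> 0" "\<And>x. x \<in> sep_l2 J \<Longrightarrow> sep_norm J (D x) \<le> cD * sep_norm J x"
    using bop_bound[OF Dbop] by blast
  have bdd: "bdd_above N"
  proof (rule bdd_aboveI[of _ "cD^2"])
    fix y assume "y \<in> N"
    then obtain x where x: "x \<in> sep_l2 J" "sep_norm J x = 1" "y = (sep_norm J (D x))^2"
      by (auto simp: N_def)
    have "sep_norm J (D x) \<le> cD" using cD(2)[OF x(1)] x(2) by simp
    thus "y \<le> cD^2" using x(3) by (simp add: power_mono sep_norm_nonneg)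
  qed
  have normalize: "sep_norm J (\<lambda>i. complex_of_real (1 / sep_norm J w) * w i) = 1"
    if "w \<in> sep_l2 J" "w \<noteq> (\<lambda>_. 0)" for w
  proof -
    have "sep_norm J w \<noteq> 0" using that norm_zero_l2 by blast
    hence "sep_norm J w > 0" using sep_norm_nonneg[of J w] by linarith
    thus ?thesis by (simp only: l2norm_scale) (simp add: norm_divide)
  qed
  have Dscale: "D (\<lambda>i. complex_of_real a * w i) = (\<lambda>i. complex_of_real a * D w i)" if "w \<in> sep_l2 J" for w a
    by (rule bop_scale[OF Dbop that])
  have x0n: "x0 \<noteq> (\<lambda>_. 0)" using x0 bop_zero[OF Dbop] by auto
  define u0 where "u0 = (\<lambda>i. complex_of_real (1 / sep_norm J x0) * x0 i)"
  have u0: "u0 \<in> sep_l2 J" "sep_norm J u0 = 1"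
    unfolding u0_def by (rule l2_scale[OF x0(1)]) (rule normalize[OF x0(1) x0n])
  have Nne: "N \<noteq> {}" using u0 by (auto simp: N_def)
  define M where "M = Sup N"
  have Dle: "nsq J (D w) \<le> M * nsq J w" if w: "w \<in> sep_l2 J" for w
  proof (cases "w = (\<lambda>_. 0)")
    case True thus ?thesis using bop_zero[OF Dbop] by simp
  next
    case False
    define n where "n = sep_norm J w"
    have n: "n > 0" using False norm_zero_l2[OF w] sep_norm_nonneg[of J w] by (auto simp: n_def order_le_less)
    define u where "u = (\<lambda>i. complex_of_real (1 / n) * w i)"
    have u: "u \<in> sep_l2 J" "sep_norm J u = 1"
      unfolding u_def n_def by (rule l2_scale[OF w]) (rule normalize[OF w False])
    have "(sep_norm J (D u))^2 \<in> N" using u by (auto simp: N_def)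
    hence le: "(sep_norm J (D u))^2 \<le> M" unfolding M_def using bdd by (rule cSup_upper)
    have "sep_norm J (D u) = sep_norm J (D w) / n"
      unfolding u_def Dscale[OF w] by (simp only: l2norm_scale) (use n in \<open>simp add: norm_divide\<close>)
    hence "sep_norm J (D w) = n * sep_norm J (D u)" using n by simp
    hence "(sep_norm J (D w))^2 = n^2 * (sep_norm J (D u))^2" by (simp add: power_mult_distrib)
    also have "\<dots> \<le> n^2 * M" using le by (intro mult_left_mono) auto
    finally have "(sep_norm J (D w))^2 \<le> M * n^2" by (simp add: mult.commute)
    thus ?thesis by (simp add: nsq_norm n_def)
  qed
  have Mpos: "M > 0"
  proof -
    have "D u0 \<noteq> (\<lambda>_. 0)"
      using x0 Dscale[OF x0(1), of "1 / sep_norm J x0"] x0n norm_zero_l2[OF x0(1)]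
      by (auto simp: u0_def fun_eq_iff)
    hence "sep_norm J (D u0) \<noteq> 0" using norm_zero_l2[OF Dl2[OF u0(1)]] by blast
    hence "(sep_norm J (D u0))^2 > 0" by simp
    moreover have "(sep_norm J (D u0))^2 \<in> N" using u0 by (auto simp: N_def)
    ultimately show ?thesis unfolding M_def using bdd cSup_upper less_le_trans by blast
  qed
  define f where "f = qt * q + [:- complex_of_real M:]"
  have polyf: "poly f z = poly qt z * poly q z - complex_of_real M" for z by (simp add: f_def)
  have fnz: "f \<noteq> 0"
  proof
    assume "f = 0"
    obtain l where "l \<in> S" using S by blast
    hence "poly f l = - complex_of_real M" using polyf polyq by simp
    thus False using \<open>f = 0\<close> Mpos by simp
  qed
  have froots: "z \<notin> sep_spectrum J A" if "poly f z = 0" for z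
  proof
    assume "z \<in> sep_spectrum J A"
    hence "z \<in> S" using sub by blast
    hence "poly f z = - complex_of_real M" using polyf polyq by simp
    thus False using that Mpos by simp
  qed
  have fbij: "bij_betw (opeval J f A) (sep_l2 J) (sep_l2 J)" by (rule bij_poly[OF A fnz froots])
  have fcnj: "map_poly cnj f = f"
  proof -
    have "poly (map_poly cnj f) = poly f"
      by (rule ext) (simp add: f_def qt_def mult.commute)
    thus ?thesis using poly_eq_poly_eq_iff by blast
  qed
  have fsym: "sep_inner J (opeval J f A x) y = sep_inner J x (opeval J f A y)"
    if "x \<in> sep_l2 J" "y \<in> sep_l2 J" for x y
    using opeval_adj[OF A sa that, of f] fcnj by simp
  have "\<exists>\<delta>>0. \<forall>x\<in>sep_l2 J. \<delta> * sep_norm J x \<le> sep_norm J (opeval J f A x)"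
    by (rule sym_bij_bounded_below[OF opeval_l2[OF A] opeval_lin[OF A] fsym fbij])
  then obtain \<delta> where \<delta>: "\<delta> > 0" "\<And>x. x \<in> sep_l2 J \<Longrightarrow> \<delta> * sep_norm J x \<le> sep_norm J (opeval J f A x)"
    by blast
  have "M - \<delta>^2 / M < M" using \<delta> Mpos by simp
  then obtain y where "y \<in> N" "M - \<delta>^2 / M < y" using less_cSupD[OF Nne] unfolding M_def by blast
  then obtain x where x: "x \<in> sep_l2 J" "sep_norm J x = 1" and big: "M - \<delta>^2 / M < nsq J (D x)"
    by (auto simp: N_def nsq_norm)
  have nx: "nsq J x = 1" using x by (simp add: nsq_norm)
  have Cx: "opeval J (qt * q) A x = Dt (D x)" unfolding Dt_def D_def by (rule opeval_mult[OF A x(1)])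
  have fx: "opeval J f A x = (\<lambda>i. Dt (D x) i + (- complex_of_real M) * x i)"
    unfolding f_def using opeval_add[OF A x(1)] opeval_const[OF A x(1)] Cx by simp
  have Cxl: "Dt (D x) \<in> sep_l2 J" using Dtl2 Dl2 x by blast
  have Mxl: "(\<lambda>i. (- complex_of_real M) * x i) \<in> sep_l2 J" using x by blast
  have nMx: "nsq J (\<lambda>i. (- complex_of_real M) * x i) = M^2"
    by (simp only: nsq_scale) (simp add: nx)
  have inner_Cx: "sep_inner J (Dt (D x)) (\<lambda>i. (- complex_of_real M) * x i) = - complex_of_real M * complex_of_real (nsq J (D x))"
  proof -
    have "sep_inner J (Dt (D x)) (\<lambda>i. (- complex_of_real M) * x i) = (- complex_of_real M) * sep_inner J (Dt (D x)) x"
      by (rule l2inner_scale_right[OF Cxl x(1)])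
    also have "sep_inner J (Dt (D x)) x = sep_inner J (D x) (D x)" by (rule adjDt[OF Dl2[OF x(1)] x(1)])
    also have "\<dots> = complex_of_real (nsq J (D x))" using l2inner_self[OF Dl2[OF x(1)]] .
    finally show ?thesis .
  qed
  have "nsq J (opeval J f A x) = nsq J (Dt (D x)) + nsq J (\<lambda>i. (- complex_of_real M) * x i)
      + 2 * Re (sep_inner J (Dt (D x)) (\<lambda>i. (- complex_of_real M) * x i))"
    unfolding fx by (rule nsq_add[OF Cxl Mxl])
  also have "\<dots> = nsq J (D (D x)) + M^2 - 2 * M * nsq J (D x)"
    using nsqDt[OF Dl2[OF x(1)]] inner_Cx nMx by simp
  also have "\<dots> \<le> M * nsq J (D x) + M^2 - 2 * M * nsq J (D x)"
    using Dle[OF Dl2[OF x(1)]] by simp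
  also have "\<dots> = M * (M - nsq J (D x))" by (simp add: algebra_simps power2_eq_square)
  also have "\<dots> < M * (\<delta>^2 / M)" using big Mpos by (intro mult_strict_left_mono) auto
  also have "\<dots> = \<delta>^2" using Mpos by simp
  finally have lt: "nsq J (opeval J f A x) < \<delta>^2" .
  have "\<delta> \<le> sep_norm J (opeval J f A x)" using \<delta>(2)[OF x(1)] x(2) by simp
  hence "\<delta>^2 \<le> (sep_norm J (opeval J f A x))^2" using \<delta>(1) by (simp add: power_mono)
  thus False using lt by (simp add: nsq_norm)
qed


lemma eig_opeval:
  assumes A: "sep_bounded_op J A" and v: "v \<in> sep_l2 J" and Av: "A v = (\<lambda>i. \<nu> * v i)"
  shows "opeval J p A v = (\<lambda>i. poly p \<nu> * v i)"
proof (induction p)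
  case 0 thus ?case by (simp add: opeval_zero[OF A])
next
  case (pCons a p)
  have "opeval J (pCons a p) A v = (\<lambda>i. a * v i + A (\<lambda>i. poly p \<nu> * v i) i)"
    using opeval_pCons[OF A v] pCons by simp
  also have "A (\<lambda>i. poly p \<nu> * v i) = (\<lambda>i. poly p \<nu> * (\<nu> * v i))"
    using bop_scale[OF A v, of "poly p \<nu>"] Av by simp
  also have "(\<lambda>i. a * v i + (\<lambda>i. poly p \<nu> * (\<nu> * v i)) i) = (\<lambda>i. poly (pCons a p) \<nu> * v i)"
    by (simp add: algebra_simps)
  finally show ?case .
qed

lemma opeval_sum:
  assumes A: "sep_bounded_op J A" and x: "x \<in> sep_l2 J" and S: "finite S"
  shows "opeval J (\<Sum>s\<in>S. g s) A x = (\<lambda>i. \<Sum>s\<in>S. opeval J (g s) A x i)"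
  using S by (induction S rule: finite_induct) (auto simp: opeval_add[OF A x] opeval_zero[OF A])

lemma eig_real:
  assumes sa: "sadj J A" and v: "v \<in> sep_l2 J" "v \<noteq> (\<lambda>_. 0)" and Av: "A v = (\<lambda>i. l * v i)"
  shows "cnj l = l"
proof -
  have "sep_inner J (A v) v = sep_inner J v (A v)" by (rule sadjD[OF sa v(1) v(1)])
  hence "cnj l * sep_inner J v v = l * sep_inner J v v"
    unfolding Av using v by (simp add: l2inner_scale_left l2inner_scale_right)
  moreover have "sep_inner J v v \<noteq> 0"
    using l2inner_self[OF v(1)] nsq_zero[OF v(1)] v(2) by auto
  ultimately show ?thesis by simp
qed

lemma eig_orth:
  assumes sa: "sadj J A" and u: "u \<in> sep_l2 J" "A u = (\<lambda>i. l * u i)" "cnj l = l"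
    and v: "v \<in> sep_l2 J" "A v = (\<lambda>i. m * v i)" and lm: "l \<noteq> m"
  shows "sep_inner J u v = 0"
proof -
  have "sep_inner J (A u) v = sep_inner J u (A v)" by (rule sadjD[OF sa u(1) v(1)])
  hence "cnj l * sep_inner J u v = m * sep_inner J u v"
    using u v by (simp add: l2inner_scale_left l2inner_scale_right)
  thus ?thesis using u(3) lm by simp
qed

lemma (in projfam) nz_eq: "nz = {s \<in> S. \<exists>x\<in>sep_l2 J. E s x \<noteq> (\<lambda>_. 0)}"
  by (simp add: nz_def)

locale specctx =
  fixes J :: "'j set" and A :: "('j \<Rightarrow> complex) \<Rightarrow> ('j \<Rightarrow> complex)" and S :: "complex set"
  assumes A: "sep_bounded_op J A" and sa: "sadj J A" and finS: "finite S" and Sne: "S \<noteq> {}"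
    and qz: "\<And>x. x \<in> sep_l2 J \<Longrightarrow> opeval J (\<Prod>l\<in>S. [:-l, 1:]) A x = (\<lambda>_. 0)"
begin

definition L :: "complex \<Rightarrow> complex poly" where
  "L l = smult (1 / (\<Prod>m\<in>S - {l}. (l - m))) (\<Prod>m\<in>S - {l}. [:-m, 1:])"

definition P :: "complex \<Rightarrow> ('j \<Rightarrow> complex) \<Rightarrow> ('j \<Rightarrow> complex)" where
  "P l = opeval J (L l) A"

lemma polyL: "l \<in> S \<Longrightarrow> n \<in> S \<Longrightarrow> poly (L l) n = (if n = l then 1 else 0)"
proof -
  assume l: "l \<in> S" and n: "n \<in> S"
  have nz: "(\<Prod>m\<in>S - {l}. (l - m)) \<noteq> 0" using finS by (simp add: prod_zero_iff)
  show ?thesis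
  proof (cases "n = l")
    case True thus ?thesis using nz by (simp add: L_def poly_prod)
  next
    case False
    hence "(\<Prod>m\<in>S - {l}. (n - m)) = 0" using n finS by (simp add: prod_zero_iff)
    thus ?thesis using False by (simp add: L_def poly_prod)
  qed
qed

lemma sumL: "(\<Sum>l\<in>S. L l) = 1"
proof -
  have False: "S \<noteq> {}" by (rule Sne)
  have dL: "degree (L l) < card S" if lS: "l \<in> S" for l
  proof -
    have "degree (L l) \<le> degree (\<Prod>m\<in>S - {l}. [:-m, 1:])" by (simp add: L_def degree_smult_le)
    also have "\<dots> \<le> (\<Sum>m\<in>S - {l}. degree [:-m, 1:])"
      using degree_prod_sum_le[of "S - {l}" "\<lambda>m. [:-m, 1:]"] finS by (simp add: o_def)
    also have "\<dots> = card (S - {l})" by simp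
    also have "\<dots> < card S" by (rule card_Diff1_less[OF finS lS])
    finally show ?thesis .
  qed
  have "degree (\<Sum>l\<in>S. L l) < card S"
    using False finS dL by (intro degree_sum_less) (auto simp: card_gt_0_iff)
  moreover have "poly (\<Sum>l\<in>S. L l) n = poly 1 n" if n: "n \<in> S" for n
  proof -
    have "poly (\<Sum>l\<in>S. L l) n = (\<Sum>l\<in>S. if n = l then 1 else 0)"
      by (simp add: poly_sum polyL n)
    also have "\<dots> = 1" using n finS by simp
    finally show ?thesis by simp
  qed
  moreover have "card S > degree (1 :: complex poly)" using False finS by (simp add: card_gt_0_iff)
  ultimately show ?thesis by (intro poly_eqI_degree[of S]) auto
qed

lemma Pbop: "sep_bounded_op J (P l)"
  unfolding P_def by (rule opeval_bop[OF A])

lemma Pl2: "x \<in> sep_l2 J \<Longrightarrow> P l x \<in> sep_l2 J"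
  unfolding P_def by (rule opeval_l2[OF A])

lemma sumP: "x \<in> sep_l2 J \<Longrightarrow> (\<lambda>i. \<Sum>l\<in>S. P l x i) = x"
proof -
  assume x: "x \<in> sep_l2 J"
  have "(\<lambda>i. \<Sum>l\<in>S. P l x i) = opeval J (\<Sum>l\<in>S. L l) A x"
    unfolding P_def by (rule opeval_sum[OF A x finS, symmetric])
  also have "\<dots> = x" by (simp add: sumL opeval_one[OF A x])
  finally show ?thesis .
qed

lemma AP:
  assumes l: "l \<in> S" and x: "x \<in> sep_l2 J"
  shows "A (P l x) = (\<lambda>i. l * P l x i)"
proof -
  define c where "c = 1 / (\<Prod>m\<in>S - {l}. (l - m))"
  have q: "(\<Prod>m\<in>S. [:-m, 1:]) = [:-l, 1:] * (\<Prod>m\<in>S - {l}. [:-m, 1:])"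
    using finS l by (rule prod.remove)
  have "[:-l, 1:] * L l = smult c (\<Prod>m\<in>S. [:-m, 1:])"
    unfolding q L_def c_def by (simp add: mult_smult_right)
  hence "opeval J [:-l, 1:] A (P l x) = opeval J (smult c (\<Prod>m\<in>S. [:-m, 1:])) A x"
    unfolding P_def using opeval_mult[OF A x, of "[:-l, 1:]" "L l"] by simp
  also have "\<dots> = (\<lambda>_. 0)" using opeval_smult[OF A x] qz[OF x] by simp
  finally have "(\<lambda>i. A (P l x) i - l * P l x i) = (\<lambda>_. 0)"
    using opeval_linfac[OF A Pl2[OF x]] by simp
  thus ?thesis by (simp add: fun_eq_iff)
qed

lemma PP:
  assumes l: "l \<in> S" and n: "n \<in> S" and x: "x \<in> sep_l2 J"
  shows "P l (P n x) = (if l = n then P n x else (\<lambda>_. 0))"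
proof -
  have "P l (P n x) = (\<lambda>i. poly (L l) n * P n x i)"
    unfolding P_def[of l] by (rule eig_opeval[OF A Pl2[OF x] AP[OF n x]])
  thus ?thesis using polyL[OF l n] by (auto simp: fun_eq_iff)
qed

lemma Arec: "x \<in> sep_l2 J \<Longrightarrow> A x = (\<lambda>i. \<Sum>l\<in>S. l * P l x i)"
proof -
  assume x: "x \<in> sep_l2 J"
  have "A x = A (\<lambda>i. \<Sum>l\<in>S. P l x i)" using sumP[OF x] by simp
  also have "\<dots> = (\<lambda>i. \<Sum>l\<in>S. A (P l x) i)"
    by (rule bop_sum[OF A finS]) (rule Pl2[OF x])
  also have "\<dots> = (\<lambda>i. \<Sum>l\<in>S. l * P l x i)"
    using x by (intro ext sum.cong refl) (simp add: AP)
  finally show ?thesis .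
qed

definition S0 :: "complex set" where "S0 = {l \<in> S. \<exists>x\<in>sep_l2 J. P l x \<noteq> (\<lambda>_. 0)}"

lemma S0_sub: "S0 \<subseteq> S" by (auto simp: S0_def)

lemma S0_real: "l \<in> S0 \<Longrightarrow> cnj l = l"
proof -
  assume "l \<in> S0"
  then obtain x where l: "l \<in> S" and x: "x \<in> sep_l2 J" "P l x \<noteq> (\<lambda>_. 0)" by (auto simp: S0_def)
  show ?thesis by (rule eig_real[OF sa Pl2[OF x(1)] x(2) AP[OF l x(1)]])
qed

lemma P_zero: "l \<in> S \<Longrightarrow> l \<notin> S0 \<Longrightarrow> x \<in> sep_l2 J \<Longrightarrow> P l x = (\<lambda>_. 0)"
  by (auto simp: S0_def)

lemma sum_single: "l \<in> S \<Longrightarrow> (\<And>m. m \<in> S \<Longrightarrow> m \<noteq> l \<Longrightarrow> f m = 0) \<Longrightarrow> sum f S = f l"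
proof -
  assume l: "l \<in> S" and z: "\<And>m. m \<in> S \<Longrightarrow> m \<noteq> l \<Longrightarrow> f m = 0"
  have "sum f S = sum (\<lambda>m. if m = l then f l else 0) S" using z by (intro sum.cong) auto
  also have "\<dots> = f l" using l finS by simp
  finally show ?thesis .
qed

lemma P_sadj: "l \<in> S0 \<Longrightarrow> sadj J (P l)"
  unfolding sadj_def
proof (intro ballI)
  fix x y assume lS0: "l \<in> S0" and x: "x \<in> sep_l2 J" and y: "y \<in> sep_l2 J"
  have l: "l \<in> S" using lS0 S0_sub by blast
  have rl: "cnj l = l" using S0_real[OF lS0] .
  have o1: "sep_inner J (P l x) (P m y) = 0" if "m \<in> S" "m \<noteq> l" for m
    by (rule eig_orth[OF sa Pl2[OF x] AP[OF l x] rl Pl2[OF y] AP[OF that(1) y]]) (use that in auto)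
  have o2: "sep_inner J (P m x) (P l y) = 0" if "m \<in> S" "m \<noteq> l" for m
  proof -
    have "sep_inner J (P l y) (P m x) = 0"
      by (rule eig_orth[OF sa Pl2[OF y] AP[OF l y] rl Pl2[OF x] AP[OF that(1) x]]) (use that in auto)
    thus ?thesis using l2inner_commute[of J "P l y" "P m x"] by simp
  qed
  have "sep_inner J (P l x) y = sep_inner J (P l x) (\<lambda>i. \<Sum>m\<in>S. P m y i)" using sumP[OF y] by simp
  also have "\<dots> = (\<Sum>m\<in>S. sep_inner J (P l x) (P m y))"
    by (rule l2inner_sum_right[OF finS Pl2[OF x] Pl2[OF y]])
  also have "\<dots> = sep_inner J (P l x) (P l y)" by (rule sum_single[OF l o1])
  finally have e1: "sep_inner J (P l x) y = sep_inner J (P l x) (P l y)" .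
  have "sep_inner J x (P l y) = sep_inner J (\<lambda>i. \<Sum>m\<in>S. P m x i) (P l y)" using sumP[OF x] by simp
  also have "\<dots> = (\<Sum>m\<in>S. sep_inner J (P m x) (P l y))"
    by (rule l2inner_sum_left[OF finS Pl2[OF y] Pl2[OF x]])
  also have "\<dots> = sep_inner J (P l x) (P l y)" by (rule sum_single[OF l o2])
  finally show "sep_inner J (P l x) y = sep_inner J x (P l y)" using e1 by simp
qed

lemma sum_S0: "x \<in> sep_l2 J \<Longrightarrow> (\<lambda>i. \<Sum>l\<in>S. f l * P l x i) = (\<lambda>i. \<Sum>l\<in>S0. f l * P l x i)"
  by (intro ext sum.mono_neutral_right finS S0_sub) (auto simp: P_zero)

lemma projfam_S0: "projfam J S0 P"
proof
  show "finite S0" using finite_subset[OF S0_sub finS] .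
  show "\<And>s. s \<in> S0 \<Longrightarrow> sep_bounded_op J (P s)" by (rule Pbop)
  show "\<And>s. s \<in> S0 \<Longrightarrow> sadj J (P s)" by (rule P_sadj)
  show "\<And>s t x. s \<in> S0 \<Longrightarrow> t \<in> S0 \<Longrightarrow> x \<in> sep_l2 J \<Longrightarrow> P s (P t x) = (if s = t then P t x else (\<lambda>_. 0))"
    using PP S0_sub by blast
  show "\<And>x. x \<in> sep_l2 J \<Longrightarrow> (\<lambda>i. \<Sum>s\<in>S0. P s x i) = x"
    using sum_S0[of _ "\<lambda>_. 1"] sumP by simp
qed

lemma A_S0: "x \<in> sep_l2 J \<Longrightarrow> A x = (\<lambda>i. \<Sum>l\<in>S0. l * P l x i)"
  using Arec sum_S0[of _ "\<lambda>l. l"] by simp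

end

lemma spec_decomp:
  fixes J :: "'j set" and A :: "('j \<Rightarrow> complex) \<Rightarrow> ('j \<Rightarrow> complex)"
  assumes obs: "sep_observable J A" and fin: "finite (sep_spectrum J A)"
  shows "\<exists>P. projfam J (sep_spectrum J A) P \<and>
     (\<forall>x\<in>sep_l2 J. A x = (\<lambda>i. \<Sum>l\<in>sep_spectrum J A. l * P l x i)) \<and>
     (\<forall>l\<in>sep_spectrum J A. cnj l = l) \<and>
     (\<forall>l\<in>sep_spectrum J A. \<exists>x\<in>sep_l2 J. P l x \<noteq> (\<lambda>_. 0))"
proof -
  have A: "sep_bounded_op J A" and sa: "sadj J A" using obs by (auto simp: observable_iff)
  define S where "S = insert 0 (sep_spectrum J A)"
  have S: "finite S" "S \<noteq> {}" "sep_spectrum J A \<subseteq> S" using fin by (auto simp: S_def)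
  have qz: "\<And>x. x \<in> sep_l2 J \<Longrightarrow> opeval J (\<Prod>l\<in>S. [:-l, 1:]) A x = (\<lambda>_. 0)"
    using qzero[OF A sa S] by blast
  interpret C: specctx J A S by (unfold_locales) (use A sa S qz in auto)
  interpret PF: projfam J C.S0 C.P by (rule C.projfam_S0)
  have Adef: "\<And>x. x \<in> sep_l2 J \<Longrightarrow> A x = (\<lambda>i. \<Sum>s\<in>C.S0. s * C.P s x i)" by (rule C.A_S0)
  have "sep_spectrum J A = (\<lambda>s. s) ` PF.nz"
    by (rule PF.spectrum_eq[of A "\<lambda>s. s", OF Adef])
  moreover have "PF.nz = C.S0" unfolding PF.nz_eq by (auto simp: C.S0_def)
  ultimately have sp: "sep_spectrum J A = C.S0" by simp
  show ?thesis
    using PF.projfam_axioms C.A_S0 C.S0_real unfolding sp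
    by (intro exI[of _ C.P]) (auto simp: C.S0_def)
qed


definition rop :: "'i set \<Rightarrow> (('i \<Rightarrow> complex) \<Rightarrow> ('i \<Rightarrow> complex)) \<Rightarrow> ('i \<times> 'i \<Rightarrow> complex) \<Rightarrow> ('i \<times> 'i \<Rightarrow> complex)" where
  "rop I B z = (if z \<in> sep_l2 (I \<times> I) then (\<lambda>(i, j). B (\<lambda>k. z (i, k)) j) else (\<lambda>_. 0))"

definition swp :: "('i \<times> 'i \<Rightarrow> complex) \<Rightarrow> ('i \<times> 'i \<Rightarrow> complex)" where
  "swp z = (\<lambda>(i, j). z (j, i))"

definition cop :: "'i set \<Rightarrow> (('i \<Rightarrow> complex) \<Rightarrow> ('i \<Rightarrow> complex)) \<Rightarrow> ('i \<times> 'i \<Rightarrow> complex) \<Rightarrow> ('i \<times> 'i \<Rightarrow> complex)" where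
  "cop I B z = swp (rop I B (swp z))"

definition tens :: "('i \<Rightarrow> complex) \<Rightarrow> ('i \<Rightarrow> complex) \<Rightarrow> ('i \<times> 'i \<Rightarrow> complex)" where
  "tens x y = (\<lambda>(i, j). x i * y j)"

lemma swp_swp[simp]: "swp (swp z) = z" by (simp add: swp_def fun_eq_iff)

lemma swp_apply[simp]: "swp z (i, j) = z (j, i)" by (simp add: swp_def)

lemma bij_swap_II: "bij_betw prod.swap (I \<times> I) (I \<times> I)"
  by (auto simp: bij_betw_def inj_on_def image_def)

lemma swp_l2: "z \<in> sep_l2 (I \<times> I) \<Longrightarrow> swp z \<in> sep_l2 (I \<times> I)"
proof -
  assume z: "z \<in> sep_l2 (I \<times> I)"
  have "(\<lambda>ij. (cmod (z (prod.swap ij)))^2) summable_on (I \<times> I)"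
    using summable_on_reindex_bij_betw[OF bij_swap_II, of "\<lambda>ij. (cmod (z ij))^2"] l2_summ[OF z] by simp
  moreover have "(\<lambda>ij. (cmod (z (prod.swap ij)))^2) = (\<lambda>ij. (cmod (swp z ij))^2)"
    by (auto simp: swp_def)
  ultimately show ?thesis using z by (auto simp: sep_l2_def swp_def)
qed

lemma swp_l2_iff: "swp z \<in> sep_l2 (I \<times> I) \<longleftrightarrow> z \<in> sep_l2 (I \<times> I)"
  using swp_l2[of z I] swp_l2[of "swp z" I] by auto

lemma swp_inner: "sep_inner (I \<times> I) (swp z) (swp w) = sep_inner (I \<times> I) z w"
proof -
  have "sep_inner (I \<times> I) (swp z) (swp w) = (\<Sum>\<^sub>\<infinity>ij\<in>I \<times> I. cnj (z (prod.swap ij)) * w (prod.swap ij))"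
    unfolding sep_inner_def by (intro infsum_cong) (auto simp: swp_def)
  also have "\<dots> = sep_inner (I \<times> I) z w"
    unfolding sep_inner_def by (rule infsum_reindex_bij_betw[OF bij_swap_II])
  finally show ?thesis .
qed

lemma swp_nsq: "nsq (I \<times> I) (swp z) = nsq (I \<times> I) z"
proof -
  have "nsq (I \<times> I) (swp z) = (\<Sum>\<^sub>\<infinity>ij\<in>I \<times> I. (cmod (z (prod.swap ij)))^2)"
    unfolding nsq_def by (intro infsum_cong) (auto simp: swp_def)
  also have "\<dots> = nsq (I \<times> I) z"
    unfolding nsq_def by (rule infsum_reindex_bij_betw[OF bij_swap_II])
  finally show ?thesis .
qed

lemma swp_norm: "sep_norm (I \<times> I) (swp z) = sep_norm (I \<times> I) z"
  by (simp add: sep_norm_nsq swp_nsq)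

lemma case_prod_fun: "(\<lambda>(x, y). f (x, y)) = f"
  by (auto simp: fun_eq_iff)

lemma row_l2:
  assumes z: "z \<in> sep_l2 (I \<times> I)"
  shows "(\<lambda>k. z (i, k)) \<in> sep_l2 I"
proof (cases "i \<in> I")
  case True
  have "(\<lambda>(x, y). (\<lambda>x y. (cmod (z (x, y)))^2) x y) summable_on Sigma I (\<lambda>_. I)"
    using l2_summ[OF z] by (simp add: case_prod_fun[of "\<lambda>p. (cmod (z p))^2"])
  hence "(\<lambda>y. (cmod (z (i, y)))^2) summable_on I"
    using summable_on_SigmaD1[of "\<lambda>x y. (cmod (z (x, y)))^2" I "\<lambda>_. I" i] True by simp
  thus ?thesis using z by (auto simp: sep_l2_def)
next
  case False
  hence "(\<lambda>k. z (i, k)) = (\<lambda>_. 0)" using z by (auto simp: sep_l2_def)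
  thus ?thesis by simp
qed

lemma nsq_rows:
  assumes z: "z \<in> sep_l2 (I \<times> I)"
  shows "(\<lambda>i. nsq I (\<lambda>k. z (i, k))) summable_on I"
    and "nsq (I \<times> I) z = (\<Sum>\<^sub>\<infinity>i\<in>I. nsq I (\<lambda>k. z (i, k)))"
proof -
  have s: "(\<lambda>(x, y). (\<lambda>x y. (cmod (z (x, y)))^2) x y) summable_on Sigma I (\<lambda>_. I)"
    using l2_summ[OF z] by (simp add: case_prod_fun[of "\<lambda>p. (cmod (z p))^2"])
  show "(\<lambda>i. nsq I (\<lambda>k. z (i, k))) summable_on I"
    using summable_on_Sigma_banach[OF s] by (simp add: nsq_def)
  show "nsq (I \<times> I) z = (\<Sum>\<^sub>\<infinity>i\<in>I. nsq I (\<lambda>k. z (i, k)))"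
    using infsum_Sigma'_banach[OF s] by (simp add: nsq_def case_prod_fun[of "\<lambda>p. (cmod (z p))^2"])
qed

lemma inner_rows:
  assumes z: "z \<in> sep_l2 (I \<times> I)" and w: "w \<in> sep_l2 (I \<times> I)"
  shows "sep_inner (I \<times> I) z w = (\<Sum>\<^sub>\<infinity>i\<in>I. sep_inner I (\<lambda>k. z (i, k)) (\<lambda>k. w (i, k)))"
proof -
  have s: "(\<lambda>(x, y). (\<lambda>x y. cnj (z (x, y)) * w (x, y)) x y) summable_on Sigma I (\<lambda>_. I)"
    using inner_summ[OF z w] by (simp add: case_prod_fun[of "\<lambda>p. cnj (z p) * w p"])
  show ?thesis using infsum_Sigma'_banach[OF s] by (simp add: sep_inner_def case_prod_fun[of "\<lambda>p. cnj (z p) * w p"])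
qed

lemma l2_of_rows:
  assumes rows: "\<And>i. i \<in> I \<Longrightarrow> (\<lambda>k. z (i, k)) \<in> sep_l2 I"
    and out: "\<And>i j. i \<notin> I \<Longrightarrow> z (i, j) = 0"
    and summ: "(\<lambda>i. nsq I (\<lambda>k. z (i, k))) summable_on I"
  shows "z \<in> sep_l2 (I \<times> I)"
proof -
  have "(\<lambda>ij. (cmod (z ij))^2) summable_on Sigma I (\<lambda>_. I)"
  proof (rule summable_on_SigmaI[where g="\<lambda>i. nsq I (\<lambda>k. z (i, k))"])
    fix i assume i: "i \<in> I"
    show "((\<lambda>y. (cmod (z (i, y)))^2) has_sum nsq I (\<lambda>k. z (i, k))) I"
      unfolding nsq_def using l2_summ[OF rows[OF i]] by (simp add: has_sum_infsum)
  qed (use summ in auto)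
  moreover have "z ij = 0" if "ij \<notin> I \<times> I" for ij
  proof -
    obtain i j where ij: "ij = (i, j)" by (cases ij)
    show ?thesis
    proof (cases "i \<in> I")
      case True
      hence "j \<notin> I" using that ij by auto
      thus ?thesis using l2_out[OF rows[OF True]] ij by simp
    qed (use out ij in auto)
  qed
  ultimately show ?thesis by (simp add: sep_l2_def)
qed

lemma tens_l2: "x \<in> sep_l2 I \<Longrightarrow> y \<in> sep_l2 I \<Longrightarrow> tens x y \<in> sep_l2 (I \<times> I)"
proof (rule l2_of_rows)
  assume x: "x \<in> sep_l2 I" and y: "y \<in> sep_l2 I"
  show "(\<lambda>k. tens x y (i, k)) \<in> sep_l2 I" for i using y by (auto simp: tens_def)
  show "tens x y (i, j) = 0" if "i \<notin> I" for i j using l2_out[OF x that] by (simp add: tens_def)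
  have "(\<lambda>i. (cmod (x i))^2 * nsq I y) summable_on I"
    using l2_summ[OF x] by (rule summable_on_cmult_left)
  thus "(\<lambda>i. nsq I (\<lambda>k. tens x y (i, k))) summable_on I"
    by (simp add: tens_def nsq_scale)
qed

context
  fixes I :: "'i set" and B :: "('i \<Rightarrow> complex) \<Rightarrow> ('i \<Rightarrow> complex)"
  assumes B: "sep_bounded_op I B"
begin

lemma rop_row: "z \<in> sep_l2 (I \<times> I) \<Longrightarrow> (\<lambda>k. rop I B z (i, k)) = B (\<lambda>k. z (i, k))"
  by (simp add: rop_def)

lemma rop_l2: "z \<in> sep_l2 (I \<times> I) \<Longrightarrow> rop I B z \<in> sep_l2 (I \<times> I)"
proof -
  assume z: "z \<in> sep_l2 (I \<times> I)"
  obtain c where c: "c \<ge> 0" "\<And>x. x \<in> sep_l2 I \<Longrightarrow> sep_norm I (B x) \<le> c * sep_norm I x"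
    using bop_bound[OF B] by blast
  show ?thesis
  proof (rule l2_of_rows)
    show "(\<lambda>k. rop I B z (i, k)) \<in> sep_l2 I" for i
      using rop_row[OF z] bop_l2[OF B row_l2[OF z]] by simp
    show "rop I B z (i, j) = 0" if "i \<notin> I" for i j
    proof -
      have "(\<lambda>k. z (i, k)) = (\<lambda>_. 0)" using z that by (auto simp: sep_l2_def)
      thus ?thesis using z bop_zero[OF B] by (simp add: rop_def)
    qed
    have "(\<lambda>i. c^2 * nsq I (\<lambda>k. z (i, k))) summable_on I"
      using nsq_rows(1)[OF z] by (rule summable_on_cmult_right)
    thus "(\<lambda>i. nsq I (\<lambda>k. rop I B z (i, k))) summable_on I"
    proof (rule summable_on_comparison_test)
      fix i
      have "sep_norm I (B (\<lambda>k. z (i, k))) \<le> c * sep_norm I (\<lambda>k. z (i, k))" using c(2)[OF row_l2[OF z]] .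
      hence "(sep_norm I (B (\<lambda>k. z (i, k))))^2 \<le> (c * sep_norm I (\<lambda>k. z (i, k)))^2"
        by (simp add: power_mono sep_norm_nonneg)
      thus "nsq I (\<lambda>k. rop I B z (i, k)) \<le> c^2 * nsq I (\<lambda>k. z (i, k))"
        by (simp add: rop_row[OF z] nsq_norm power_mult_distrib)
    qed (simp add: nsq_nonneg)
  qed
qed

lemma rop_bop: "sep_bounded_op (I \<times> I) (rop I B)"
proof -
  obtain c where c: "c \<ge> 0" "\<And>x. x \<in> sep_l2 I \<Longrightarrow> sep_norm I (B x) \<le> c * sep_norm I x"
    using bop_bound[OF B] by blast
  show ?thesis
  proof (rule bopI[where c=c])
    fix z assume z: "z \<in> sep_l2 (I \<times> I)"
    have rl: "rop I B z \<in> sep_l2 (I \<times> I)" by (rule rop_l2[OF z])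
    have "nsq (I \<times> I) (rop I B z) = (\<Sum>\<^sub>\<infinity>i\<in>I. nsq I (\<lambda>k. rop I B z (i, k)))" by (rule nsq_rows(2)[OF rl])
    also have "\<dots> \<le> (\<Sum>\<^sub>\<infinity>i\<in>I. c^2 * nsq I (\<lambda>k. z (i, k)))"
    proof (rule infsum_mono)
      show "(\<lambda>i. nsq I (\<lambda>k. rop I B z (i, k))) summable_on I" by (rule nsq_rows(1)[OF rl])
      show "(\<lambda>i. c^2 * nsq I (\<lambda>k. z (i, k))) summable_on I"
        using nsq_rows(1)[OF z] by (rule summable_on_cmult_right)
      fix i
      have "sep_norm I (B (\<lambda>k. z (i, k))) \<le> c * sep_norm I (\<lambda>k. z (i, k))" using c(2)[OF row_l2[OF z]] .
      hence "(sep_norm I (B (\<lambda>k. z (i, k))))^2 \<le> (c * sep_norm I (\<lambda>k. z (i, k)))^2"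
        by (simp add: power_mono sep_norm_nonneg)
      thus "nsq I (\<lambda>k. rop I B z (i, k)) \<le> c^2 * nsq I (\<lambda>k. z (i, k))"
        by (simp add: rop_row[OF z] nsq_norm power_mult_distrib)
    qed
    also have "\<dots> = c^2 * nsq (I \<times> I) z" by (simp add: infsum_cmult_right' nsq_rows(2)[OF z])
    finally have "(sep_norm (I \<times> I) (rop I B z))^2 \<le> (c * sep_norm (I \<times> I) z)^2"
      by (simp add: nsq_norm power_mult_distrib)
    thus "sep_norm (I \<times> I) (rop I B z) \<le> c * sep_norm (I \<times> I) z"
      using c(1) by (meson mult_nonneg_nonneg power2_le_imp_le sep_norm_nonneg)
  next
    fix z w :: "'i \<times> 'i \<Rightarrow> complex" and a b
    assume z: "z \<in> sep_l2 (I \<times> I)" and w: "w \<in> sep_l2 (I \<times> I)"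
    have zw: "(\<lambda>ij. a * z ij + b * w ij) \<in> sep_l2 (I \<times> I)" using z w by blast
    show "rop I B (\<lambda>ij. a * z ij + b * w ij) = (\<lambda>ij. a * rop I B z ij + b * rop I B w ij)"
    proof (rule ext, clarify)
      fix i j
      have "B (\<lambda>k. a * z (i, k) + b * w (i, k)) = (\<lambda>k. a * B (\<lambda>k. z (i, k)) k + b * B (\<lambda>k. w (i, k)) k)"
        by (rule bop_lin[OF B row_l2[OF z] row_l2[OF w]])
      thus "rop I B (\<lambda>ij. a * z ij + b * w ij) (i, j) = a * rop I B z (i, j) + b * rop I B w (i, j)"
        using z w zw by (simp add: rop_def fun_eq_iff)
    qed
  next
    show "\<And>x. x \<in> sep_l2 (I \<times> I) \<Longrightarrow> rop I B x \<in> sep_l2 (I \<times> I)" by (rule rop_l2)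
    show "\<And>x. x \<notin> sep_l2 (I \<times> I) \<Longrightarrow> rop I B x = (\<lambda>_. 0)" by (simp add: rop_def)
  qed
qed

lemma rop_sadj: "sadj I B \<Longrightarrow> sadj (I \<times> I) (rop I B)"
  unfolding sadj_def
proof (intro ballI)
  fix z w assume sa: "\<forall>x\<in>sep_l2 I. \<forall>y\<in>sep_l2 I. sep_inner I (B x) y = sep_inner I x (B y)"
    and z: "z \<in> sep_l2 (I \<times> I)" and w: "w \<in> sep_l2 (I \<times> I)"
  have "sep_inner (I \<times> I) (rop I B z) w = (\<Sum>\<^sub>\<infinity>i\<in>I. sep_inner I (B (\<lambda>k. z (i, k))) (\<lambda>k. w (i, k)))"
    using inner_rows[OF rop_l2[OF z] w] rop_row[OF z] by simp
  also have "\<dots> = (\<Sum>\<^sub>\<infinity>i\<in>I. sep_inner I (\<lambda>k. z (i, k)) (B (\<lambda>k. w (i, k))))"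
    using sa row_l2[OF z] row_l2[OF w] by simp
  also have "\<dots> = sep_inner (I \<times> I) z (rop I B w)"
    using inner_rows[OF z rop_l2[OF w]] rop_row[OF w] by simp
  finally show "sep_inner (I \<times> I) (rop I B z) w = sep_inner (I \<times> I) z (rop I B w)" .
qed

lemma rop_tens: "x \<in> sep_l2 I \<Longrightarrow> y \<in> sep_l2 I \<Longrightarrow> rop I B (tens x y) = tens x (B y)"
proof -
  assume x: "x \<in> sep_l2 I" and y: "y \<in> sep_l2 I"
  have "B (\<lambda>k. x i * y k) = (\<lambda>k. x i * B y k)" for i by (rule bop_scale[OF B y])
  thus ?thesis using tens_l2[OF x y] by (simp add: rop_def tens_def fun_eq_iff)
qed

lemma cop_l2: "z \<in> sep_l2 (I \<times> I) \<Longrightarrow> cop I B z \<in> sep_l2 (I \<times> I)"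
  unfolding cop_def by (intro swp_l2 rop_l2)

lemma cop_bop: "sep_bounded_op (I \<times> I) (cop I B)"
proof -
  obtain c where c: "\<And>z. z \<in> sep_l2 (I \<times> I) \<Longrightarrow> sep_norm (I \<times> I) (rop I B z) \<le> c * sep_norm (I \<times> I) z"
    using bop_bound[OF rop_bop] by blast
  show ?thesis
  proof (rule bopI[where c=c])
    fix z assume z: "z \<in> sep_l2 (I \<times> I)"
    show "sep_norm (I \<times> I) (cop I B z) \<le> c * sep_norm (I \<times> I) z"
      using c[OF swp_l2[OF z]] by (simp add: cop_def swp_norm)
  next
    fix z w :: "'i \<times> 'i \<Rightarrow> complex" and a b
    assume z: "z \<in> sep_l2 (I \<times> I)" and w: "w \<in> sep_l2 (I \<times> I)"
    have "swp (\<lambda>ij. a * z ij + b * w ij) = (\<lambda>ij. a * swp z ij + b * swp w ij)" by (auto simp: swp_def)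
    thus "cop I B (\<lambda>ij. a * z ij + b * w ij) = (\<lambda>ij. a * cop I B z ij + b * cop I B w ij)"
      unfolding cop_def using bop_lin[OF rop_bop swp_l2[OF z] swp_l2[OF w]] by (auto simp: swp_def)
  next
    fix z assume "z \<notin> sep_l2 (I \<times> I)"
    hence "swp z \<notin> sep_l2 (I \<times> I)" using swp_l2_iff by blast
    hence "rop I B (swp z) = (\<lambda>_. 0)" by (simp add: rop_def)
    thus "cop I B z = (\<lambda>_. 0)" by (auto simp: cop_def swp_def fun_eq_iff)
  qed (simp add: cop_l2)
qed

lemma cop_sadj: "sadj I B \<Longrightarrow> sadj (I \<times> I) (cop I B)"
proof -
  assume sa: "sadj I B"
  have r: "sadj (I \<times> I) (rop I B)" by (rule rop_sadj[OF sa])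
  show ?thesis unfolding sadj_def
  proof (intro ballI)
    fix z w assume z: "z \<in> sep_l2 (I \<times> I)" and w: "w \<in> sep_l2 (I \<times> I)"
    have "sep_inner (I \<times> I) (cop I B z) w = sep_inner (I \<times> I) (rop I B (swp z)) (swp w)"
      unfolding cop_def using swp_inner[of I "rop I B (swp z)" "swp w"] by simp
    also have "\<dots> = sep_inner (I \<times> I) (swp z) (rop I B (swp w))"
      by (rule sadjD[OF r swp_l2[OF z] swp_l2[OF w]])
    also have "\<dots> = sep_inner (I \<times> I) z (cop I B w)"
      unfolding cop_def using swp_inner[of I "swp z" "rop I B (swp w)"] by simp
    finally show "sep_inner (I \<times> I) (cop I B z) w = sep_inner (I \<times> I) z (cop I B w)" .
  qed
qed

lemma swp_tens: "swp (tens x y) = tens y x" by (auto simp: swp_def tens_def fun_eq_iff)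

lemma cop_tens: "x \<in> sep_l2 I \<Longrightarrow> y \<in> sep_l2 I \<Longrightarrow> cop I B (tens x y) = tens (B x) y"
  by (simp add: cop_def swp_tens rop_tens)

end


definition cnjv :: "('i \<Rightarrow> complex) \<Rightarrow> ('i \<Rightarrow> complex)" where
  "cnjv x = (\<lambda>i. cnj (x i))"

lemma cnjv_cnjv[simp]: "cnjv (cnjv x) = x" by (simp add: cnjv_def)

lemma cnjv_l2: "x \<in> sep_l2 J \<Longrightarrow> cnjv x \<in> sep_l2 J"
  by (simp add: sep_l2_def cnjv_def)

lemma cnjv_norm: "sep_norm J (cnjv x) = sep_norm J x"
  by (simp add: sep_norm_def cnjv_def)

lemma cnjv_inner: "sep_inner J (cnjv x) (cnjv y) = cnj (sep_inner J x y)"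
  unfolding sep_inner_def cnjv_def infsum_cnj[symmetric] by simp

definition trc :: "'i set \<Rightarrow> (('i \<Rightarrow> complex) \<Rightarrow> ('i \<Rightarrow> complex)) \<Rightarrow> ('i \<Rightarrow> complex) \<Rightarrow> ('i \<Rightarrow> complex)" where
  "trc I B x = (if x \<in> sep_l2 I then cnjv (B (cnjv x)) else (\<lambda>_. 0))"

context
  fixes I :: "'i set" and B :: "('i \<Rightarrow> complex) \<Rightarrow> ('i \<Rightarrow> complex)"
  assumes B: "sep_bounded_op I B"
begin

lemma trc_l2: "x \<in> sep_l2 I \<Longrightarrow> trc I B x \<in> sep_l2 I"
  by (simp add: trc_def cnjv_l2 bop_l2[OF B])

lemma trc_bop: "sep_bounded_op I (trc I B)"
proof -
  obtain c where c: "\<And>x. x \<in> sep_l2 I \<Longrightarrow> sep_norm I (B x) \<le> c * sep_norm I x"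
    using bop_bound[OF B] by blast
  show ?thesis
  proof (rule bopI[where c=c])
    fix x assume x: "x \<in> sep_l2 I"
    show "sep_norm I (trc I B x) \<le> c * sep_norm I x"
      using c[OF cnjv_l2[OF x]] x by (simp add: trc_def cnjv_norm)
  next
    fix x y :: "'i \<Rightarrow> complex" and a b
    assume x: "x \<in> sep_l2 I" and y: "y \<in> sep_l2 I"
    have "cnjv (\<lambda>i. a * x i + b * y i) = (\<lambda>i. cnj a * cnjv x i + cnj b * cnjv y i)"
      by (simp add: cnjv_def)
    thus "trc I B (\<lambda>i. a * x i + b * y i) = (\<lambda>i. a * trc I B x i + b * trc I B y i)"
      using x y bop_lin[OF B cnjv_l2[OF x] cnjv_l2[OF y]] by (simp add: trc_def cnjv_def l2_lin)
  next
    show "\<And>x. x \<in> sep_l2 I \<Longrightarrow> trc I B x \<in> sep_l2 I" by (rule trc_l2)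
    show "\<And>x. x \<notin> sep_l2 I \<Longrightarrow> trc I B x = (\<lambda>_. 0)" by (simp add: trc_def)
  qed
qed

lemma trc_sadj: "sadj I B \<Longrightarrow> sadj I (trc I B)"
  unfolding sadj_def
proof (intro ballI)
  fix x y assume sa: "\<forall>x\<in>sep_l2 I. \<forall>y\<in>sep_l2 I. sep_inner I (B x) y = sep_inner I x (B y)"
    and x: "x \<in> sep_l2 I" and y: "y \<in> sep_l2 I"
  have "sep_inner I (trc I B x) y = sep_inner I (cnjv (B (cnjv x))) (cnjv (cnjv y))"
    using x by (simp add: trc_def)
  also have "\<dots> = cnj (sep_inner I (B (cnjv x)) (cnjv y))" by (rule cnjv_inner)
  also have "\<dots> = cnj (sep_inner I (cnjv x) (B (cnjv y)))" using sa cnjv_l2[OF x] cnjv_l2[OF y] by simp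
  also have "\<dots> = sep_inner I (cnjv (cnjv x)) (cnjv (B (cnjv y)))" by (rule cnjv_inner[symmetric])
  also have "\<dots> = sep_inner I x (trc I B y)" using y by (simp add: trc_def)
  finally show "sep_inner I (trc I B x) y = sep_inner I x (trc I B y)" .
qed

end

lemma trc_comp:
  assumes C: "sep_bounded_op I C" and x: "x \<in> sep_l2 I"
  shows "trc I B (trc I C x) = trc I (\<lambda>x. B (C x)) x"
  using x by (simp add: trc_def cnjv_l2 bop_l2[OF C])

lemma trc_comb:
  assumes x: "x \<in> sep_l2 I" and eq: "B (cnjv x) = (\<lambda>i. \<Sum>s\<in>S. a s * C s (cnjv x) i)"
  shows "trc I B x = (\<lambda>i. \<Sum>s\<in>S. cnj (a s) * trc I (C s) x i)"
  using x eq by (simp add: trc_def cnjv_def)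

lemma unit_eq: "sep_unit = uvec" by (simp add: fun_eq_iff sep_unit_def uvec_def)

lemma tensor_eq: "sep_tensor = tens" by (simp add: fun_eq_iff sep_tensor_def tens_def)

lemma inner_uvec: "w \<in> sep_l2 J \<Longrightarrow> i \<in> J \<Longrightarrow> sep_inner J (uvec i) w = w i"
proof -
  assume w: "w \<in> sep_l2 J" and i: "i \<in> J"
  have "sep_inner J (uvec i) w = (\<Sum>\<^sub>\<infinity>k\<in>J. if k = i then w k else 0)"
    unfolding sep_inner_def by (intro infsum_cong) (simp add: uvec_def)
  also have "\<dots> = (\<Sum>\<^sub>\<infinity>k\<in>{i}. if k = i then w k else 0)"
    by (rule infsum_cong_neutral) (use i in auto)
  also have "\<dots> = w i" by simp
  finally show ?thesis .
qed

lemma transp_eq: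
  assumes obs: "sep_observable I A" and y: "y \<in> sep_l2 I"
  shows "sep_transp I A y = trc I A y"
proof (rule ext)
  fix i
  have A: "sep_bounded_op I A" and sa: "sadj I A" using obs by (auto simp: observable_iff)
  show "sep_transp I A y i = trc I A y i"
  proof (cases "i \<in> I")
    case True
    have ui: "uvec i \<in> sep_l2 I" using uvec_l2[OF True] .
    have "trc I A y i = cnj (A (cnjv y) i)" using y by (simp add: trc_def cnjv_def)
    also have "A (cnjv y) i = sep_inner I (uvec i) (A (cnjv y))"
      using inner_uvec[OF bop_l2[OF A cnjv_l2[OF y]] True] by simp
    also have "\<dots> = sep_inner I (A (uvec i)) (cnjv y)" using sadjD[OF sa ui cnjv_l2[OF y]] by simp
    also have "cnj \<dots> = (\<Sum>\<^sub>\<infinity>j\<in>I. y j * A (uvec i) j)"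
      unfolding sep_inner_def infsum_cnj[symmetric] by (simp add: cnjv_def mult.commute)
    finally show ?thesis using True by (simp add: sep_transp_def unit_eq)
  next
    case False
    have "trc I A y i = 0" using y l2_out[OF bop_l2[OF A cnjv_l2[OF y]] False] by (simp add: trc_def cnjv_def)
    thus ?thesis using False by (simp add: sep_transp_def)
  qed
qed

lemma uvec_pair: "uvec (i, j) = tens (uvec i) (uvec j)"
  by (auto simp: uvec_def tens_def fun_eq_iff)

lemma comm_eq:
  assumes obs: "sep_observable I A"
  shows "sep_comm_op I A = (\<lambda>z ij. cop I A z ij - rop I (trc I A) z ij)"
proof -
  have A: "sep_bounded_op I A" using obs by (simp add: observable_iff)
  let ?K = "\<lambda>z ij. cop I A z ij - rop I (trc I A) z ij"
  have Kbop: "sep_bounded_op (I \<times> I) ?K"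
    using bop_lincomb[OF cop_bop[OF A] rop_bop[OF trc_bop[OF A]], of 1 "-1"] by simp
  have Kt: "?K (sep_tensor x y) = (\<lambda>ij. sep_tensor (A x) y ij - sep_tensor x (sep_transp I A y) ij)"
    if "x \<in> sep_l2 I" "y \<in> sep_l2 I" for x y
    using that by (simp add: tensor_eq cop_tens[OF A] rop_tens[OF trc_bop[OF A]] transp_eq[OF obs])
  show ?thesis unfolding sep_comm_op_def
  proof (rule the_equality)
    show "sep_bounded_op (I \<times> I) ?K \<and> (\<forall>x\<in>sep_l2 I. \<forall>y\<in>sep_l2 I.
      ?K (sep_tensor x y) = (\<lambda>ij. sep_tensor (A x) y ij - sep_tensor x (sep_transp I A y) ij))"
      using Kbop Kt by blast
  next
    fix T assume T: "sep_bounded_op (I \<times> I) T \<and> (\<forall>x\<in>sep_l2 I. \<forall>y\<in>sep_l2 I.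
      T (sep_tensor x y) = (\<lambda>ij. sep_tensor (A x) y ij - sep_tensor x (sep_transp I A y) ij))"
    show "T = ?K"
    proof (rule bop_unique[of "I \<times> I"])
      show "sep_bounded_op (I \<times> I) T" using T by blast
      show "sep_bounded_op (I \<times> I) ?K" by (rule Kbop)
      fix ij assume ij: "ij \<in> I \<times> I"
      then obtain i j where ij': "ij = (i, j)" "i \<in> I" "j \<in> I" by blast
      have "T (uvec ij) = T (sep_tensor (uvec i) (uvec j))" by (simp add: ij' uvec_pair tensor_eq)
      also have "\<dots> = ?K (sep_tensor (uvec i) (uvec j))"
      proof -
        have "\<forall>x\<in>sep_l2 I. \<forall>y\<in>sep_l2 I. T (sep_tensor x y) =
          (\<lambda>ij. sep_tensor (A x) y ij - sep_tensor x (sep_transp I A y) ij)" using T by blast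
        hence "T (sep_tensor (uvec i) (uvec j)) =
          (\<lambda>ij. sep_tensor (A (uvec i)) (uvec j) ij - sep_tensor (uvec i) (sep_transp I A (uvec j)) ij)"
          using uvec_l2[OF ij'(2)] uvec_l2[OF ij'(3)] by blast
        thus ?thesis using Kt[OF uvec_l2[OF ij'(2)] uvec_l2[OF ij'(3)]] by simp
      qed
      also have "\<dots> = ?K (uvec ij)" by (simp add: ij' uvec_pair tensor_eq)
      finally show "T (uvec ij) = ?K (uvec ij)" .
    qed
  qed
qed


context
  fixes I :: "'i set"
begin

lemma rop_cong: "(\<And>x. x \<in> sep_l2 I \<Longrightarrow> B x = B' x) \<Longrightarrow> rop I B z = rop I B' z"
  by (cases "z \<in> sep_l2 (I \<times> I)") (auto simp: rop_def row_l2)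

lemma cop_cong: assumes "\<And>x. x \<in> sep_l2 I \<Longrightarrow> B x = B' x" shows "cop I B z = cop I B' z"
  unfolding cop_def using rop_cong[OF assms, where z="swp z"] by simp

lemma rop_comp: assumes C: "sep_bounded_op I C" and z: "z \<in> sep_l2 (I \<times> I)"
  shows "rop I B (rop I C z) = rop I (\<lambda>x. B (C x)) z"
  using rop_l2[OF C z] z by (simp add: rop_def fun_eq_iff)

lemma cop_comp: "sep_bounded_op I C \<Longrightarrow> z \<in> sep_l2 (I \<times> I) \<Longrightarrow> cop I B (cop I C z) = cop I (\<lambda>x. B (C x)) z"
  unfolding cop_def by (simp add: rop_comp swp_l2)

lemma rop_sum: "z \<in> sep_l2 (I \<times> I) \<Longrightarrow>
  rop I (\<lambda>x i. \<Sum>s\<in>S. a s * B s x i) z = (\<lambda>ij. \<Sum>s\<in>S. a s * rop I (B s) z ij)"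
  by (simp add: rop_def fun_eq_iff)

lemma cop_sum: assumes z: "z \<in> sep_l2 (I \<times> I)"
  shows "cop I (\<lambda>x i. \<Sum>s\<in>S. a s * B s x i) z = (\<lambda>ij. \<Sum>s\<in>S. a s * cop I (B s) z ij)"
proof -
  have "cop I (\<lambda>x i. \<Sum>s\<in>S. a s * B s x i) z = swp (rop I (\<lambda>x i. \<Sum>s\<in>S. a s * B s x i) (swp z))"
    by (simp add: cop_def)
  also have "\<dots> = swp (\<lambda>ij. \<Sum>s\<in>S. a s * rop I (B s) (swp z) ij)"
    by (simp only: rop_sum[OF swp_l2[OF z]])
  also have "\<dots> = (\<lambda>ij. \<Sum>s\<in>S. a s * cop I (B s) z ij)"
    by (simp add: cop_def swp_def fun_eq_iff)
  finally show ?thesis .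
qed

lemma rop_id: "(\<And>x. x \<in> sep_l2 I \<Longrightarrow> B x = x) \<Longrightarrow> z \<in> sep_l2 (I \<times> I) \<Longrightarrow> rop I B z = z"
  by (simp add: rop_def row_l2 fun_eq_iff)

lemma cop_id: "(\<And>x. x \<in> sep_l2 I \<Longrightarrow> B x = x) \<Longrightarrow> z \<in> sep_l2 (I \<times> I) \<Longrightarrow> cop I B z = z"
  unfolding cop_def by (simp add: rop_id swp_l2)

lemma rop_zop: "(\<And>x. x \<in> sep_l2 I \<Longrightarrow> B x = (\<lambda>_. 0)) \<Longrightarrow> rop I B z = (\<lambda>_. 0)"
  by (simp add: rop_def row_l2 fun_eq_iff)

lemma cop_zop: "(\<And>x. x \<in> sep_l2 I \<Longrightarrow> B x = (\<lambda>_. 0)) \<Longrightarrow> cop I B z = (\<lambda>_. 0)"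
  unfolding cop_def by (simp add: rop_zop fun_eq_iff)

lemma cop_zero_vec: "B (\<lambda>_. 0) = (\<lambda>_. 0) \<Longrightarrow> cop I B (\<lambda>_. 0) = (\<lambda>_. 0)"
  by (simp add: cop_def rop_def swp_def fun_eq_iff)

lemma cop_rop_comm:
  assumes B: "sep_bounded_op I B" and C: "sep_bounded_op I C"
  shows "cop I B (rop I C z) = rop I C (cop I B z)"
proof -
  have "(\<lambda>z. cop I B (rop I C z)) = (\<lambda>z. rop I C (cop I B z))"
  proof (rule bop_unique[of "I \<times> I"])
    show "sep_bounded_op (I \<times> I) (\<lambda>z. cop I B (rop I C z))" by (rule bop_comp[OF cop_bop[OF B] rop_bop[OF C]])
    show "sep_bounded_op (I \<times> I) (\<lambda>z. rop I C (cop I B z))" by (rule bop_comp[OF rop_bop[OF C] cop_bop[OF B]])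
    fix ij assume "ij \<in> I \<times> I"
    then obtain i j where ij: "ij = (i, j)" "i \<in> I" "j \<in> I" by blast
    have ui: "uvec i \<in> sep_l2 I" using uvec_l2[OF ij(2)] .
    have uj: "uvec j \<in> sep_l2 I" using uvec_l2[OF ij(3)] .
    show "cop I B (rop I C (uvec ij)) = rop I C (cop I B (uvec ij))"
      unfolding ij uvec_pair
      by (simp add: rop_tens[OF C ui uj] cop_tens[OF B ui uj] cop_tens[OF B ui bop_l2[OF C uj]]
                    rop_tens[OF C bop_l2[OF B ui] uj])
  qed
  thus ?thesis by (simp add: fun_eq_iff)
qed

end

locale tfam = projfam I Sg P for I :: "'i set" and Sg :: "complex set" and P +
  assumes real: "\<And>l. l \<in> Sg \<Longrightarrow> cnj l = l"
begin

definition Pt :: "complex \<Rightarrow> ('i \<Rightarrow> complex) \<Rightarrow> ('i \<Rightarrow> complex)" where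
  "Pt l = trc I (P l)"

lemma Pt_bop: "l \<in> Sg \<Longrightarrow> sep_bounded_op I (Pt l)"
  unfolding Pt_def by (rule trc_bop[OF bopE])

lemma Pt_sadj: "l \<in> Sg \<Longrightarrow> sadj I (Pt l)"
  unfolding Pt_def by (rule trc_sadj[OF bopE sadjE])

lemma Pt_orth:
  assumes s: "s \<in> Sg" and t: "t \<in> Sg" and x: "x \<in> sep_l2 I"
  shows "Pt s (Pt t x) = (if s = t then Pt t x else (\<lambda>_. 0))"
proof -
  have tl: "Pt t x \<in> sep_l2 I" unfolding Pt_def by (rule trc_l2[OF bopE[OF t] x])
  have "Pt s (Pt t x) = cnjv (P s (P t (cnjv x)))" using tl x by (simp add: Pt_def trc_def)
  also have "\<dots> = cnjv (if s = t then P t (cnjv x) else (\<lambda>_. 0))" using orth[OF s t cnjv_l2[OF x]] by simp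
  also have "\<dots> = (if s = t then Pt t x else (\<lambda>_. 0))" using x by (auto simp: Pt_def trc_def cnjv_def)
  finally show ?thesis .
qed

lemma Pt_sum: "x \<in> sep_l2 I \<Longrightarrow> (\<lambda>i. \<Sum>s\<in>Sg. Pt s x i) = x"
proof -
  assume x: "x \<in> sep_l2 I"
  have "(\<lambda>i. \<Sum>s\<in>Sg. P s (cnjv x) i) = cnjv x" using sum1[OF cnjv_l2[OF x]] .
  hence "cnjv (\<lambda>i. \<Sum>s\<in>Sg. P s (cnjv x) i) = cnjv (cnjv x)" by simp
  hence "(\<lambda>i. \<Sum>s\<in>Sg. cnj (P s (cnjv x) i)) = x"
    by (simp only: cnjv_cnjv) (simp add: cnjv_def cnj_sum)
  thus ?thesis using x by (simp add: Pt_def trc_def cnjv_def)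
qed

lemma projfam_Pt: "projfam I Sg Pt"
proof
  show "finite Sg" by (rule finS)
  show "\<And>s. s \<in> Sg \<Longrightarrow> sep_bounded_op I (Pt s)" by (rule Pt_bop)
  show "\<And>s. s \<in> Sg \<Longrightarrow> sadj I (Pt s)" by (rule Pt_sadj)
  show "\<And>s t x. s \<in> Sg \<Longrightarrow> t \<in> Sg \<Longrightarrow> x \<in> sep_l2 I \<Longrightarrow>
    Pt s (Pt t x) = (if s = t then Pt t x else (\<lambda>_. 0))" by (rule Pt_orth)
  show "\<And>x. x \<in> sep_l2 I \<Longrightarrow> (\<lambda>i. \<Sum>s\<in>Sg. Pt s x i) = x" by (rule Pt_sum)
qed

definition E :: "complex \<times> complex \<Rightarrow> ('i \<times> 'i \<Rightarrow> complex) \<Rightarrow> ('i \<times> 'i \<Rightarrow> complex)" where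
  "E ab z = cop I (P (fst ab)) (rop I (Pt (snd ab)) z)"

lemma E_bop: assumes "ab \<in> Sg \<times> Sg" shows "sep_bounded_op (I \<times> I) (E ab)"
proof -
  have a: "fst ab \<in> Sg" and b: "snd ab \<in> Sg" using assms by auto
  show ?thesis unfolding E_def[abs_def] by (rule bop_comp[OF cop_bop[OF bopE[OF a]] rop_bop[OF Pt_bop[OF b]]])
qed

lemma E_comm: "a \<in> Sg \<Longrightarrow> b \<in> Sg \<Longrightarrow> E (a, b) z = rop I (Pt b) (cop I (P a) z)"
  unfolding E_def by (simp add: cop_rop_comm bopE Pt_bop)

lemma E_sadj: "ab \<in> Sg \<times> Sg \<Longrightarrow> sadj (I \<times> I) (E ab)"
  unfolding sadj_def
proof (intro ballI)
  fix z w assume ab: "ab \<in> Sg \<times> Sg" and z: "z \<in> sep_l2 (I \<times> I)" and w: "w \<in> sep_l2 (I \<times> I)"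
  obtain a b where ab': "ab = (a, b)" "a \<in> Sg" "b \<in> Sg" using ab by blast
  have cs: "sadj (I \<times> I) (cop I (P a))" by (rule cop_sadj[OF bopE sadjE]) (use ab' in auto)
  have rs: "sadj (I \<times> I) (rop I (Pt b))" by (rule rop_sadj[OF Pt_bop Pt_sadj]) (use ab' in auto)
  have cb: "sep_bounded_op (I \<times> I) (cop I (P a))" by (rule cop_bop[OF bopE]) (use ab' in auto)
  have rb: "sep_bounded_op (I \<times> I) (rop I (Pt b))" by (rule rop_bop[OF Pt_bop]) (use ab' in auto)
  have "sep_inner (I \<times> I) (E ab z) w = sep_inner (I \<times> I) (rop I (Pt b) z) (cop I (P a) w)"
    unfolding E_def ab' using sadjD[OF cs bop_l2[OF rb z] w] by simp
  also have "\<dots> = sep_inner (I \<times> I) z (rop I (Pt b) (cop I (P a) w))"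
    using sadjD[OF rs z bop_l2[OF cb w]] .
  also have "\<dots> = sep_inner (I \<times> I) z (E ab w)" using E_comm ab' by simp
  finally show "sep_inner (I \<times> I) (E ab z) w = sep_inner (I \<times> I) z (E ab w)" .
qed

lemma E_orth:
  assumes s: "s \<in> Sg \<times> Sg" and t: "t \<in> Sg \<times> Sg" and z: "z \<in> sep_l2 (I \<times> I)"
  shows "E s (E t z) = (if s = t then E t z else (\<lambda>_. 0))"
proof -
  obtain a b where ab: "s = (a, b)" "a \<in> Sg" "b \<in> Sg" using s by blast
  obtain c d where cd: "t = (c, d)" "c \<in> Sg" "d \<in> Sg" using t by blast
  have rdz: "rop I (Pt d) z \<in> sep_l2 (I \<times> I)" using rop_l2[OF Pt_bop[OF cd(3)] z] .
  have "E s (E t z) = cop I (P a) (rop I (Pt b) (cop I (P c) (rop I (Pt d) z)))"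
    by (simp add: E_def ab cd)
  also have "\<dots> = cop I (P a) (cop I (P c) (rop I (Pt b) (rop I (Pt d) z)))"
    by (simp add: cop_rop_comm[OF bopE[OF cd(2)] Pt_bop[OF ab(3)]])
  also have "\<dots> = cop I (\<lambda>x. P a (P c x)) (rop I (\<lambda>x. Pt b (Pt d x)) z)"
  proof -
    have w: "rop I (Pt b) (rop I (Pt d) z) \<in> sep_l2 (I \<times> I)"
      by (rule rop_l2[OF Pt_bop[OF ab(3)] rdz])
    have e1: "cop I (P a) (cop I (P c) (rop I (Pt b) (rop I (Pt d) z))) =
        cop I (\<lambda>x. P a (P c x)) (rop I (Pt b) (rop I (Pt d) z))"
      by (rule cop_comp[OF bopE[OF cd(2)] w])
    have e2: "rop I (Pt b) (rop I (Pt d) z) = rop I (\<lambda>x. Pt b (Pt d x)) z"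
      by (rule rop_comp[OF Pt_bop[OF cd(3)] z])
    show ?thesis unfolding e2[symmetric] by (rule e1)
  qed
  also have "\<dots> = (if s = t then E t z else (\<lambda>_. 0))"
  proof (cases "a = c \<and> b = d")
    case True
    have "cop I (\<lambda>x. P a (P c x)) (rop I (\<lambda>x. Pt b (Pt d x)) z) = cop I (P c) (rop I (Pt d) z)"
      using True ab cd
      by (intro trans[OF cop_cong arg_cong[where f="cop I (P c)"]] rop_cong) (auto simp: orth Pt_orth)
    thus ?thesis using True ab cd by (simp add: E_def)
  next
    case False
    show ?thesis
    proof (cases "a = c")
      case True
      hence bd: "b \<noteq> d" using False by blast
      have "rop I (\<lambda>x. Pt b (Pt d x)) z = (\<lambda>_. 0)"
        by (rule rop_zop) (use bd ab cd in \<open>simp add: Pt_orth\<close>)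
      moreover have "cop I (\<lambda>x. P a (P c x)) (\<lambda>_. 0) = (\<lambda>_. 0)"
        by (rule cop_zero_vec) (simp add: bop_zero[OF bopE[OF cd(2)]] bop_zero[OF bopE[OF ab(2)]])
      ultimately show ?thesis using bd ab cd by simp
    next
      case False
      have "cop I (\<lambda>x. P a (P c x)) w = (\<lambda>_. 0)" for w
        by (rule cop_zop) (use False ab cd in \<open>simp add: orth\<close>)
      thus ?thesis using False ab cd by auto
    qed
  qed
  finally show ?thesis .
qed

lemma sum_cop_P: "w \<in> sep_l2 (I \<times> I) \<Longrightarrow> (\<lambda>ij. \<Sum>a\<in>Sg. cop I (P a) w ij) = w"
proof -
  assume w: "w \<in> sep_l2 (I \<times> I)"
  have "(\<lambda>ij. \<Sum>a\<in>Sg. cop I (P a) w ij) = (\<lambda>ij. \<Sum>a\<in>Sg. 1 * cop I (P a) w ij)" by simp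
  also have "\<dots> = cop I (\<lambda>x i. \<Sum>a\<in>Sg. 1 * P a x i) w" by (rule cop_sum[OF w, symmetric])
  also have "\<dots> = w" by (rule cop_id[OF _ w]) (simp add: sum1)
  finally show ?thesis .
qed

lemma sum_rop_Pt: "w \<in> sep_l2 (I \<times> I) \<Longrightarrow> (\<lambda>ij. \<Sum>b\<in>Sg. rop I (Pt b) w ij) = w"
proof -
  assume w: "w \<in> sep_l2 (I \<times> I)"
  have "(\<lambda>ij. \<Sum>b\<in>Sg. rop I (Pt b) w ij) = (\<lambda>ij. \<Sum>b\<in>Sg. 1 * rop I (Pt b) w ij)" by simp
  also have "\<dots> = rop I (\<lambda>x i. \<Sum>b\<in>Sg. 1 * Pt b x i) w" by (rule rop_sum[OF w, symmetric])
  also have "\<dots> = w" by (rule rop_id[OF _ w]) (simp add: Pt_sum)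
  finally show ?thesis .
qed

lemma E_sum: "z \<in> sep_l2 (I \<times> I) \<Longrightarrow> (\<lambda>ij. \<Sum>s\<in>Sg \<times> Sg. E s z ij) = z"
proof -
  assume z: "z \<in> sep_l2 (I \<times> I)"
  have "(\<lambda>ij. \<Sum>s\<in>Sg \<times> Sg. E s z ij) = (\<lambda>ij. \<Sum>a\<in>Sg. \<Sum>b\<in>Sg. E (a, b) z ij)"
    by (rule ext) (simp add: sum.cartesian_product case_prod_unfold)
  also have "\<dots> = (\<lambda>ij. \<Sum>b\<in>Sg. \<Sum>a\<in>Sg. E (a, b) z ij)"
    by (rule ext) (rule sum.swap)
  also have "\<dots> = (\<lambda>ij. \<Sum>b\<in>Sg. \<Sum>a\<in>Sg. cop I (P a) (rop I (Pt b) z) ij)"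
    by (simp add: E_def)
  also have "\<dots> = (\<lambda>ij. \<Sum>b\<in>Sg. rop I (Pt b) z ij)"
  proof (rule ext, rule sum.cong[OF refl])
    fix ij b assume b: "b \<in> Sg"
    show "(\<Sum>a\<in>Sg. cop I (P a) (rop I (Pt b) z) ij) = rop I (Pt b) z ij"
      using fun_cong[OF sum_cop_P[OF rop_l2[OF Pt_bop[OF b] z]], of ij] by simp
  qed
  also have "\<dots> = z" by (rule sum_rop_Pt[OF z])
  finally show ?thesis .
qed

lemma projfam_E: "projfam (I \<times> I) (Sg \<times> Sg) E"
proof
  show "finite (Sg \<times> Sg)" using finS by simp
  show "\<And>s. s \<in> Sg \<times> Sg \<Longrightarrow> sep_bounded_op (I \<times> I) (E s)" by (rule E_bop)
  show "\<And>s. s \<in> Sg \<times> Sg \<Longrightarrow> sadj (I \<times> I) (E s)" by (rule E_sadj)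
  show "\<And>s t x. s \<in> Sg \<times> Sg \<Longrightarrow> t \<in> Sg \<times> Sg \<Longrightarrow> x \<in> sep_l2 (I \<times> I) \<Longrightarrow>
    E s (E t x) = (if s = t then E t x else (\<lambda>_. 0))" by (rule E_orth)
  show "\<And>x. x \<in> sep_l2 (I \<times> I) \<Longrightarrow> (\<lambda>i. \<Sum>s\<in>Sg \<times> Sg. E s x i) = x" by (rule E_sum)
qed

end


lemma powr_subadd:
  fixes x y p :: real
  assumes x: "x \<ge> 0" and y: "y \<ge> 0" and p: "0 < p" "p \<le> 1"
  shows "(x + y) powr p \<le> x powr p + y powr p"
proof (cases "x + y = 0")
  case True thus ?thesis using x y by simp
next
  case False
  define s where "s = x + y"
  have s: "s > 0" using False x y by (simp add: s_def)
  have xs: "x / s \<le> (x / s) powr p"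
    using powr_mono'[of p 1 "x / s"] x y s p by (simp add: s_def)
  have ys: "y / s \<le> (y / s) powr p"
    using powr_mono'[of p 1 "y / s"] x y s p by (simp add: s_def)
  have "x / s + y / s = 1" using s by (simp add: add_divide_distrib[symmetric] s_def)
  hence "1 \<le> (x / s) powr p + (y / s) powr p" using xs ys by linarith
  hence "s powr p \<le> s powr p * ((x / s) powr p + (y / s) powr p)" using s by simp
  also have "\<dots> = x powr p + y powr p" using s by (simp add: powr_divide distrib_left)
  finally show ?thesis by (simp add: s_def)
qed

definition dp :: "real \<Rightarrow> complex \<Rightarrow> complex \<Rightarrow> real" where
  "dp p a b = cmod (a - b) powr p"

lemma dp_sym: "dp p a b = dp p b a" by (simp add: dp_def norm_minus_commute)

lemma dp_self[simp]: "dp p a a = 0" by (simp add: dp_def)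

lemma dp_nonneg: "dp p a b \<ge> 0" by (simp add: dp_def)

lemma dp_tri: "0 < p \<Longrightarrow> p \<le> 1 \<Longrightarrow> dp p a b \<le> dp p a e + dp p e b"
proof -
  assume p: "0 < p" "p \<le> 1"
  have "cmod (a - b) \<le> cmod (a - e) + cmod (e - b)" using norm_triangle_ineq[of "a - e" "e - b"] by simp
  hence "cmod (a - b) powr p \<le> (cmod (a - e) + cmod (e - b)) powr p" using p by (intro powr_mono2) auto
  also have "\<dots> \<le> cmod (a - e) powr p + cmod (e - b) powr p" using p by (intro powr_subadd) auto
  finally show ?thesis by (simp add: dp_def)
qed

lemma c_exists:
  assumes fin: "finite Sg" and card: "card Sg \<le> 3" and p: "0 < p" "p \<le> 1"
  shows "\<exists>c. (\<forall>k. c k \<ge> 0) \<and> (\<forall>a\<in>Sg. \<forall>b\<in>Sg. a \<noteq> b \<longrightarrow> c a + c b = dp p a b)"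
proof -
  have "card Sg \<le> 1 \<or> card Sg = 2 \<or> card Sg = 3" using card by linarith
  moreover {
    assume "card Sg \<le> 1"
    hence "\<forall>a\<in>Sg. \<forall>b\<in>Sg. a = b" using fin by (auto simp: card_le_Suc0_iff_eq)
    hence ?thesis by (intro exI[of _ "\<lambda>_. 0"]) auto
  } moreover {
    assume "card Sg = 2"
    then obtain x y where xy: "Sg = {x, y}" "x \<noteq> y" by (auto simp: card_2_iff)
    have ?thesis
      by (intro exI[of _ "\<lambda>k. if k = x then dp p x y else 0"]) (auto simp: xy dp_nonneg dp_sym)
  } moreover {
    assume "card Sg = 3"
    then obtain x y w where xyw: "Sg = {x, y, w}" "x \<noteq> y" "y \<noteq> w" "x \<noteq> w" by (auto simp: card_3_iff)
    define c where "c k = (if k = x then (dp p x y + dp p x w - dp p y w) / 2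
      else if k = y then (dp p x y + dp p y w - dp p x w) / 2
      else if k = w then (dp p x w + dp p y w - dp p x y) / 2 else 0)" for k
    have t1: "dp p y w \<le> dp p y x + dp p x w" using dp_tri[OF p] .
    have t2: "dp p x w \<le> dp p x y + dp p y w" using dp_tri[OF p] .
    have t3: "dp p x y \<le> dp p x w + dp p w y" using dp_tri[OF p] .
    have s1: "dp p y x = dp p x y" and s2: "dp p w x = dp p x w" and s3: "dp p w y = dp p y w"
      by (rule dp_sym)+
    have "c k \<ge> 0" for k
    proof -
      have "k = x \<or> k = y \<or> k = w \<or> (k \<noteq> x \<and> k \<noteq> y \<and> k \<noteq> w)" by blast
      thus ?thesis
      proof (elim disjE)
        assume "k = x" thus ?thesis using t1 s1 by (simp add: c_def)
      next
        assume "k = y" thus ?thesis using t2 xyw by (simp add: c_def)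
      next
        assume "k = w" thus ?thesis using t3 s3 xyw by (simp add: c_def)
      qed (simp add: c_def)
    qed
    moreover have "c a + c b = dp p a b" if "a \<in> Sg" "b \<in> Sg" "a \<noteq> b" for a b
    proof -
      have cx: "c x = (dp p x y + dp p x w - dp p y w) / 2" by (simp add: c_def)
      have cy: "c y = (dp p x y + dp p y w - dp p x w) / 2" using xyw by (simp add: c_def)
      have cw: "c w = (dp p x w + dp p y w - dp p x y) / 2" using xyw by (simp add: c_def)
      have "(a = x \<and> b = y) \<or> (a = y \<and> b = x) \<or> (a = x \<and> b = w) \<or> (a = w \<and> b = x) \<or>
            (a = y \<and> b = w) \<or> (a = w \<and> b = y)" using that xyw by auto
      thus ?thesis
      proof (elim disjE conjE)
      qed (simp_all add: cx cy cw s1 s2 s3 field_simps)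
    qed
    ultimately have ?thesis by blast
  }
  ultimately show ?thesis by blast
qed

context tfam
begin

definition diag :: "(complex \<Rightarrow> complex) \<Rightarrow> ('i \<Rightarrow> complex) \<Rightarrow> ('i \<Rightarrow> complex)" where
  "diag d = (\<lambda>x i. \<Sum>l\<in>Sg. d l * P l x i)"

lemma diag_bop: "sep_bounded_op I (diag d)"
  unfolding diag_def by (rule bop_sum_ops[OF finS bopE])

lemma diag_sadj:
  assumes r: "\<And>l. l \<in> Sg \<Longrightarrow> cnj (d l) = d l"
  shows "sadj I (diag d)"
  unfolding sadj_def
proof (intro ballI)
  fix x y assume x: "x \<in> sep_l2 I" and y: "y \<in> sep_l2 I"
  have "sep_inner I (diag d x) y = (\<Sum>l\<in>Sg. sep_inner I (\<lambda>i. d l * P l x i) y)"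
    unfolding diag_def by (rule l2inner_sum_left[OF finS y]) (auto intro: l2_scale El2 x)
  also have "\<dots> = (\<Sum>l\<in>Sg. sep_inner I x (\<lambda>i. d l * P l y i))"
  proof (rule sum.cong[OF refl])
    fix l assume l: "l \<in> Sg"
    have "sep_inner I (\<lambda>i. d l * P l x i) y = cnj (d l) * sep_inner I (P l x) y"
      by (rule l2inner_scale_left[OF El2[OF l x] y])
    also have "\<dots> = d l * sep_inner I x (P l y)" using r[OF l] sadjD[OF sadjE[OF l] x y] by simp
    also have "\<dots> = sep_inner I x (\<lambda>i. d l * P l y i)" by (rule l2inner_scale_right[OF x El2[OF l y], symmetric])
    finally show "sep_inner I (\<lambda>i. d l * P l x i) y = sep_inner I x (\<lambda>i. d l * P l y i)" .
  qed
  also have "\<dots> = sep_inner I x (diag d y)"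
    unfolding diag_def by (rule l2inner_sum_right[OF finS x, symmetric]) (auto intro: l2_scale El2 y)
  finally show "sep_inner I (diag d x) y = sep_inner I x (diag d y)" .
qed

lemma diag_obs: "(\<And>l. l \<in> Sg \<Longrightarrow> cnj (d l) = d l) \<Longrightarrow> sep_observable I (diag d)"
  by (simp add: observable_iff diag_bop diag_sadj)

lemma diag_spec: "finite (sep_spectrum I (diag d))"
proof -
  have "sep_spectrum I (diag d) = d ` nz"
    by (rule spectrum_eq) (simp add: diag_def)
  thus ?thesis using finite_subset[OF nz_sub finS] by simp
qed

lemma trc_diag:
  assumes r: "\<And>l. l \<in> Sg \<Longrightarrow> cnj (d l) = d l" and x: "x \<in> sep_l2 I"
  shows "trc I (diag d) x = (\<lambda>i. \<Sum>l\<in>Sg. d l * Pt l x i)"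
proof -
  have "trc I (diag d) x = (\<lambda>i. \<Sum>l\<in>Sg. cnj (d l) * cnj (P l (cnjv x) i))"
    using x by (simp add: trc_def diag_def cnjv_def)
  also have "\<dots> = (\<lambda>i. \<Sum>l\<in>Sg. d l * Pt l x i)"
    using x r by (intro ext sum.cong refl) (simp add: Pt_def trc_def cnjv_def)
  finally show ?thesis .
qed

lemma cop_P_split: "z \<in> sep_l2 (I \<times> I) \<Longrightarrow> a \<in> Sg \<Longrightarrow> cop I (P a) z = (\<lambda>ij. \<Sum>b\<in>Sg. E (a, b) z ij)"
proof -
  assume z: "z \<in> sep_l2 (I \<times> I)" and a: "a \<in> Sg"
  have "cop I (P a) z = cop I (P a) (\<lambda>ij. \<Sum>b\<in>Sg. rop I (Pt b) z ij)" using sum_rop_Pt[OF z] by simp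
  also have "\<dots> = (\<lambda>ij. \<Sum>b\<in>Sg. cop I (P a) (rop I (Pt b) z) ij)"
    by (rule bop_sum[OF cop_bop[OF bopE[OF a]] finS]) (rule rop_l2[OF Pt_bop z])
  finally show ?thesis by (simp add: E_def)
qed

end


lemma (in tfam) comm_diag_gen:
  assumes r: "\<And>l. l \<in> Sg \<Longrightarrow> cnj (d l) = d l" and z: "z \<in> sep_l2 (I \<times> I)"
  shows "(\<lambda>ij. cop I (diag d) z ij - rop I (trc I (diag d)) z ij) =
         (\<lambda>ij. \<Sum>s\<in>Sg \<times> Sg. (d (fst s) - d (snd s)) * E s z ij)"
proof -
  have c1: "cop I (diag d) z = (\<lambda>ij. \<Sum>a\<in>Sg. d a * (\<Sum>b\<in>Sg. E (a, b) z ij))"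
  proof -
    have "cop I (diag d) z = (\<lambda>ij. \<Sum>a\<in>Sg. d a * cop I (P a) z ij)"
      unfolding diag_def by (rule cop_sum[OF z])
    also have "\<dots> = (\<lambda>ij. \<Sum>a\<in>Sg. d a * (\<Sum>b\<in>Sg. E (a, b) z ij))"
      by (intro ext sum.cong refl) (simp add: cop_P_split[OF z])
    finally show ?thesis .
  qed
  have c2: "rop I (trc I (diag d)) z = (\<lambda>ij. \<Sum>b\<in>Sg. d b * (\<Sum>a\<in>Sg. E (a, b) z ij))"
  proof -
    have "rop I (trc I (diag d)) z = rop I (\<lambda>x i. \<Sum>b\<in>Sg. d b * Pt b x i) z"
      by (rule rop_cong) (rule trc_diag[OF r])
    also have "\<dots> = (\<lambda>ij. \<Sum>b\<in>Sg. d b * rop I (Pt b) z ij)" by (rule rop_sum[OF z])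
    also have "\<dots> = (\<lambda>ij. \<Sum>b\<in>Sg. d b * (\<Sum>a\<in>Sg. E (a, b) z ij))"
    proof (intro ext sum.cong refl)
      fix ij b assume b: "b \<in> Sg"
      have "rop I (Pt b) z ij = (\<Sum>a\<in>Sg. cop I (P a) (rop I (Pt b) z) ij)"
        using fun_cong[OF sum_cop_P[OF rop_l2[OF Pt_bop[OF b] z]], of ij] by simp
      thus "d b * rop I (Pt b) z ij = d b * (\<Sum>a\<in>Sg. E (a, b) z ij)" by (simp add: E_def)
    qed
    finally show ?thesis .
  qed
  show ?thesis
  proof (rule ext)
    fix ij
    have "cop I (diag d) z ij - rop I (trc I (diag d)) z ij =
        (\<Sum>a\<in>Sg. \<Sum>b\<in>Sg. d a * E (a, b) z ij) - (\<Sum>b\<in>Sg. \<Sum>a\<in>Sg. d b * E (a, b) z ij)"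
      unfolding c1 c2 by (simp add: sum_distrib_left)
    also have "(\<Sum>b\<in>Sg. \<Sum>a\<in>Sg. d b * E (a, b) z ij) = (\<Sum>a\<in>Sg. \<Sum>b\<in>Sg. d b * E (a, b) z ij)"
      by (rule sum.swap)
    also have "(\<Sum>a\<in>Sg. \<Sum>b\<in>Sg. d a * E (a, b) z ij) - (\<Sum>a\<in>Sg. \<Sum>b\<in>Sg. d b * E (a, b) z ij) =
        (\<Sum>a\<in>Sg. \<Sum>b\<in>Sg. (d a - d b) * E (a, b) z ij)"
      by (simp add: sum_subtractf left_diff_distrib)
    also have "\<dots> = (\<Sum>s\<in>Sg \<times> Sg. (d (fst s) - d (snd s)) * E s z ij)"
      by (simp add: sum.cartesian_product case_prod_unfold)
    finally show "cop I (diag d) z ij - rop I (trc I (diag d)) z ij =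
        (\<Sum>s\<in>Sg \<times> Sg. (d (fst s) - d (snd s)) * E s z ij)" .
  qed
qed

lemma (in tfam) abs_diag_gen:
  fixes q :: real
  assumes r: "\<And>l. l \<in> Sg \<Longrightarrow> cnj (d l) = d l"
    and K: "\<And>z. z \<in> sep_l2 (I \<times> I) \<Longrightarrow> K z = (\<lambda>ij. cop I (diag d) z ij - rop I (trc I (diag d)) z ij)"
  shows "sep_abs_powr (I \<times> I) q K z =
         (\<lambda>ij. \<Sum>s\<in>Sg \<times> Sg. complex_of_real (cmod (d (fst s) - d (snd s)) powr q) * E s z ij)"
proof -
  interpret PE: projfam "I \<times> I" "Sg \<times> Sg" E by (rule projfam_E)
  have Kd: "\<And>z. z \<in> sep_l2 (I \<times> I) \<Longrightarrow> K z = (\<lambda>ij. \<Sum>s\<in>Sg \<times> Sg. (d (fst s) - d (snd s)) * E s z ij)"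
    using K comm_diag_gen[OF r] by simp
  show ?thesis by (rule PE.abs_powr_eq[OF Kd])
qed

lemma perA:
  fixes I :: "nat set" and A :: "(nat \<Rightarrow> complex) \<Rightarrow> (nat \<Rightarrow> complex)" and p p' :: real
  assumes obs: "sep_observable I A" and fin: "finite (sep_spectrum I A)"
    and card: "card (sep_spectrum I A) \<le> 3" and p: "0 < p" "p \<le> 1" and p': "0 < p'"
  shows "\<exists>Bs. (\<forall>B\<in>set Bs. sep_observable I B \<and> finite (sep_spectrum I B)) \<and>
    (\<forall>z ij. (\<Sum>B\<leftarrow>Bs. sep_abs_powr (I \<times> I) p' (sep_comm_op I B) z ij) =
            sep_abs_powr (I \<times> I) p (sep_comm_op I A) z ij)"
proof -
  define Sg where "Sg = sep_spectrum I A"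
  obtain P where PF: "projfam I Sg P"
    and Arep: "\<forall>x\<in>sep_l2 I. A x = (\<lambda>i. \<Sum>l\<in>Sg. l * P l x i)"
    and real: "\<forall>l\<in>Sg. cnj l = l"
    using spec_decomp[OF obs fin] unfolding Sg_def by blast
  interpret T: tfam I Sg P using PF real by (simp add: tfam_def tfam_axioms_def)
  have Abop: "sep_bounded_op I A" using obs by (simp add: observable_iff)
  have Adiag: "A = T.diag (\<lambda>l. l)"
  proof (rule ext)
    fix x show "A x = T.diag (\<lambda>l. l) x"
    proof (cases "x \<in> sep_l2 I")
      case True thus ?thesis using Arep by (simp add: T.diag_def)
    next
      case False
      thus ?thesis using bop_out[OF Abop False] T.E_out by (simp add: T.diag_def fun_eq_iff)
    qed
  qed
  have absdiag: "sep_abs_powr (I \<times> I) q (sep_comm_op I (T.diag d)) z =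
      (\<lambda>ij. \<Sum>s\<in>Sg \<times> Sg. complex_of_real (cmod (d (fst s) - d (snd s)) powr q) * T.E s z ij)"
    if r: "\<And>l. l \<in> Sg \<Longrightarrow> cnj (d l) = d l" for d q z
  proof -
    have ob: "sep_observable I (T.diag d)" by (rule T.diag_obs) (rule r)
    show ?thesis
    proof (rule T.abs_diag_gen)
      show "\<And>l. l \<in> Sg \<Longrightarrow> cnj (d l) = d l" by (rule r)
      show "\<And>z. z \<in> sep_l2 (I \<times> I) \<Longrightarrow> sep_comm_op I (T.diag d) z =
          (\<lambda>ij. cop I (T.diag d) z ij - rop I (trc I (T.diag d)) z ij)"
        by (simp add: comm_eq[OF ob])
    qed
  qed
  have "\<exists>c. (\<forall>k. c k \<ge> 0) \<and> (\<forall>a\<in>Sg. \<forall>b\<in>Sg. a \<noteq> b \<longrightarrow> c a + c b = dp p a b)"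
    by (rule c_exists[OF _ _ p]) (use fin card in \<open>simp_all add: Sg_def\<close>)
  then obtain c where c: "\<And>k. c k \<ge> 0" "\<And>a b. a \<in> Sg \<Longrightarrow> b \<in> Sg \<Longrightarrow> a \<noteq> b \<Longrightarrow> c a + c b = dp p a b"
    by blast
  define t where "t k = complex_of_real (c k powr (1 / p'))" for k
  define dk where "dk k = (\<lambda>l. if l = k then t k else 0)" for k
  have rdk: "cnj (dk k l) = dk k l" for k l by (simp add: dk_def t_def)
  obtain xs where xs: "set xs = Sg" "distinct xs"
    using finite_distinct_list[OF fin[folded Sg_def]] by blast
  define Bs where "Bs = map (\<lambda>k. T.diag (dk k)) xs"
  have Bobs: "\<forall>B\<in>set Bs. sep_observable I B \<and> finite (sep_spectrum I B)"
    unfolding Bs_def using T.diag_obs[of "dk _"] T.diag_spec rdk by auto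
  have tpow: "cmod (t k) powr p' = c k" for k
    using c(1)[of k] p' by (simp add: t_def powr_powr)
  have coef: "(\<Sum>k\<in>Sg. cmod (dk k (fst s) - dk k (snd s)) powr p') = cmod (fst s - snd s) powr p"
    if s: "s \<in> Sg \<times> Sg" for s
  proof -
    obtain a b where ab: "s = (a, b)" "a \<in> Sg" "b \<in> Sg" using s by blast
    show ?thesis
    proof (cases "a = b")
      case True thus ?thesis using ab by (simp add: dk_def)
    next
      case False
      have "(\<Sum>k\<in>Sg. cmod (dk k a - dk k b) powr p') =
          (\<Sum>k\<in>Sg. (if k = a then c a else 0) + (if k = b then c b else 0))"
      proof (rule sum.cong[OF refl])
        fix k assume k: "k \<in> Sg"
        show "cmod (dk k a - dk k b) powr p' = (if k = a then c a else 0) + (if k = b then c b else 0)"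
          using False tpow by (cases "k = a"; cases "k = b") (auto simp: dk_def)
      qed
      also have "\<dots> = c a + c b" using ab fin by (simp add: sum.distrib Sg_def)
      also have "\<dots> = dp p a b" using c(2)[OF ab(2,3) False] .
      finally show ?thesis using ab by (simp add: dp_def)
    qed
  qed
  have "(\<Sum>B\<leftarrow>Bs. sep_abs_powr (I \<times> I) p' (sep_comm_op I B) z ij) =
         sep_abs_powr (I \<times> I) p (sep_comm_op I A) z ij" for z ij
  proof -
    have "(\<Sum>B\<leftarrow>Bs. sep_abs_powr (I \<times> I) p' (sep_comm_op I B) z ij) =
        (\<Sum>k\<in>Sg. sep_abs_powr (I \<times> I) p' (sep_comm_op I (T.diag (dk k))) z ij)"
      unfolding Bs_def using xs by (simp add: sum_list_distinct_conv_sum_set o_def)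
    also have "\<dots> = (\<Sum>k\<in>Sg. \<Sum>s\<in>Sg \<times> Sg. complex_of_real (cmod (dk k (fst s) - dk k (snd s)) powr p') * T.E s z ij)"
      using absdiag[of "dk _", OF rdk] by simp
    also have "\<dots> = (\<Sum>s\<in>Sg \<times> Sg. \<Sum>k\<in>Sg. complex_of_real (cmod (dk k (fst s) - dk k (snd s)) powr p') * T.E s z ij)"
      by (rule sum.swap)
    also have "\<dots> = (\<Sum>s\<in>Sg \<times> Sg. complex_of_real (cmod (fst s - snd s) powr p) * T.E s z ij)"
    proof (rule sum.cong[OF refl])
      fix s assume s: "s \<in> Sg \<times> Sg"
      have "(\<Sum>k\<in>Sg. complex_of_real (cmod (dk k (fst s) - dk k (snd s)) powr p') * T.E s z ij) =
          complex_of_real (\<Sum>k\<in>Sg. cmod (dk k (fst s) - dk k (snd s)) powr p') * T.E s z ij"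
        by (simp add: sum_distrib_right)
      thus "(\<Sum>k\<in>Sg. complex_of_real (cmod (dk k (fst s) - dk k (snd s)) powr p') * T.E s z ij) =
          complex_of_real (cmod (fst s - snd s) powr p) * T.E s z ij" using coef[OF s] by simp
    qed
    also have "\<dots> = sep_abs_powr (I \<times> I) p (sep_comm_op I A) z ij"
      unfolding Adiag using absdiag[of "\<lambda>l. l"] real by simp
    finally show ?thesis .
  qed
  thus ?thesis using Bobs by blast
qed

theorem proposition4p7:
  fixes I :: "nat set" and p p' :: real
  assumes "0 < p" and "p \<le> 1" and "0 < p'"
  shows "sep_Cclass_k I 3 p \<subseteq> sep_Cclass I p'"
proof
  fix C assume "C \<in> sep_Cclass_k I 3 p"
  then obtain As where C: "C = sep_C I As p"
    and As: "\<forall>A\<in>set As. sep_observable I A \<and> finite (sep_spectrum I A) \<and> card (sep_spectrum I A) \<le> 3"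
    by (auto simp: sep_Cclass_k_def)
  have "\<forall>A\<in>set As. \<exists>Bs. (\<forall>B\<in>set Bs. sep_observable I B \<and> finite (sep_spectrum I B)) \<and>
    (\<forall>z ij. (\<Sum>B\<leftarrow>Bs. sep_abs_powr (I \<times> I) p' (sep_comm_op I B) z ij) =
            sep_abs_powr (I \<times> I) p (sep_comm_op I A) z ij)"
    using As perA assms by blast
  then obtain f where f: "\<And>A. A \<in> set As \<Longrightarrow> (\<forall>B\<in>set (f A). sep_observable I B \<and> finite (sep_spectrum I B)) \<and>
    (\<forall>z ij. (\<Sum>B\<leftarrow>f A. sep_abs_powr (I \<times> I) p' (sep_comm_op I B) z ij) =
            sep_abs_powr (I \<times> I) p (sep_comm_op I A) z ij)"
    by metis
  define Bs where "Bs = concat (map f As)"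
  have Bs: "\<forall>B\<in>set Bs. sep_observable I B \<and> finite (sep_spectrum I B)"
    unfolding Bs_def using f by auto
  have sumeq: "(\<Sum>B\<leftarrow>concat (map f As'). sep_abs_powr (I \<times> I) p' (sep_comm_op I B) z ij) =
       (\<Sum>A\<leftarrow>As'. sep_abs_powr (I \<times> I) p (sep_comm_op I A) z ij)"
    if "set As' \<subseteq> set As" for As' z ij
    using that
  proof (induction As')
    case Nil thus ?case by simp
  next
    case (Cons A As')
    have A: "A \<in> set As" using Cons.prems by simp
    have fA: "(\<Sum>B\<leftarrow>f A. sep_abs_powr (I \<times> I) p' (sep_comm_op I B) z ij) =
            sep_abs_powr (I \<times> I) p (sep_comm_op I A) z ij"
      using f[OF A] by blast
    thus ?case using Cons by simp
  qed
  have "sep_C I As p = sep_C I Bs p'"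
    unfolding sep_C_def Bs_def by (intro ext) (simp add: sumeq)
  thus "C \<in> sep_Cclass I p'" using Bs C by (auto simp: sep_Cclass_def)
qed


end
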